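(* Let $k$ be an ordinary differential field of characteristic zero, let $R=k\{y_1,\ldots,y_l\}$, and fix a ranking on the derivatives. Every prime differential ideal $P\subsetneq R$ admits a (Kolchin) characteristic set $\mathbb{C}=C_1,\ldots,C_p$ (listed in increasing rank) with the following two properties: (1) $\mathbb{C}$ is irreducible: $C_1$ is an irreducible polynomial in $R$, and for each $1\le i<p$, $C_{i+1}$ is irreducible in the ring $\operatorname{Quot}\big(k[V_i]/(C_1,\ldots,C_i):I_i^\infty\big)[U_i]$, where $V_i$ is the set of all derivatives appearing in $C_1,\ldots,C_i$, $I_i^\infty$ is the multiplicative set generated by the initials of $C_1,\ldots,C_i$, and $U_i$ is the set of derivatives appearing in $C_{i+1}$ but not in $V_i$; (2) for every $t$ such that $y_t$ or one of its derivatives appears in $\mathbb{C}$, let $s$ be the maximal order of a derivative of $y_t$ appearing in the elements of $\mathbb{C}$, and let $i$ be the least index such that $y_t^{(s)}$ appears in $C_i$; then $\partial C_i/\partial y_t^{(s)}\notin P$.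
   Context: $k$ is a differential field of characteristic zero with one derivation $\delta$; $R=k\{y_1,\dots,y_l\}$ is the polynomial ring over $k$ in the derivatives $y_j^{(r)}=\delta^r y_j$, with $\delta$ extended; the order of $y_j^{(r)}$ is $r$. A ranking is a total order on the derivatives with $\delta u> u$... more precisely $\theta u\ge u$ and $u\ge v\Rightarrow\theta u\ge\theta v$ for all derivative operators $\theta$. For $f\notin k$: leader $u_f$ = highest ranked derivative in $f$; initial $I_f$ = leading coefficient of $f$ as a polynomial in $u_f$; separant $S_f=\partial f/\partial u_f$. $f$ is reduced w.r.t. $g$ if no proper derivative of $u_g$ appears in $f$ and $\deg_{u_g}f<\deg_{u_g}g$. An autoreduced set is a set disjoint from $k$ each of whose elements is reduced w.r.t. the others; its elements are listed in increasing rank ($f<g$ if $u_f<u_g$, or $u_f=u_g$ and smaller degree in $u_f$), and autoreduced sets are compared lexicographically, a proper extension having lower rank. A (Kolchin) characteristic set of a differential ideal $I$ is an autoreduced subset of $I$ of lowest rank. For a finite set $S$, $S^\infty$ denotes the multiplicative set it generates and $J:S^\infty=\{a:\exists s\in S^\infty, sa\in J\}$. *)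

theory Defs
  imports "HOL-Library.Poly_Mapping" "HOL-Computational_Algebra.Factorial_Ring"
begin

text \<open>Differential polynomials in the indeterminates y_j (j ranging over a finite index
type 'j, playing the role of {1..l}).  The derivative y_j^(r) is the variable (j, r).\<close>

type_synonym ('j, 'k) dpoly = "(('j \<times> nat) \<Rightarrow>\<^sub>0 nat) \<Rightarrow>\<^sub>0 'k"

definition dVar :: "'j \<times> nat \<Rightarrow> ('j, 'k::comm_ring_1) dpoly" where
  "dVar v = Poly_Mapping.single (Poly_Mapping.single v 1) 1"

definition dConst :: "'k::comm_ring_1 \<Rightarrow> ('j, 'k) dpoly" where
  "dConst c = Poly_Mapping.single 0 c"

definition dvars :: "('j, 'k::comm_ring_1) dpoly \<Rightarrow> ('j \<times> nat) set" where
  "dvars p = (\<Union>m \<in> Poly_Mapping.keys p. Poly_Mapping.keys m)"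

text \<open>k[W]: polynomials involving only derivatives from W.\<close>
definition polys_in :: "('j \<times> nat) set \<Rightarrow> ('j, 'k::comm_ring_1) dpoly set" where
  "polys_in W = {p. dvars p \<subseteq> W}"

definition degv :: "'j \<times> nat \<Rightarrow> ('j, 'k::comm_ring_1) dpoly \<Rightarrow> nat" where
  "degv v p = Max (insert 0 ((\<lambda>m. Poly_Mapping.lookup m v) ` Poly_Mapping.keys p))"

definition coeffv :: "'j \<times> nat \<Rightarrow> nat \<Rightarrow> ('j, 'k::comm_ring_1) dpoly \<Rightarrow> ('j, 'k) dpoly" where
  "coeffv v d p = (\<Sum>m \<in> {m \<in> Poly_Mapping.keys p. Poly_Mapping.lookup m v = d}.
       Poly_Mapping.single (Poly_Mapping.update v 0 m) (Poly_Mapping.lookup p m))"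

definition pderivv :: "'j \<times> nat \<Rightarrow> ('j, 'k::comm_ring_1) dpoly \<Rightarrow> ('j, 'k) dpoly" where
  "pderivv v p = (\<Sum>m \<in> Poly_Mapping.keys p.
       Poly_Mapping.single (Poly_Mapping.update v (Poly_Mapping.lookup m v - 1) m)
                           (of_nat (Poly_Mapping.lookup m v) * Poly_Mapping.lookup p m))"

text \<open>A ranking (given as its reflexive order relation le u v meaning u is ranked at most v).\<close>
definition ranking :: "('j \<times> nat \<Rightarrow> 'j \<times> nat \<Rightarrow> bool) \<Rightarrow> bool" where
  "ranking le \<longleftrightarrow>
     (\<forall>u. le u u) \<and> (\<forall>u v w. le u v \<longrightarrow> le v w \<longrightarrow> le u w) \<and>
     (\<forall>u v. le u v \<longrightarrow> le v u \<longrightarrow> u = v) \<and> (\<forall>u v. le u v \<or> le v u) \<and>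
     (\<forall>j r s. le (j, r) (j, r + s)) \<and>
     (\<forall>j r j' r' s. le (j, r) (j', r') \<longrightarrow> le (j, r + s) (j', r' + s))"

text \<open>Leader of a non-constant differential polynomial.\<close>
definition leader :: "('j \<times> nat \<Rightarrow> 'j \<times> nat \<Rightarrow> bool) \<Rightarrow> ('j, 'k::comm_ring_1) dpoly \<Rightarrow> 'j \<times> nat" where
  "leader le f = (THE u. u \<in> dvars f \<and> (\<forall>v \<in> dvars f. le v u))"

definition initial :: "('j \<times> nat \<Rightarrow> 'j \<times> nat \<Rightarrow> bool) \<Rightarrow> ('j, 'k::comm_ring_1) dpoly \<Rightarrow> ('j, 'k) dpoly" where
  "initial le f = coeffv (leader le f) (degv (leader le f) f) f"

definition separant :: "('j \<times> nat \<Rightarrow> 'j \<times> nat \<Rightarrow> bool) \<Rightarrow> ('j, 'k::comm_ring_1) dpoly \<Rightarrow> ('j, 'k) dpoly" where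
  "separant le f = pderivv (leader le f) f"

definition nonconst :: "('j, 'k::comm_ring_1) dpoly \<Rightarrow> bool" where
  "nonconst f \<longleftrightarrow> dvars f \<noteq> {}"

definition reduced :: "('j \<times> nat \<Rightarrow> 'j \<times> nat \<Rightarrow> bool) \<Rightarrow> ('j, 'k::comm_ring_1) dpoly \<Rightarrow> ('j, 'k) dpoly \<Rightarrow> bool" where
  "reduced le f g \<longleftrightarrow>
     (\<forall>s>0. (fst (leader le g), snd (leader le g) + s) \<notin> dvars f) \<and>
     degv (leader le g) f < degv (leader le g) g"

definition poly_rank_less :: "('j \<times> nat \<Rightarrow> 'j \<times> nat \<Rightarrow> bool) \<Rightarrow> ('j, 'k::comm_ring_1) dpoly \<Rightarrow> ('j, 'k) dpoly \<Rightarrow> bool" where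
  "poly_rank_less le f g \<longleftrightarrow>
     (le (leader le f) (leader le g) \<and> leader le f \<noteq> leader le g) \<or>
     (leader le f = leader le g \<and> degv (leader le f) f < degv (leader le g) g)"

definition poly_rank_eq :: "('j \<times> nat \<Rightarrow> 'j \<times> nat \<Rightarrow> bool) \<Rightarrow> ('j, 'k::comm_ring_1) dpoly \<Rightarrow> ('j, 'k) dpoly \<Rightarrow> bool" where
  "poly_rank_eq le f g \<longleftrightarrow> leader le f = leader le g \<and> degv (leader le f) f = degv (leader le g) g"

definition autoreduced :: "('j \<times> nat \<Rightarrow> 'j \<times> nat \<Rightarrow> bool) \<Rightarrow> ('j, 'k::comm_ring_1) dpoly list \<Rightarrow> bool" where
  "autoreduced le A \<longleftrightarrow>
     (\<forall>i < length A. nonconst (A ! i)) \<and>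
     (\<forall>i < length A. \<forall>j < length A. i \<noteq> j \<longrightarrow> reduced le (A ! i) (A ! j)) \<and>
     (\<forall>i j. i < j \<longrightarrow> j < length A \<longrightarrow> poly_rank_less le (A ! i) (A ! j))"

text \<open>Lexicographic comparison of autoreduced sets: A has lower rank than B
(a proper extension having lower rank).\<close>
definition aset_rank_less :: "('j \<times> nat \<Rightarrow> 'j \<times> nat \<Rightarrow> bool) \<Rightarrow> ('j, 'k::comm_ring_1) dpoly list \<Rightarrow> ('j, 'k) dpoly list \<Rightarrow> bool" where
  "aset_rank_less le A B \<longleftrightarrow>
     (\<exists>i < min (length A) (length B).
        (\<forall>j < i. poly_rank_eq le (A ! j) (B ! j)) \<and> poly_rank_less le (A ! i) (B ! i)) \<or>
     (length B < length A \<and> (\<forall>j < length B. poly_rank_eq le (A ! j) (B ! j)))"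

definition char_set :: "('j \<times> nat \<Rightarrow> 'j \<times> nat \<Rightarrow> bool) \<Rightarrow> ('j, 'k::comm_ring_1) dpoly set \<Rightarrow> ('j, 'k) dpoly list \<Rightarrow> bool" where
  "char_set le I C \<longleftrightarrow>
     autoreduced le C \<and> set C \<subseteq> I \<and>
     (\<forall>B. autoreduced le B \<and> set B \<subseteq> I \<longrightarrow> \<not> aset_rank_less le B C)"

definition ideal_in :: "('j \<times> nat) set \<Rightarrow> ('j, 'k::comm_ring_1) dpoly set \<Rightarrow> ('j, 'k) dpoly set" where
  "ideal_in W S = {p. \<exists>as ss. length as = length ss \<and> set as \<subseteq> polys_in W \<and> set ss \<subseteq> S \<and>
                       p = sum_list (map2 (*) as ss)}"

definition mult_closure :: "('j, 'k::comm_ring_1) dpoly set \<Rightarrow> ('j, 'k) dpoly set" where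
  "mult_closure T = {prod_list xs | xs. set xs \<subseteq> T}"

text \<open>Saturation (S) : T^infinity computed in k[W].\<close>
definition saturation_in :: "('j \<times> nat) set \<Rightarrow> ('j, 'k::comm_ring_1) dpoly set \<Rightarrow> ('j, 'k) dpoly set \<Rightarrow> ('j, 'k) dpoly set" where
  "saturation_in W S T = {a \<in> polys_in W. \<exists>s \<in> mult_closure T. s * a \<in> ideal_in W S}"

definition prime_ideal_in :: "('j \<times> nat) set \<Rightarrow> ('j, 'k::comm_ring_1) dpoly set \<Rightarrow> bool" where
  "prime_ideal_in W J \<longleftrightarrow>
     J \<subseteq> polys_in W \<and> 0 \<in> J \<and> (\<forall>a\<in>J. \<forall>b\<in>J. a + b \<in> J) \<and>
     (\<forall>a\<in>J. \<forall>r\<in>polys_in W. r * a \<in> J) \<and> 1 \<notin> J \<and>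
     (\<forall>a\<in>polys_in W. \<forall>b\<in>polys_in W. a * b \<in> J \<longrightarrow> a \<in> J \<or> b \<in> J)"

text \<open>Units of Quot(k[V]/J)[U] (J prime, U disjoint from V), for an element represented
by f in k[V \<union> U] (which represents an element of (k[V]/J)[U] = k[V \<union> U]/J k[V \<union> U]):
f is nonzero and congruent modulo J k[V \<union> U] to an element of k[V].\<close>
definition frac_unit :: "('j \<times> nat) set \<Rightarrow> ('j, 'k::comm_ring_1) dpoly set \<Rightarrow> ('j \<times> nat) set \<Rightarrow> ('j, 'k) dpoly \<Rightarrow> bool" where
  "frac_unit V J U f \<longleftrightarrow>
     f \<notin> ideal_in (V \<union> U) J \<and> (\<exists>g \<in> polys_in V. f - g \<in> ideal_in (V \<union> U) J)"

text \<open>f in k[V \<union> U] is irreducible in Quot(k[V]/J)[U].  Every element of Quot(k[V]/J)[U]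
is g/d with g in (k[V]/J)[U] and d a nonzero element of k[V]/J, so a factorization
f = (g/d1)(h/d2) amounts to d f \<equiv> g h modulo J k[V \<union> U] with d \<in> k[V] - J.
We require J to be a prime ideal of k[V] (so that the quotient field exists) and
U disjoint from V.\<close>
definition irreducible_over_frac :: "('j \<times> nat) set \<Rightarrow> ('j, 'k::comm_ring_1) dpoly set \<Rightarrow> ('j \<times> nat) set \<Rightarrow> ('j, 'k) dpoly \<Rightarrow> bool" where
  "irreducible_over_frac V J U f \<longleftrightarrow>
     prime_ideal_in V J \<and> V \<inter> U = {} \<and> f \<in> polys_in (V \<union> U) \<and>
     f \<notin> ideal_in (V \<union> U) J \<and> \<not> frac_unit V J U f \<and>
     (\<forall>g \<in> polys_in (V \<union> U). \<forall>h \<in> polys_in (V \<union> U). \<forall>d \<in> polys_in V - J.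
        d * f - g * h \<in> ideal_in (V \<union> U) J \<longrightarrow> frac_unit V J U g \<or> frac_unit V J U h)"

text \<open>Property (1): the chain C = C_1, ..., C_p is irreducible.  With 0-based list indices,
V_i = derivatives in C!0..C!(i-1), I_i the initials of these, U_i = dvars (C!i) - V_i.\<close>
definition irreducible_chain :: "('j \<times> nat \<Rightarrow> 'j \<times> nat \<Rightarrow> bool) \<Rightarrow> ('j, 'k::comm_ring_1) dpoly list \<Rightarrow> bool" where
  "irreducible_chain le C \<longleftrightarrow>
     (C \<noteq> [] \<longrightarrow> irreducible (C ! 0)) \<and>
     (\<forall>i. 0 < i \<longrightarrow> i < length C \<longrightarrow>
        (let V = (\<Union>j<i. dvars (C ! j));
             J = saturation_in V (set (take i C)) (initial le ` set (take i C));
             U = dvars (C ! i) - V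
         in irreducible_over_frac V J U (C ! i)))"

definition separant_condition :: "('j, 'k::comm_ring_1) dpoly set \<Rightarrow> ('j, 'k) dpoly list \<Rightarrow> bool" where
  "separant_condition P C \<longleftrightarrow>
     (\<forall>t. (\<exists>r. (t, r) \<in> (\<Union>c \<in> set C. dvars c)) \<longrightarrow>
        (let s = Max {r. (t, r) \<in> (\<Union>c \<in> set C. dvars c)};
             i = (LEAST i. i < length C \<and> (t, s) \<in> dvars (C ! i))
         in pderivv (t, s) (C ! i) \<notin> P))"

definition is_derivation :: "('k::comm_ring_1 \<Rightarrow> 'k) \<Rightarrow> bool" where
  "is_derivation d \<longleftrightarrow> (\<forall>a b. d (a + b) = d a + d b) \<and> (\<forall>a b. d (a * b) = a * d b + d a * b)"

definition extends_derivation :: "('k::comm_ring_1 \<Rightarrow> 'k) \<Rightarrow> (('j, 'k) dpoly \<Rightarrow> ('j, 'k) dpoly) \<Rightarrow> bool" where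
  "extends_derivation dk D \<longleftrightarrow>
     (\<forall>p q. D (p + q) = D p + D q) \<and> (\<forall>p q. D (p * q) = p * D q + D p * q) \<and>
     (\<forall>c. D (dConst c) = dConst (dk c)) \<and> (\<forall>j r. D (dVar (j, r)) = dVar (j, Suc r))"

definition prime_diff_ideal :: "(('j, 'k::comm_ring_1) dpoly \<Rightarrow> ('j, 'k) dpoly) \<Rightarrow> ('j, 'k) dpoly set \<Rightarrow> bool" where
  "prime_diff_ideal D P \<longleftrightarrow> prime_ideal_in UNIV P \<and> (\<forall>p \<in> P. D p \<in> P)"

end

theory Submission
  imports Defs "HOL-Library.Countable" "HOL-Library.Product_Lexorder"
begin

abbreviation lk where "lk \<equiv> Poly_Mapping.lookup"
abbreviation ks where "ks \<equiv> Poly_Mapping.keys"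
abbreviation sng where "sng \<equiv> Poly_Mapping.single"

lemma keys_add_nat: "ks (a + b :: 'a \<Rightarrow>\<^sub>0 nat) = ks a \<union> ks b"
  by (auto simp: in_keys_iff lookup_add)

lemma poly_sum_single: "p = (\<Sum>b\<in>ks p. sng b (lk p b))"
  by (rule poly_mapping_eqI) (auto simp: lookup_sum lookup_single when_def in_keys_iff
      sum.delta[OF finite_keys] intro: sum.neutral)

lemma poly_induct_aux:
  fixes f :: "'a \<Rightarrow> 'b::comm_monoid_add"
  assumes "P 0" "\<And>m c p. P p \<Longrightarrow> P (sng m c + p)" "finite A"
  shows "P (\<Sum>b\<in>A. sng b (f b))"
  using assms(3)
proof (induction A rule: finite_induct)
  case empty then show ?case using assms by simp
next
  case (insert x F) then show ?case using assms by (simp add: sum.insert)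
qed

lemma poly_induct:
  fixes p :: "'a \<Rightarrow>\<^sub>0 'b::comm_monoid_add"
  assumes "P 0" "\<And>m c p. P p \<Longrightarrow> P (sng m c + p)"
  shows "P p"
  using poly_induct_aux[of P, OF assms, of "ks p" "lk p"] poly_sum_single[of p] by simp

lemma lookup_single_mult:
  fixes p :: "('a::cancel_comm_monoid_add) \<Rightarrow>\<^sub>0 ('b::comm_semiring_1)"
  shows "lk (sng a x * p) m = (if \<exists>d. m = a + d then x * lk p (m - a) else 0)"
proof (induction p rule: poly_induct)
  case 1 then show ?case by simp
next
  case (2 n c p)
  have "lk (sng a x * sng n c) m = (if \<exists>d. m = a + d then x * lk (sng n c) (m - a) else 0)"
  proof (cases "a + n = m")
    case True then show ?thesis by (auto simp: mult_single lookup_single when_def)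
  next
    case False
    have "lk (sng n c) (m - a) = 0" if "m = a + d" for d
      using False that by (auto simp: lookup_single when_def)
    then show ?thesis using False by (auto simp: mult_single lookup_single when_def)
  qed
  then show ?case using 2 by (simp add: distrib_left lookup_add distrib_left)
qed

lemma lookup_mult_single:
  fixes p :: "('a::cancel_comm_monoid_add) \<Rightarrow>\<^sub>0 ('b::comm_semiring_1)"
  shows "lk (p * sng a x) m = (if \<exists>d. m = a + d then x * lk p (m - a) else 0)"
  by (subst mult.commute) (rule lookup_single_mult)

lemma dvars_iff: "v \<in> dvars p \<longleftrightarrow> (\<exists>m \<in> ks p. v \<in> ks m)"
  by (auto simp: dvars_def)

lemma dvars_zero[simp]: "dvars 0 = {}" by (simp add: dvars_def)

lemma dvars_add: "dvars (p + q) \<subseteq> dvars p \<union> dvars q"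
  using keys_add[of p q] by (auto simp: dvars_def)

lemma dvars_uminus[simp]: "dvars (- p) = dvars p"
  by (simp add: dvars_def keys_minus)

lemma keys_diff_sub: "ks (p - q) \<subseteq> ks p \<union> ks q"
  by (auto simp: in_keys_iff lookup_minus)

lemma dvars_diff: "dvars (p - q) \<subseteq> dvars p \<union> dvars q"
  using keys_diff_sub[of p q] by (auto simp: dvars_def)

lemma dvars_mult: "dvars (p * q) \<subseteq> dvars p \<union> dvars q"
  using keys_mult[of p q] by (force simp: dvars_def keys_add_nat)

lemma dvars_single: "dvars (sng m c) \<subseteq> ks m"
  by (auto simp: dvars_def)

lemma dvars_dConst[simp]: "dvars (dConst c) = {}"
  by (auto simp: dvars_def dConst_def)

lemma dvars_one[simp]: "dvars (1::('j,'k::comm_ring_1) dpoly) = {}"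
  by (simp add: dvars_def)

lemma dvars_dVar: "dvars (dVar v :: ('j,'k::comm_ring_1) dpoly) = {v}"
  by (simp add: dvars_def dVar_def)

lemma dvars_sum: "dvars (sum f A) \<subseteq> (\<Union>a\<in>A. dvars (f a))"
proof (induction A rule: infinite_finite_induct)
  case (insert x F) then show ?case using dvars_add[of "f x" "sum f F"] by auto
qed auto

lemma dvars_power: "dvars (p ^ n) \<subseteq> dvars p"
  by (induction n) (use dvars_mult in auto)

lemma dvars_prod_list: "dvars (prod_list xs) \<subseteq> (\<Union>x\<in>set xs. dvars x)"
  by (induction xs) (use dvars_mult in auto)

lemma polys_in_iff: "p \<in> polys_in W \<longleftrightarrow> dvars p \<subseteq> W" by (simp add: polys_in_def)

lemma polys_in_add: "p \<in> polys_in W \<Longrightarrow> q \<in> polys_in W \<Longrightarrow> p + q \<in> polys_in W"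
  using dvars_add[of p q] by (auto simp: polys_in_def)
lemma polys_in_diff: "p \<in> polys_in W \<Longrightarrow> q \<in> polys_in W \<Longrightarrow> p - q \<in> polys_in W"
  using dvars_diff[of p q] by (auto simp: polys_in_def)
lemma polys_in_mult: "p \<in> polys_in W \<Longrightarrow> q \<in> polys_in W \<Longrightarrow> p * q \<in> polys_in W"
  using dvars_mult[of p q] by (auto simp: polys_in_def)
lemma polys_in_uminus: "p \<in> polys_in W \<Longrightarrow> - p \<in> polys_in W"
  by (auto simp: polys_in_def)
lemma polys_in_zero[simp]: "0 \<in> polys_in W" by (simp add: polys_in_def)
lemma polys_in_one[simp]: "1 \<in> polys_in W" by (simp add: polys_in_def)
lemma polys_in_dConst[simp]: "dConst c \<in> polys_in W" by (simp add: polys_in_def)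
lemma polys_in_mono: "p \<in> polys_in V \<Longrightarrow> V \<subseteq> W \<Longrightarrow> p \<in> polys_in W"
  by (auto simp: polys_in_def)
lemma polys_in_power: "p \<in> polys_in W \<Longrightarrow> p ^ n \<in> polys_in W"
  using dvars_power[of p n] by (auto simp: polys_in_def)
lemma polys_in_prod_list: "set xs \<subseteq> polys_in W \<Longrightarrow> prod_list xs \<in> polys_in W"
  using dvars_prod_list[of xs] by (auto simp: polys_in_def)
lemma polys_in_sum: "(\<And>a. a \<in> A \<Longrightarrow> f a \<in> polys_in W) \<Longrightarrow> sum f A \<in> polys_in W"
proof -
  assume a: "\<And>a. a \<in> A \<Longrightarrow> f a \<in> polys_in W"
  have "\<forall>a\<in>A. dvars (f a) \<subseteq> W" using a by (simp add: polys_in_def)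
  then show ?thesis using dvars_sum[of f A] unfolding polys_in_def by blast
qed
lemma polys_in_self: "p \<in> polys_in (dvars p)" by (simp add: polys_in_def)

lemma finite_degset: "finite (insert 0 ((\<lambda>m. lk m v) ` ks p))" by simp

lemma degv_ge: "m \<in> ks p \<Longrightarrow> lk m v \<le> degv v p"
  unfolding degv_def by (rule Max_ge) auto

lemma degv_le_iff: "degv v p \<le> n \<longleftrightarrow> (\<forall>m\<in>ks p. lk m v \<le> n)"
  unfolding degv_def by (subst Max_le_iff) auto

lemma degv_le: "(\<And>m. m \<in> ks p \<Longrightarrow> lk m v \<le> n) \<Longrightarrow> degv v p \<le> n"
  using degv_le_iff by blast

lemma degv_attained: "degv v p > 0 \<Longrightarrow> \<exists>m\<in>ks p. lk m v = degv v p"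
proof -
  assume a: "degv v p > 0"
  have "degv v p \<in> insert 0 ((\<lambda>m. lk m v) ` ks p)"
    unfolding degv_def by (rule Max_in) auto
  with a show ?thesis by auto
qed

lemma degv_zero[simp]: "degv v 0 = 0" by (simp add: degv_def)

lemma degv_pos_iff: "degv v p > 0 \<longleftrightarrow> v \<in> dvars p"
proof
  assume "degv v p > 0"
  then obtain m where "m \<in> ks p" "lk m v = degv v p" using degv_attained by blast
  then have "m \<in> ks p" "lk m v > 0" using \<open>degv v p > 0\<close> by auto
  then show "v \<in> dvars p" by (auto simp: dvars_def in_keys_iff)
next
  assume "v \<in> dvars p"
  then obtain m where "m \<in> ks p" "v \<in> ks m" by (auto simp: dvars_def)
  then show "degv v p > 0" using degv_ge[of m p v] by (auto simp: in_keys_iff)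
qed

lemma degv_notin: "v \<notin> dvars p \<Longrightarrow> degv v p = 0"
  using degv_pos_iff by blast

lemma degv_add: "degv v (p + q) \<le> max (degv v p) (degv v q)"
proof (rule degv_le)
  fix m assume "m \<in> ks (p + q)"
  then have "m \<in> ks p \<or> m \<in> ks q" using keys_add[of p q] by blast
  then show "lk m v \<le> max (degv v p) (degv v q)"
    using degv_ge[of m p v] degv_ge[of m q v] by auto
qed

lemma degv_uminus[simp]: "degv v (- p) = degv v p"
  by (simp add: degv_def keys_minus)

lemma degv_diff: "degv v (p - q) \<le> max (degv v p) (degv v q)"
proof (rule degv_le)
  fix m assume "m \<in> ks (p - q)"
  then have "m \<in> ks p \<or> m \<in> ks q" using keys_diff_sub[of p q] by blast
  then show "lk m v \<le> max (degv v p) (degv v q)"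
    using degv_ge[of m p v] degv_ge[of m q v] by auto
qed

lemma degv_mult: "degv v (p * q) \<le> degv v p + degv v q"
proof (rule degv_le)
  fix m assume "m \<in> ks (p * q)"
  then obtain a b where "a \<in> ks p" "b \<in> ks q" "m = a + b" using keys_mult[of p q] by blast
  then show "lk m v \<le> degv v p + degv v q"
    using degv_ge[of a p v] degv_ge[of b q v] by (simp add: lookup_add)
qed

lemma degv_sum: assumes "\<And>a. a \<in> A \<Longrightarrow> degv v (f a) \<le> n" shows "degv v (sum f A) \<le> n"
  using assms
proof (induction A rule: infinite_finite_induct)
  case (insert x F)
  then have "degv v (f x) \<le> n" "degv v (sum f F) \<le> n" by auto
  then show ?case using insert(1,2) degv_add[of v "f x" "sum f F"] by simp
qed auto

lemma dvars_degv_le: "dvars p \<subseteq> dvars q \<Longrightarrow> (\<forall>v. degv v p \<le> degv v q) \<Longrightarrow> True" by simp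

declare split_paired_All[simp del] split_paired_Ex[simp del]

lemma mon_eq_iff: "(m :: 'a \<Rightarrow>\<^sub>0 nat) = n \<longleftrightarrow> (\<forall>v. lk m v = lk n v)"
  by (simp add: poly_mapping_eq_iff fun_eq_iff)

lemma mon_dvd_iff: "(\<exists>d. (m :: 'a \<Rightarrow>\<^sub>0 nat) = a + d) \<longleftrightarrow> (\<forall>v. lk a v \<le> lk m v)"
proof
  assume "\<forall>v. lk a v \<le> lk m v"
  then have "m = a + (m - a)" by (simp add: mon_eq_iff lookup_add lookup_minus)
  then show "\<exists>d. m = a + d" by blast
qed (auto simp: lookup_add)

lemma lookup_single_nat: "lk (sng u d) v = (if u = v then d else 0)"
  by (simp add: lookup_single when_def)

lemma lookup_coeffv:
  "lk (coeffv u d p) m = (if lk m u = 0 then lk p (m + sng u d) else 0)"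
proof -
  let ?S = "{m \<in> ks p. lk m u = d}"
  have eq: "(Poly_Mapping.update u 0 m' = m) \<longleftrightarrow> (lk m u = 0 \<and> m' = m + sng u d)"
    if "m' \<in> ?S" for m'
  proof
    assume a: "Poly_Mapping.update u 0 m' = m"
    have "lk m u = 0" using a[symmetric] by (simp add: lookup_update)
    moreover have "m' = m + sng u d"
    proof (rule poly_mapping_eqI)
      fix w show "lk m' w = lk (m + sng u d) w"
        using that a[symmetric] by (cases "w = u") (auto simp: lookup_update lookup_add lookup_single_nat)
    qed
    ultimately show "lk m u = 0 \<and> m' = m + sng u d" by blast
  next
    assume a: "lk m u = 0 \<and> m' = m + sng u d"
    show "Poly_Mapping.update u 0 m' = m"
    proof (rule poly_mapping_eqI)
      fix w show "lk (Poly_Mapping.update u 0 m') w = lk m w"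
        using a by (cases "w = u") (auto simp: lookup_update lookup_add lookup_single_nat)
    qed
  qed
  have "lk (coeffv u d p) m = (\<Sum>m'\<in>?S. (lk p m' when Poly_Mapping.update u 0 m' = m))"
    by (simp add: coeffv_def lookup_sum lookup_single)
  also have "\<dots> = (\<Sum>m'\<in>?S. if m' = m + sng u d then (if lk m u = 0 then lk p m' else 0) else 0)"
    by (rule sum.cong) (use eq in \<open>auto simp: when_def\<close>)
  also have "\<dots> = (if m + sng u d \<in> ?S then (if lk m u = 0 then lk p (m + sng u d) else 0) else 0)"
    by (rule sum.delta) simp
  also have "\<dots> = (if lk m u = 0 then lk p (m + sng u d) else 0)"
    by (auto simp: in_keys_iff lookup_add lookup_single_nat)
  finally show ?thesis .
qed

lemma lookup_pderivv:
  "lk (pderivv v p) m = of_nat (lk m v + 1) * lk p (m + sng v 1)"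
proof -
  have eq: "(of_nat (lk m' v) * lk p m' when Poly_Mapping.update v (lk m' v - 1) m' = m) =
            (if m' = m + sng v 1 then of_nat (lk m v + 1) * lk p m' else 0)" for m'
  proof (cases "lk m' v = 0")
    case True
    then have "m' \<noteq> m + sng v 1" by (auto simp: mon_eq_iff lookup_add lookup_single_nat)
    then show ?thesis using True by (simp add: when_def)
  next
    case False
    have "(Poly_Mapping.update v (lk m' v - 1) m' = m) \<longleftrightarrow> m' = m + sng v 1"
    proof
      assume a: "Poly_Mapping.update v (lk m' v - 1) m' = m"
      show "m' = m + sng v 1"
      proof (rule poly_mapping_eqI)
        fix w show "lk m' w = lk (m + sng v 1) w"
          using False a[symmetric] by (cases "w = v") (auto simp: lookup_update lookup_add lookup_single_nat)
      qed
    next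
      assume a: "m' = m + sng v 1"
      show "Poly_Mapping.update v (lk m' v - 1) m' = m"
      proof (rule poly_mapping_eqI)
        fix w show "lk (Poly_Mapping.update v (lk m' v - 1) m') w = lk m w"
          using a by (cases "w = v") (auto simp: lookup_update lookup_add lookup_single_nat)
      qed
    qed
    moreover have "m' = m + sng v 1 \<Longrightarrow> lk m' v = lk m v + 1"
      by (simp add: lookup_add lookup_single_nat)
    ultimately show ?thesis by (auto simp: when_def)
  qed
  have "lk (pderivv v p) m = (\<Sum>m'\<in>ks p. (of_nat (lk m' v) * lk p m' when Poly_Mapping.update v (lk m' v - 1) m' = m))"
    by (simp add: pderivv_def lookup_sum lookup_single)
  also have "\<dots> = (\<Sum>m'\<in>ks p. if m' = m + sng v 1 then of_nat (lk m v + 1) * lk p m' else 0)"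
    using eq by simp
  also have "\<dots> = (if m + sng v 1 \<in> ks p then of_nat (lk m v + 1) * lk p (m + sng v 1) else 0)"
    by (rule sum.delta) simp
  also have "\<dots> = of_nat (lk m v + 1) * lk p (m + sng v 1)"
    by (auto simp: in_keys_iff)
  finally show ?thesis .
qed

lemma keys_coeffv: "m \<in> ks (coeffv u d p) \<Longrightarrow> lk m u = 0 \<and> m + sng u d \<in> ks p"
  by (auto simp: in_keys_iff lookup_coeffv split: if_splits)

lemma dvars_coeffv: "dvars (coeffv u d p) \<subseteq> dvars p - {u}"
proof
  fix w assume "w \<in> dvars (coeffv u d p)"
  then obtain m where m: "m \<in> ks (coeffv u d p)" "w \<in> ks m" by (auto simp: dvars_def)
  from keys_coeffv[OF m(1)] have "lk m u = 0" "m + sng u d \<in> ks p" by auto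
  moreover have "w \<in> ks (m + sng u d)" using m(2) keys_add_nat[of m "sng u d"] by blast
  moreover have "w \<noteq> u" using m(2) \<open>lk m u = 0\<close> by (auto simp: in_keys_iff)
  ultimately show "w \<in> dvars p - {u}" by (auto simp: dvars_def)
qed

lemma degv_coeffv: "degv w (coeffv u d p) \<le> degv w p"
proof (rule degv_le)
  fix m assume "m \<in> ks (coeffv u d p)"
  from keys_coeffv[OF this] have "m + sng u d \<in> ks p" by auto
  from degv_ge[OF this, of w] show "lk m w \<le> degv w p" by (simp add: lookup_add)
qed

lemma keys_pderivv: "m \<in> ks (pderivv v p) \<Longrightarrow> m + sng v 1 \<in> ks p"
  by (auto simp: in_keys_iff lookup_pderivv)

lemma dvars_pderivv: "dvars (pderivv v p) \<subseteq> dvars p"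
proof
  fix w assume "w \<in> dvars (pderivv v p)"
  then obtain m where m: "m \<in> ks (pderivv v p)" "w \<in> ks m" by (auto simp: dvars_def)
  from keys_pderivv[OF m(1)] have "m + sng v 1 \<in> ks p" .
  moreover have "w \<in> ks (m + sng v 1)" using m(2) keys_add_nat[of m "sng v 1"] by blast
  ultimately show "w \<in> dvars p" by (auto simp: dvars_def)
qed

lemma degv_pderivv: "degv w (pderivv v p) \<le> degv w p"
proof (rule degv_le)
  fix m assume "m \<in> ks (pderivv v p)"
  from keys_pderivv[OF this] have "m + sng v 1 \<in> ks p" by auto
  from degv_ge[OF this, of w] show "lk m w \<le> degv w p" by (simp add: lookup_add)
qed

lemma dVar_power: "(dVar u :: ('j,'k::comm_ring_1) dpoly) ^ n = sng (sng u n) 1"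
  by (induction n) (auto simp: dVar_def mult_single simp flip: single_add)

lemma lookup_times_Xpow:
  fixes c :: "('j,'k::comm_ring_1) dpoly"
  assumes "u \<notin> dvars c"
  shows "lk (c * dVar u ^ n) m = (if lk m u = n then lk c (m - sng u n) else 0)"
proof -
  have "lk (c * dVar u ^ n) m = (if \<exists>d. m = sng u n + d then lk c (m - sng u n) else 0)"
    by (simp add: dVar_power lookup_mult_single)
  also have "\<dots> = (if lk m u = n then lk c (m - sng u n) else 0)"
  proof (cases "\<exists>d. m = sng u n + d")
    case True
    then obtain d where d: "m = sng u n + d" by blast
    then have md: "m - sng u n = d" by simp
    show ?thesis
    proof (cases "lk m u = n")
      case False
      then have "lk d u \<noteq> 0" using d by (simp add: lookup_add lookup_single_nat)
      have "d \<notin> ks c"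
      proof
        assume "d \<in> ks c"
        moreover have "u \<in> ks d" using \<open>lk d u \<noteq> 0\<close> by (simp add: in_keys_iff)
        ultimately show False using assms by (auto simp: dvars_def)
      qed
      then have "lk c d = 0" by (simp add: in_keys_iff)
      then show ?thesis using True md False by simp
    qed (use True in simp)
  next
    case False
    then have "lk m u \<noteq> n \<or> True" by simp
    have "lk m u \<noteq> n"
    proof
      assume "lk m u = n"
      then have "\<forall>v. lk (sng u n) v \<le> lk m v" by (simp add: lookup_single_nat)
      then show False using False mon_dvd_iff by blast
    qed
    then show ?thesis using False by simp
  qed
  finally show ?thesis .
qed

lemma poly_decomp:
  fixes p :: "('j,'k::comm_ring_1) dpoly" and u
  defines "n \<equiv> degv u p"
  shows "\<exists>low. p = coeffv u n p * dVar u ^ n + low \<and> (\<forall>m\<in>ks low. lk m u < n)"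
proof -
  define low where "low = p - coeffv u n p * dVar u ^ n"
  have uc: "u \<notin> dvars (coeffv u n p)" using dvars_coeffv by blast
  have "\<forall>m\<in>ks low. lk m u < n"
  proof
    fix m assume m: "m \<in> ks low"
    have le: "lk m u \<le> n"
    proof (rule ccontr)
      assume "\<not> lk m u \<le> n"
      then have "lk p m = 0" using degv_ge[of m p u] n_def by (auto simp: in_keys_iff)
      then show False using m \<open>\<not> lk m u \<le> n\<close>
        by (auto simp: low_def in_keys_iff lookup_minus lookup_times_Xpow[OF uc])
    qed
    have "lk m u \<noteq> n"
    proof
      assume e: "lk m u = n"
      have "m - sng u n + sng u n = m"
        using e by (simp add: mon_eq_iff lookup_add lookup_minus lookup_single_nat)
      moreover have "lk (m - sng u n) u = 0" using e by (simp add: lookup_minus lookup_single_nat)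
      ultimately have "lk low m = 0"
        using e by (simp add: low_def lookup_minus lookup_times_Xpow[OF uc] lookup_coeffv)
      then show False using m by (simp add: in_keys_iff)
    qed
    then show "lk m u < n" using le by simp
  qed
  then show ?thesis unfolding low_def by (intro exI[of _ low]) (simp add: low_def)
qed

lemma degv_Xpow: "degv u ((dVar u :: ('j,'k::comm_ring_1) dpoly) ^ n) \<le> n"
  by (rule degv_le) (simp add: dVar_power lookup_single_nat)

lemma dvars_Xpow: "dvars ((dVar u :: ('j,'k::comm_ring_1) dpoly) ^ n) \<subseteq> {u}"
  using dvars_power[of "dVar u" n] dvars_dVar[of u] by auto

definition offV :: "'a set \<Rightarrow> ('a \<Rightarrow>\<^sub>0 nat) \<Rightarrow> ('a \<Rightarrow>\<^sub>0 nat)" where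
  "offV V m = Abs_poly_mapping (\<lambda>v. if v \<in> V then 0 else lk m v)"

lemma lookup_offV: "lk (offV V m) v = (if v \<in> V then 0 else lk m v)"
proof -
  have "{v. (if v \<in> V then 0 else lk m v) \<noteq> 0} \<subseteq> ks m"
  proof
    fix x assume "x \<in> {v. (if v \<in> V then 0 else lk m v) \<noteq> 0}"
    then have "lk m x \<noteq> 0" by (cases "x \<in> V") auto
    then show "x \<in> ks m" by (simp add: in_keys_iff)
  qed
  then have "finite {v. (if v \<in> V then 0 else lk m v) \<noteq> 0}"
    by (rule finite_subset[OF _ finite_keys])
  then show ?thesis by (simp add: offV_def)
qed

lemma keys_offV: "ks (offV V m) = ks m - V"
proof (rule set_eqI)
  fix x show "x \<in> ks (offV V m) \<longleftrightarrow> x \<in> ks m - V"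
    by (cases "x \<in> V") (auto simp: in_keys_iff lookup_offV)
qed

lemma offV_add: "offV V (a + b) = offV V a + offV V b"
  by (rule poly_mapping_eqI) (simp add: lookup_offV lookup_add)

lemma offV_V: "ks m \<subseteq> V \<Longrightarrow> offV V m = 0"
  by (rule poly_mapping_eqI) (auto simp: lookup_offV in_keys_iff)

lemma offV_off: "ks a \<inter> V = {} \<Longrightarrow> offV V a = a"
  by (rule poly_mapping_eqI) (auto simp: lookup_offV in_keys_iff)

lemma offV_split: "ks m \<subseteq> V \<Longrightarrow> ks a \<inter> V = {} \<Longrightarrow> offV V (m + a) = a"
  by (simp add: offV_add offV_V offV_off)

definition kcoef :: "('j \<times> nat) set \<Rightarrow> ('j, 'k::comm_ring_1) dpoly \<Rightarrow> (('j \<times> nat) \<Rightarrow>\<^sub>0 nat) \<Rightarrow> ('j, 'k) dpoly" where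
  "kcoef V p a = Abs_poly_mapping (\<lambda>m. if ks m \<subseteq> V then lk p (m + a) else 0)"

lemma lookup_kcoef: "lk (kcoef V p a) m = (if ks m \<subseteq> V then lk p (m + a) else 0)"
proof -
  have inj: "inj (\<lambda>m. m + a)" by (rule injI) simp
  have "finite ((\<lambda>m. m + a) -` ks p)" by (rule finite_vimageI[OF finite_keys inj])
  then have "finite {m. (if ks m \<subseteq> V then lk p (m + a) else 0) \<noteq> 0}"
    by (rule finite_subset[rotated]) (auto simp: in_keys_iff)
  then show ?thesis by (simp add: kcoef_def)
qed

lemma keys_kcoef: "m \<in> ks (kcoef V p a) \<Longrightarrow> ks m \<subseteq> V \<and> m + a \<in> ks p"
  by (auto simp: in_keys_iff lookup_kcoef split: if_splits)

lemma kcoef_polys_in: "kcoef V p a \<in> polys_in V"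
  by (auto simp: polys_in_def dvars_def dest!: keys_kcoef)

lemma kcoef_add: "kcoef V (p + q) a = kcoef V p a + kcoef V q a"
  by (rule poly_mapping_eqI) (simp add: lookup_kcoef lookup_add)
lemma kcoef_diff: "kcoef V (p - q) a = kcoef V p a - kcoef V q a"
  by (rule poly_mapping_eqI) (simp add: lookup_kcoef lookup_minus)
lemma kcoef_uminus: "kcoef V (- p) a = - kcoef V p a"
  by (rule poly_mapping_eqI) (simp add: lookup_kcoef)
lemma kcoef_zero[simp]: "kcoef V 0 a = 0"
  by (rule poly_mapping_eqI) (simp add: lookup_kcoef)
lemma kcoef_sum: "kcoef V (sum f A) a = (\<Sum>x\<in>A. kcoef V (f x) a)"
  by (rule poly_mapping_eqI) (simp add: lookup_kcoef lookup_sum)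

lemma kcoef_single_mult:
  fixes x :: "'k::comm_ring_1"
  assumes b: "ks b \<subseteq> V" and a: "ks a \<inter> V = {}"
  shows "kcoef V (sng b x * p) a = sng b x * kcoef V p a"
proof (rule poly_mapping_eqI)
  fix m
  show "lk (kcoef V (sng b x * p) a) m = lk (sng b x * kcoef V p a) m"
  proof (cases "ks m \<subseteq> V")
    case True
    have iff: "(\<exists>d. m + a = b + d) \<longleftrightarrow> (\<exists>d. m = b + d)"
    proof -
      have "(\<forall>v. lk b v \<le> lk (m + a) v) \<longleftrightarrow> (\<forall>v. lk b v \<le> lk m v)"
      proof (intro iffI allI)
        fix v assume h: "\<forall>v. lk b v \<le> lk (m + a) v"
        show "lk b v \<le> lk m v"
        proof (cases "v \<in> V")
          case True then have "lk a v = 0" using a by (auto simp: in_keys_iff)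
          moreover have "lk b v \<le> lk (m + a) v" using h by blast
          ultimately show ?thesis by (simp add: lookup_add)
        next
          case False then have "lk b v = 0" using b by (auto simp: in_keys_iff)
          then show ?thesis by simp
        qed
      next
        fix v assume h: "\<forall>v. lk b v \<le> lk m v"
        show "lk b v \<le> lk (m + a) v" using h by (simp add: lookup_add add_increasing2)
      qed
      then show ?thesis by (simp add: mon_dvd_iff)
    qed
    show ?thesis
    proof (cases "\<exists>d. m = b + d")
      case True2: True
      then obtain d where d: "m = b + d" by blast
      have kd: "ks (m - b) \<subseteq> V" using d \<open>ks m \<subseteq> V\<close> keys_add_nat[of b d] by auto
      have "m + a - b = m - b + a" using d by (metis add.commute add.left_commute add_diff_cancel_left')
      then show ?thesis using True True2 iff kd
        by (simp add: lookup_single_mult lookup_kcoef)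
    next
      case False
      then show ?thesis using True iff by (simp add: lookup_single_mult lookup_kcoef)
    qed
  next
    case False
    then obtain v where v: "v \<in> ks m" "v \<notin> V" by blast
    have "lk (kcoef V p a) (m - b) = 0" if "m = b + d" for d
    proof -
      have "lk b v = 0" using b v(2) by (auto simp: in_keys_iff)
      then have "v \<in> ks (m - b)" using v(1) by (simp add: in_keys_iff lookup_minus)
      then show ?thesis using v(2) by (auto simp: lookup_kcoef)
    qed
    then show ?thesis using False by (auto simp: lookup_single_mult lookup_kcoef)
  qed
qed

lemma kcoef_Vmult:
  assumes c: "c \<in> polys_in V" and a: "ks a \<inter> V = {}"
  shows "kcoef V (c * p) a = c * kcoef V p a"
proof -
  have "c * p = (\<Sum>b\<in>ks c. sng b (lk c b) * p)"
    by (subst poly_sum_single[of c]) (simp add: sum_distrib_right)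
  then have "kcoef V (c * p) a = (\<Sum>b\<in>ks c. kcoef V (sng b (lk c b) * p) a)"
    by (simp add: kcoef_sum)
  also have "\<dots> = (\<Sum>b\<in>ks c. sng b (lk c b) * kcoef V p a)"
  proof (rule sum.cong[OF refl])
    fix b assume "b \<in> ks c"
    then have "ks b \<subseteq> V" using c by (auto simp: polys_in_def dvars_def)
    then show "kcoef V (sng b (lk c b) * p) a = sng b (lk c b) * kcoef V p a"
      by (rule kcoef_single_mult[OF _ a])
  qed
  also have "\<dots> = c * kcoef V p a"
    by (subst (2) poly_sum_single[of c]) (simp add: sum_distrib_right)
  finally show ?thesis .
qed

lemma kcoef_Vpoly:
  assumes p: "p \<in> polys_in V" and a: "ks a \<inter> V = {}"
  shows "kcoef V p a = (if a = 0 then p else 0)"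
proof (rule poly_mapping_eqI)
  fix m
  show "lk (kcoef V p a) m = lk (if a = 0 then p else 0) m"
  proof (cases "a = 0")
    case True
    have "lk p m = 0" if "\<not> ks m \<subseteq> V"
    proof -
      have "m \<notin> ks p" using that p by (auto simp: polys_in_def dvars_def)
      then show ?thesis by (simp add: in_keys_iff)
    qed
    then show ?thesis using True by (auto simp: lookup_kcoef)
  next
    case False
    then obtain v where v: "v \<in> ks a" by (auto simp: in_keys_iff poly_mapping_eq_iff fun_eq_iff)
    then have "v \<notin> V" using a by auto
    have "m + a \<notin> ks p"
    proof
      assume "m + a \<in> ks p"
      moreover have "v \<in> ks (m + a)" using v keys_add_nat[of m a] by auto
      ultimately show False using p \<open>v \<notin> V\<close> by (auto simp: polys_in_def dvars_def)
    qed
    then show ?thesis using False by (simp add: lookup_kcoef in_keys_iff)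
  qed
qed

lemma kcoef_zero_if:
  assumes "\<forall>m\<in>ks p. offV V m \<noteq> a" and a: "ks a \<inter> V = {}"
  shows "kcoef V p a = 0"
proof (rule poly_mapping_eqI)
  fix m
  have "lk p (m + a) = 0" if "ks m \<subseteq> V"
  proof -
    have "offV V (m + a) = a" by (rule offV_split[OF that a])
    then have "m + a \<notin> ks p" using assms(1) by blast
    then show ?thesis by (simp add: in_keys_iff)
  qed
  then show "lk (kcoef V p a) m = lk 0 m" by (simp add: lookup_kcoef)
qed

definition filtN :: "('j \<times> nat) set \<Rightarrow> ((('j \<times> nat) \<Rightarrow>\<^sub>0 nat) \<Rightarrow> bool) \<Rightarrow> ('j, 'k::comm_ring_1) dpoly \<Rightarrow> ('j, 'k) dpoly" where
  "filtN V Q p = Abs_poly_mapping (\<lambda>m. if Q (offV V m) then lk p m else 0)"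

lemma lookup_filtN: "lk (filtN V Q p) m = (if Q (offV V m) then lk p m else 0)"
proof -
  have "{m. (if Q (offV V m) then lk p m else 0) \<noteq> 0} \<subseteq> ks p"
  proof
    fix x assume "x \<in> {m. (if Q (offV V m) then lk p m else 0) \<noteq> 0}"
    then have "lk p x \<noteq> 0" by (cases "Q (offV V x)") auto
    then show "x \<in> ks p" by (simp add: in_keys_iff)
  qed
  then have "finite {m. (if Q (offV V m) then lk p m else 0) \<noteq> 0}"
    by (rule finite_subset[OF _ finite_keys])
  then show ?thesis by (simp add: filtN_def)
qed

lemma keys_filtN: "m \<in> ks (filtN V Q p) \<Longrightarrow> m \<in> ks p \<and> Q (offV V m)"
  by (cases "Q (offV V m)") (auto simp: in_keys_iff lookup_filtN)

lemma dvars_filtN: "dvars (filtN V Q p) \<subseteq> dvars p"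
proof
  fix x assume "x \<in> dvars (filtN V Q p)"
  then obtain m where "m \<in> ks (filtN V Q p)" "x \<in> ks m" by (auto simp: dvars_def)
  then show "x \<in> dvars p" using keys_filtN[of m V Q p] by (auto simp: dvars_def)
qed

lemma filtN_split: "filtN V Q p + filtN V (\<lambda>x. \<not> Q x) p = p"
  by (rule poly_mapping_eqI) (simp add: lookup_add lookup_filtN)

lemma kcoef_filtN:
  assumes a: "ks a \<inter> V = {}"
  shows "kcoef V (filtN V Q p) a = (if Q a then kcoef V p a else 0)"
proof (rule poly_mapping_eqI)
  fix m
  show "lk (kcoef V (filtN V Q p) a) m = lk (if Q a then kcoef V p a else 0) m"
  proof (cases "ks m \<subseteq> V")
    case True
    then have "offV V (m + a) = a" by (rule offV_split[OF _ a])
    then show ?thesis using True by (simp add: lookup_kcoef lookup_filtN)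
  qed (simp add: lookup_kcoef)
qed

lemma lookup_times_mon:
  fixes c :: "('j,'k::comm_ring_1) dpoly"
  shows "lk (c * sng a 1) m = (if \<exists>d. m = a + d then lk c (m - a) else 0)"
  by (simp add: lookup_mult_single)

lemma filtN_eq:
  fixes p :: "('j,'k::comm_ring_1) dpoly"
  assumes a: "ks a \<inter> V = {}"
  shows "filtN V (\<lambda>x. x = a) p = kcoef V p a * sng a 1"
proof (rule poly_mapping_eqI)
  fix m
  show "lk (filtN V (\<lambda>x. x = a) p) m = lk (kcoef V p a * sng a 1) m"
  proof (cases "offV V m = a")
    case True
    have "\<forall>v. lk a v \<le> lk m v"
    proof
      fix v
      show "lk a v \<le> lk m v"
      proof (cases "v \<in> V")
        case True
        then have "v \<notin> ks a" using a by blast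
        then show ?thesis by (simp add: in_keys_iff)
      next
        case False
        then have "lk (offV V m) v = lk m v" by (simp add: lookup_offV)
        then show ?thesis using \<open>offV V m = a\<close> by simp
      qed
    qed
    then obtain d where d: "m = a + d" using mon_dvd_iff by blast
    have "ks d \<subseteq> V"
    proof
      fix v assume v: "v \<in> ks d"
      show "v \<in> V"
      proof (rule ccontr)
        assume "v \<notin> V"
        then have "lk (offV V m) v = lk a v + lk d v" using d by (simp add: lookup_offV lookup_add)
        then show False using True v by (simp add: in_keys_iff)
      qed
    qed
    have ex: "\<exists>d'. m = a + d'" using d by blast
    have md: "m - a = d" using d by simp
    have e1: "lk (kcoef V p a * sng a 1) m = lk (kcoef V p a) d"
      unfolding lookup_times_mon using ex md by simp
    have e2: "lk (kcoef V p a) d = lk p m"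
      using \<open>ks d \<subseteq> V\<close> by (simp add: lookup_kcoef d add.commute)
    have e3: "lk (filtN V (\<lambda>x. x = a) p) m = lk p m" using True by (simp add: lookup_filtN)
    show ?thesis using e1 e2 e3 by simp
  next
    case False
    have "lk (kcoef V p a) d = 0" if "m = a + d" for d
    proof -
      have "\<not> ks d \<subseteq> V"
      proof
        assume "ks d \<subseteq> V"
        then have "offV V m = a" using that offV_split[of d V a] a by (simp add: add.commute)
        then show False using False by simp
      qed
      then show ?thesis by (simp add: lookup_kcoef)
    qed
    then show ?thesis using False by (auto simp: lookup_filtN lookup_times_mon)
  qed
qed

lemma kcoef_mon_self:
  assumes c: "c \<in> polys_in V" and a: "ks a \<inter> V = {}"
  shows "kcoef V (c * sng a 1) a = c"
proof -
  have "kcoef V (sng a (1::'b::comm_ring_1)) a = (1::('a,'b) dpoly)"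
  proof (rule poly_mapping_eqI)
    fix m
    show "lk (kcoef V (sng a (1::'b)) a) m = lk (1::('a,'b) dpoly) m"
      by (auto simp: lookup_kcoef lookup_single_nat lookup_single when_def lookup_one)
  qed
  then show ?thesis by (simp add: kcoef_Vmult[OF c a])
qed

lemma poly_kdecomp:
  fixes p :: "('j,'k::comm_ring_1) dpoly"
  shows "p = (\<Sum>g\<in>offV V ` ks p. kcoef V p g * sng g 1)"
proof -
  have "p = (\<Sum>g\<in>offV V ` ks p. filtN V (\<lambda>x. x = g) p)"
  proof (rule poly_mapping_eqI)
    fix m
    have "(\<Sum>g\<in>offV V ` ks p. lk (filtN V (\<lambda>x. x = g) p) m)
        = (\<Sum>g\<in>offV V ` ks p. if g = offV V m then lk p m else 0)"
      by (rule sum.cong) (auto simp: lookup_filtN)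
    also have "\<dots> = lk p m"
      by (subst sum.delta) (auto simp: in_keys_iff)
    finally show "lk p m = lk (\<Sum>g\<in>offV V ` ks p. filtN V (\<lambda>x. x = g) p) m"
      by (simp add: lookup_sum)
  qed
  also have "\<dots> = (\<Sum>g\<in>offV V ` ks p. kcoef V p g * sng g 1)"
    by (rule sum.cong[OF refl]) (auto intro!: filtN_eq simp: keys_offV)
  finally show ?thesis .
qed

lemma ideal_in_alt:
  "p \<in> ideal_in W S \<longleftrightarrow> (\<exists>xs. set (map fst xs) \<subseteq> polys_in W \<and> set (map snd xs) \<subseteq> S \<and>
      p = sum_list (map (\<lambda>(a, s). a * s) xs))"
proof
  assume "p \<in> ideal_in W S"
  then obtain as ss where h: "length as = length ss" "set as \<subseteq> polys_in W" "set ss \<subseteq> S"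
      "p = sum_list (map2 (*) as ss)" by (auto simp: ideal_in_def)
  show "\<exists>xs. set (map fst xs) \<subseteq> polys_in W \<and> set (map snd xs) \<subseteq> S \<and>
      p = sum_list (map (\<lambda>(a, s). a * s) xs)"
    by (rule exI[of _ "zip as ss"]) (use h in auto)
next
  assume "\<exists>xs. set (map fst xs) \<subseteq> polys_in W \<and> set (map snd xs) \<subseteq> S \<and>
      p = sum_list (map (\<lambda>(a, s). a * s) xs)"
  then obtain xs where h: "set (map fst xs) \<subseteq> polys_in W" "set (map snd xs) \<subseteq> S"
      "p = sum_list (map (\<lambda>(a, s). a * s) xs)" by blast
  show "p \<in> ideal_in W S"
    unfolding ideal_in_def
    by (rule CollectI, rule exI[of _ "map fst xs"], rule exI[of _ "map snd xs"]) (use h in \<open>simp add: zip_map_fst_snd\<close>)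
qed

lemma ideal_in_zero: "0 \<in> ideal_in W S"
  unfolding ideal_in_alt by (rule exI[of _ "[]"]) simp

lemma ideal_in_add: "p \<in> ideal_in W S \<Longrightarrow> q \<in> ideal_in W S \<Longrightarrow> p + q \<in> ideal_in W S"
proof -
  assume "p \<in> ideal_in W S" "q \<in> ideal_in W S"
  then obtain xs ys where
    "set (map fst xs) \<subseteq> polys_in W" "set (map snd xs) \<subseteq> S" "p = sum_list (map (\<lambda>(a, s). a * s) xs)"
    "set (map fst ys) \<subseteq> polys_in W" "set (map snd ys) \<subseteq> S" "q = sum_list (map (\<lambda>(a, s). a * s) ys)"
    unfolding ideal_in_alt by blast
  then show ?thesis unfolding ideal_in_alt by (intro exI[of _ "xs @ ys"]) auto
qed

lemma ideal_in_mult: "r \<in> polys_in W \<Longrightarrow> p \<in> ideal_in W S \<Longrightarrow> r * p \<in> ideal_in W S"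
proof -
  assume r: "r \<in> polys_in W" and "p \<in> ideal_in W S"
  then obtain xs where h:
    "set (map fst xs) \<subseteq> polys_in W" "set (map snd xs) \<subseteq> S" "p = sum_list (map (\<lambda>(a, s). a * s) xs)"
    unfolding ideal_in_alt by blast
  let ?ys = "map (\<lambda>(a, s). (r * a, s)) xs"
  have "set (map fst ?ys) \<subseteq> polys_in W" using h(1) r by (auto intro!: polys_in_mult simp: image_subset_iff)
  moreover have "set (map snd ?ys) \<subseteq> S" using h(2) by auto
  moreover have "r * p = sum_list (map (\<lambda>(a, s). a * s) ?ys)"
    unfolding h(3) by (induction xs) (auto simp: algebra_simps)
  ultimately show ?thesis unfolding ideal_in_alt by blast
qed

lemma ideal_in_gen: "a \<in> polys_in W \<Longrightarrow> s \<in> S \<Longrightarrow> a * s \<in> ideal_in W S"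
  unfolding ideal_in_alt by (rule exI[of _ "[(a, s)]"]) simp

lemma ideal_in_uminus: "p \<in> ideal_in W S \<Longrightarrow> - p \<in> ideal_in W S"
  using ideal_in_mult[of "-1" W p S] by (simp add: polys_in_uminus)

lemma ideal_in_diff: "p \<in> ideal_in W S \<Longrightarrow> q \<in> ideal_in W S \<Longrightarrow> p - q \<in> ideal_in W S"
  using ideal_in_add[of p W S "- q"] ideal_in_uminus[of q W S] by simp

lemma ideal_in_sum: "(\<And>x. x \<in> A \<Longrightarrow> f x \<in> ideal_in W S) \<Longrightarrow> sum f A \<in> ideal_in W S"
proof (induction A rule: infinite_finite_induct)
  case (infinite A) then show ?case by (simp add: ideal_in_zero)
next
  case empty then show ?case by (simp add: ideal_in_zero)
next
  case (insert x F) then show ?case by (simp add: ideal_in_add)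
qed

lemma ideal_in_mono: "S \<subseteq> S' \<Longrightarrow> p \<in> ideal_in W S \<Longrightarrow> p \<in> ideal_in W S'"
  unfolding ideal_in_alt by blast

lemma ideal_in_monoW: "W \<subseteq> W' \<Longrightarrow> p \<in> ideal_in W S \<Longrightarrow> p \<in> ideal_in W' S"
  unfolding ideal_in_alt using polys_in_mono by blast

lemma ideal_in_polys: "S \<subseteq> polys_in W \<Longrightarrow> p \<in> ideal_in W S \<Longrightarrow> p \<in> polys_in W"
proof -
  assume S: "S \<subseteq> polys_in W" and "p \<in> ideal_in W S"
  then obtain xs where h:
    "set (map fst xs) \<subseteq> polys_in W" "set (map snd xs) \<subseteq> S" "p = sum_list (map (\<lambda>(a, s). a * s) xs)"
    unfolding ideal_in_alt by blast
  have "sum_list (map (\<lambda>(a, s). a * s) xs) \<in> polys_in W"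
    using h(1,2) S by (induction xs) (auto intro!: polys_in_add polys_in_mult)
  then show ?thesis using h(3) by simp
qed

lemma ideal_in_sub_ideal:
  assumes "0 \<in> I" "\<And>a b. a \<in> I \<Longrightarrow> b \<in> I \<Longrightarrow> a + b \<in> I" "\<And>a r. a \<in> I \<Longrightarrow> r * a \<in> I" "S \<subseteq> I"
  shows "ideal_in W S \<subseteq> I"
proof
  fix p assume "p \<in> ideal_in W S"
  then obtain xs where h:
    "set (map snd xs) \<subseteq> S" "p = sum_list (map (\<lambda>(a, s). a * s) xs)"
    unfolding ideal_in_alt by blast
  have "sum_list (map (\<lambda>(a, s). a * s) xs) \<in> I"
    using h(1) by (induction xs) (auto intro!: assms(2,3) assms(1) dest: subsetD[OF assms(4)])
  then show "p \<in> I" using h(2) by simp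
qed

section \<open>Ideals of k[V] and their extensions\<close>

definition idealV :: "('j \<times> nat) set \<Rightarrow> ('j, 'k::comm_ring_1) dpoly set \<Rightarrow> bool" where
  "idealV V J \<longleftrightarrow> J \<subseteq> polys_in V \<and> 0 \<in> J \<and> (\<forall>a\<in>J. \<forall>b\<in>J. a + b \<in> J) \<and>
     (\<forall>a\<in>J. \<forall>r\<in>polys_in V. r * a \<in> J)"

definition primeV :: "('j \<times> nat) set \<Rightarrow> ('j, 'k::comm_ring_1) dpoly set \<Rightarrow> bool" where
  "primeV V J \<longleftrightarrow> idealV V J \<and> (\<forall>a\<in>polys_in V. \<forall>b\<in>polys_in V. a * b \<in> J \<longrightarrow> a \<in> J \<or> b \<in> J)"

definition JE :: "('j \<times> nat) set \<Rightarrow> ('j, 'k::comm_ring_1) dpoly set \<Rightarrow> ('j, 'k) dpoly \<Rightarrow> bool" where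
  "JE V J p \<longleftrightarrow> (\<forall>g. ks g \<inter> V = {} \<longrightarrow> kcoef V p g \<in> J)"

definition Ksupp :: "('j \<times> nat) set \<Rightarrow> ('j, 'k::comm_ring_1) dpoly set \<Rightarrow> ('j, 'k) dpoly \<Rightarrow> (('j \<times> nat) \<Rightarrow>\<^sub>0 nat) set" where
  "Ksupp V J p = {g. ks g \<inter> V = {} \<and> kcoef V p g \<notin> J}"

lemma idealV_sub: "idealV V J \<Longrightarrow> J \<subseteq> polys_in V" by (simp add: idealV_def)
lemma idealV_0: "idealV V J \<Longrightarrow> 0 \<in> J" by (simp add: idealV_def)
lemma idealV_add: "idealV V J \<Longrightarrow> a \<in> J \<Longrightarrow> b \<in> J \<Longrightarrow> a + b \<in> J" by (simp add: idealV_def)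
lemma idealV_mult: "idealV V J \<Longrightarrow> a \<in> J \<Longrightarrow> r \<in> polys_in V \<Longrightarrow> r * a \<in> J" by (simp add: idealV_def)
lemma idealV_uminus: "idealV V J \<Longrightarrow> a \<in> J \<Longrightarrow> - a \<in> J"
  using idealV_mult[of V J a "-1"] by (simp add: polys_in_uminus)
lemma idealV_diff: "idealV V J \<Longrightarrow> a \<in> J \<Longrightarrow> b \<in> J \<Longrightarrow> a - b \<in> J"
  using idealV_add[of V J a "- b"] idealV_uminus[of V J b] by simp

lemma JE_add: "idealV V J \<Longrightarrow> JE V J p \<Longrightarrow> JE V J q \<Longrightarrow> JE V J (p + q)"
  by (simp add: JE_def kcoef_add idealV_add)
lemma JE_diff: "idealV V J \<Longrightarrow> JE V J p \<Longrightarrow> JE V J q \<Longrightarrow> JE V J (p - q)"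
  by (simp add: JE_def kcoef_diff idealV_diff)
lemma JE_zero: "idealV V J \<Longrightarrow> JE V J 0"
  by (simp add: JE_def idealV_0)

lemma JE_gen: "idealV V J \<Longrightarrow> s \<in> J \<Longrightarrow> JE V J (a * s)"
proof -
  assume I: "idealV V J" and s: "s \<in> J"
  have sV: "s \<in> polys_in V" using I s by (auto simp: idealV_def)
  show ?thesis unfolding JE_def
  proof (intro allI impI)
    fix g :: "_ \<Rightarrow>\<^sub>0 nat" assume g: "ks g \<inter> V = {}"
    have "kcoef V (a * s) g = kcoef V a g * s"
      using kcoef_Vmult[OF sV g, of a] by (simp add: mult.commute)
    moreover have "kcoef V a g * s \<in> J" by (rule idealV_mult[OF I s kcoef_polys_in])
    ultimately show "kcoef V (a * s) g \<in> J" by simp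
  qed
qed

lemma ideal_in_char:
  assumes I: "idealV V J" and VW: "V \<subseteq> W"
  shows "p \<in> ideal_in W J \<longleftrightarrow> p \<in> polys_in W \<and> JE V J p"
proof
  assume p: "p \<in> ideal_in W J"
  have JW: "J \<subseteq> polys_in W" using idealV_sub[OF I] polys_in_mono[OF _ VW] by blast
  have "p \<in> polys_in W" by (rule ideal_in_polys[OF JW p])
  moreover
  obtain xs where h: "set (map snd xs) \<subseteq> J" "p = sum_list (map (\<lambda>(a, s). a * s) xs)"
    using p unfolding ideal_in_alt by blast
  have "JE V J (sum_list (map (\<lambda>(a, s). a * s) xs))"
    using h(1) by (induction xs) (auto intro!: JE_add JE_gen JE_zero I)
  ultimately show "p \<in> polys_in W \<and> JE V J p" using h(2) by simp
next
  assume h: "p \<in> polys_in W \<and> JE V J p"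
  have dec: "p = (\<Sum>g\<in>offV V ` ks p. kcoef V p g * sng g 1)" by (rule poly_kdecomp)
  have "kcoef V p g * sng g 1 \<in> ideal_in W J" if gin: "g \<in> offV V ` ks p" for g
  proof -
    obtain m where m: "m \<in> ks p" "g = offV V m" using gin by blast
    have gV: "ks g \<inter> V = {}" using m by (auto simp: keys_offV)
    have "ks g \<subseteq> W" using m h by (auto simp: keys_offV polys_in_def dvars_def)
    then have "sng g 1 \<in> polys_in W" using dvars_single[of g 1] by (auto simp: polys_in_def)
    moreover have "kcoef V p g \<in> J" using h gV by (simp add: JE_def)
    ultimately show ?thesis using ideal_in_gen[of "sng g 1" W "kcoef V p g" J] by (simp add: mult.commute)
  qed
  then have "(\<Sum>g\<in>offV V ` ks p. kcoef V p g * sng g 1) \<in> ideal_in W J"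
    by (rule ideal_in_sum)
  then show "p \<in> ideal_in W J" using dec by simp
qed

lemma Ksupp_sub: "idealV V J \<Longrightarrow> Ksupp V J p \<subseteq> offV V ` ks p"
proof
  fix g assume I: "idealV V J" and g: "g \<in> Ksupp V J p"
  then have gV: "ks g \<inter> V = {}" and "kcoef V p g \<noteq> 0"
    using idealV_0[OF I] by (auto simp: Ksupp_def)
  then obtain m where "m \<in> ks (kcoef V p g)" by (auto simp: poly_mapping_eq_iff fun_eq_iff in_keys_iff)
  then have "ks m \<subseteq> V" "m + g \<in> ks p" using keys_kcoef by blast+
  moreover have "offV V (m + g) = g" by (rule offV_split[OF \<open>ks m \<subseteq> V\<close> gV])
  ultimately show "g \<in> offV V ` ks p" by (metis image_eqI)
qed

lemma Ksupp_finite: "idealV V J \<Longrightarrow> finite (Ksupp V J p)"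
  using finite_subset[OF Ksupp_sub finite_imageI[OF finite_keys]] by blast

lemma JE_iff_Ksupp: "JE V J p \<longleftrightarrow> Ksupp V J p = {}"
  by (auto simp: JE_def Ksupp_def)

lemma Ksupp_cong:
  assumes I: "idealV V J" and d: "JE V J (p - q)"
  shows "Ksupp V J p = Ksupp V J q"
proof -
  have "kcoef V p g \<in> J \<longleftrightarrow> kcoef V q g \<in> J" if "ks g \<inter> V = {}" for g
  proof -
    have dd: "kcoef V p g - kcoef V q g \<in> J" using d that by (simp add: JE_def kcoef_diff)
    show ?thesis
    proof
      assume "kcoef V p g \<in> J"
      then have "kcoef V p g - (kcoef V p g - kcoef V q g) \<in> J" by (rule idealV_diff[OF I _ dd])
      then show "kcoef V q g \<in> J" by simp
    next
      assume "kcoef V q g \<in> J"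
      then have "(kcoef V p g - kcoef V q g) + kcoef V q g \<in> J" by (rule idealV_add[OF I dd])
      then show "kcoef V p g \<in> J" by simp
    qed
  qed
  then show ?thesis by (auto simp: Ksupp_def)
qed

lemma Ksupp_Vmult:
  assumes P: "primeV V J" and c: "c \<in> polys_in V" "c \<notin> J"
  shows "Ksupp V J (c * p) = Ksupp V J p"
proof -
  have I: "idealV V J" using P by (simp add: primeV_def)
  have "kcoef V (c * p) g \<in> J \<longleftrightarrow> kcoef V p g \<in> J" if g: "ks g \<inter> V = {}" for g
  proof -
    have e: "kcoef V (c * p) g = c * kcoef V p g" by (rule kcoef_Vmult[OF c(1) g])
    show ?thesis
    proof
      assume "kcoef V (c * p) g \<in> J"
      then have "c * kcoef V p g \<in> J" using e by simp
      then show "kcoef V p g \<in> J" using P c(1) kcoef_polys_in[of V p g] c(2) unfolding primeV_def by blast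
    next
      assume "kcoef V p g \<in> J"
      then show "kcoef V (c * p) g \<in> J" using e idealV_mult[OF I _ c(1)] by simp
    qed
  qed
  then show ?thesis by (auto simp: Ksupp_def)
qed

section \<open>A monomial order and the domain property\<close>

definition menc :: "('a::countable \<Rightarrow>\<^sub>0 nat) \<Rightarrow> (nat \<Rightarrow>\<^sub>0 nat)" where
  "menc a = Abs_poly_mapping (\<lambda>n. if n \<in> range (to_nat :: 'a \<Rightarrow> nat) then lk a (from_nat n) else 0)"

lemma lookup_menc:
  fixes a :: "'a::countable \<Rightarrow>\<^sub>0 nat"
  shows "lk (menc a) n = (if n \<in> range (to_nat :: 'a \<Rightarrow> nat) then lk a (from_nat n) else 0)"
proof -
  have "{n. (if n \<in> range (to_nat :: 'a \<Rightarrow> nat) then lk a (from_nat n) else 0) \<noteq> 0} \<subseteq> to_nat ` ks a"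
  proof
    fix n assume "n \<in> {n. (if n \<in> range (to_nat :: 'a \<Rightarrow> nat) then lk a (from_nat n) else 0) \<noteq> 0}"
    then have "n \<in> range (to_nat :: 'a \<Rightarrow> nat)" "lk a (from_nat n) \<noteq> 0" by (auto split: if_split_asm)
    then show "n \<in> to_nat ` ks a" by (auto simp: in_keys_iff)
  qed
  then have "finite {n. (if n \<in> range (to_nat :: 'a \<Rightarrow> nat) then lk a (from_nat n) else 0) \<noteq> 0}"
    by (rule finite_subset) simp
  then show ?thesis by (simp add: menc_def)
qed

lemma menc_add: "menc (a + b) = menc a + menc b"
  by (rule poly_mapping_eqI) (simp add: lookup_menc lookup_add)

lemma menc_inj:
  fixes a b :: "'a::countable \<Rightarrow>\<^sub>0 nat"
  assumes "menc a = menc b" shows "a = b"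
proof (rule poly_mapping_eqI)
  fix v :: 'a
  from assms have "lk (menc a) (to_nat v) = lk (menc b) (to_nat v)" by simp
  then show "lk a v = lk b v" by (simp add: lookup_menc)
qed

definition mkey :: "(('a::countable \<Rightarrow>\<^sub>0 nat) \<Rightarrow> nat) \<Rightarrow> ('a \<Rightarrow>\<^sub>0 nat) \<Rightarrow> nat \<times> (nat \<Rightarrow>\<^sub>0 nat)" where
  "mkey w a = (w a, menc a)"

definition additive :: "(('a \<Rightarrow>\<^sub>0 nat) \<Rightarrow> nat) \<Rightarrow> bool" where
  "additive w \<longleftrightarrow> (\<forall>a b. w (a + b) = w a + w b)"

lemma mkey_inj: "mkey w a = mkey w b \<Longrightarrow> a = b"
  by (auto simp: mkey_def intro: menc_inj)

lemma mkey_less_add: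
  assumes "additive w" "mkey w a < mkey w b"
  shows "mkey w (a + c) < mkey w (b + c)"
proof -
  have "w a < w b \<or> (w a = w b \<and> menc a < menc b)" using assms(2) by (auto simp: mkey_def less_prod_def)
  then show ?thesis using assms(1)
    by (auto simp: mkey_def less_prod_def additive_def menc_add intro: add_strict_right_mono)
qed

lemma mkey_less_add2:
  assumes "additive w" "mkey w a < mkey w b"
  shows "mkey w (c + a) < mkey w (c + b)"
  using mkey_less_add[OF assms, of c] by (simp add: add.commute)

lemma mkey_le_lt_add:
  assumes w: "additive w" and "mkey w a \<le> mkey w a0" "mkey w b < mkey w b0"
  shows "mkey w (a + b) < mkey w (a0 + b0)"
proof (cases "a = a0")
  case True then show ?thesis using mkey_less_add2[OF w assms(3)] by simp
next
  case False
  then have "mkey w a < mkey w a0" using assms(2) mkey_inj[of w a a0] by (metis order_le_less)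
  then have "mkey w (a + b) < mkey w (a0 + b)" by (rule mkey_less_add[OF w])
  also have "mkey w (a0 + b) < mkey w (a0 + b0)" by (rule mkey_less_add2[OF w assms(3)])
  finally show ?thesis .
qed

lemma mkey_lt_le_add:
  assumes w: "additive w" and "mkey w a < mkey w a0" "mkey w b \<le> mkey w b0"
  shows "mkey w (a + b) < mkey w (a0 + b0)"
  using mkey_le_lt_add[OF w assms(3,2)] by (simp add: add.commute)

lemma keys_mult_key:
  fixes A B :: "('j::countable, 'k::comm_ring_1) dpoly"
  assumes w: "additive w"
    and A: "\<forall>m\<in>ks A. mkey w (offV V m) \<le> mkey w a0"
    and B: "\<forall>m\<in>ks B. mkey w (offV V m) \<le> mkey w b0"
    and strict: "(\<forall>m\<in>ks A. mkey w (offV V m) < mkey w a0) \<or> (\<forall>m\<in>ks B. mkey w (offV V m) < mkey w b0)"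
  shows "\<forall>m\<in>ks (A * B). mkey w (offV V m) < mkey w (a0 + b0)"
proof
  fix m assume "m \<in> ks (A * B)"
  then obtain a b where ab: "a \<in> ks A" "b \<in> ks B" "m = a + b" using keys_mult[of A B] by blast
  have om: "offV V m = offV V a + offV V b" using ab(3) by (simp add: offV_add)
  from strict show "mkey w (offV V m) < mkey w (a0 + b0)"
  proof
    assume "\<forall>m\<in>ks A. mkey w (offV V m) < mkey w a0"
    then show ?thesis using mkey_lt_le_add[OF w _ B[rule_format, OF ab(2)]] ab(1) om by simp
  next
    assume "\<forall>m\<in>ks B. mkey w (offV V m) < mkey w b0"
    then show ?thesis using mkey_le_lt_add[OF w A[rule_format, OF ab(1)]] ab(2) om by simp
  qed
qed

lemma keys_add_key:
  fixes A B :: "('j, 'k::comm_ring_1) dpoly"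
  assumes "\<forall>m\<in>ks A. P m" "\<forall>m\<in>ks B. P m"
  shows "\<forall>m\<in>ks (A + B). P m"
  using assms keys_add[of A B] by blast

lemma JE_mult:
  assumes I: "idealV V J" and p: "JE V J p"
  shows "JE V J (q * p)"
proof -
  have "p \<in> ideal_in UNIV J" using ideal_in_char[OF I, of UNIV] p by (simp add: polys_in_def)
  then have "q * p \<in> ideal_in UNIV J" by (rule ideal_in_mult[rotated]) (simp add: polys_in_def)
  then show ?thesis using ideal_in_char[OF I, of UNIV] by simp
qed

lemma obtain_top:
  fixes S :: "('a::countable \<Rightarrow>\<^sub>0 nat) set"
  assumes "finite S" "S \<noteq> {}"
  obtains a where "a \<in> S" "\<forall>b\<in>S. mkey w b \<le> mkey w a"
proof -
  have "Max (mkey w ` S) \<in> mkey w ` S" using assms by simp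
  then obtain a where a: "a \<in> S" "mkey w a = Max (mkey w ` S)" by auto
  have "\<forall>b\<in>S. mkey w b \<le> mkey w a" using a(2) assms(1) by simp
  then show ?thesis using that a(1) by blast
qed

lemma domain_top:
  fixes g h :: "('j::countable, 'k::comm_ring_1) dpoly"
  assumes P: "primeV V J" and w: "additive w"
    and g: "Ksupp V J g \<noteq> {}" and h: "Ksupp V J h \<noteq> {}"
  shows "\<exists>a0 b0. a0 \<in> Ksupp V J g \<and> b0 \<in> Ksupp V J h \<and>
     (\<forall>a\<in>Ksupp V J g. w a \<le> w a0) \<and> (\<forall>b\<in>Ksupp V J h. w b \<le> w b0) \<and>
     a0 + b0 \<in> Ksupp V J (g * h)"
proof -
  have I: "idealV V J" using P by (simp add: primeV_def)
  obtain a0 where a0: "a0 \<in> Ksupp V J g" "\<forall>b\<in>Ksupp V J g. mkey w b \<le> mkey w a0"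
    using obtain_top[OF Ksupp_finite[OF I] g] by blast
  obtain b0 where b0: "b0 \<in> Ksupp V J h" "\<forall>b\<in>Ksupp V J h. mkey w b \<le> mkey w b0"
    using obtain_top[OF Ksupp_finite[OF I] h] by blast
  have wa: "\<forall>a\<in>Ksupp V J g. w a \<le> w a0" using a0(2) by (auto simp: mkey_def less_eq_prod_def)
  have wb: "\<forall>b\<in>Ksupp V J h. w b \<le> w b0" using b0(2) by (auto simp: mkey_def less_eq_prod_def)
  have a0V: "ks a0 \<inter> V = {}" and ca: "kcoef V g a0 \<notin> J" using a0(1) by (auto simp: Ksupp_def)
  have b0V: "ks b0 \<inter> V = {}" and cb: "kcoef V h b0 \<notin> J" using b0(1) by (auto simp: Ksupp_def)
  have abV: "ks (a0 + b0) \<inter> V = {}" using a0V b0V keys_add_nat[of a0 b0] by auto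
  define Gt where "Gt = filtN V (\<lambda>x. x = a0) g"
  define Ghi where "Ghi = filtN V (\<lambda>x. mkey w a0 < mkey w x) g"
  define Glo where "Glo = filtN V (\<lambda>x. mkey w x < mkey w a0) g"
  define Ht where "Ht = filtN V (\<lambda>x. x = b0) h"
  define Hhi where "Hhi = filtN V (\<lambda>x. mkey w b0 < mkey w x) h"
  define Hlo where "Hlo = filtN V (\<lambda>x. mkey w x < mkey w b0) h"
  have gsplit: "g = Gt + Ghi + Glo"
  proof (rule poly_mapping_eqI)
    fix m
    have "offV V m = a0 \<or> mkey w a0 < mkey w (offV V m) \<or> mkey w (offV V m) < mkey w a0"
      using mkey_inj[of w "offV V m" a0] by (metis linorder_neqE)
    moreover have "\<not> (offV V m = a0 \<and> mkey w a0 < mkey w (offV V m))" by auto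
    moreover have "\<not> (offV V m = a0 \<and> mkey w (offV V m) < mkey w a0)" by auto
    moreover have "\<not> (mkey w a0 < mkey w (offV V m) \<and> mkey w (offV V m) < mkey w a0)" by auto
    ultimately show "lk g m = lk (Gt + Ghi + Glo) m"
      unfolding Gt_def Ghi_def Glo_def lookup_add lookup_filtN by auto
  qed
  have hsplit: "h = Ht + Hhi + Hlo"
  proof (rule poly_mapping_eqI)
    fix m
    have "offV V m = b0 \<or> mkey w b0 < mkey w (offV V m) \<or> mkey w (offV V m) < mkey w b0"
      using mkey_inj[of w "offV V m" b0] by (metis linorder_neqE)
    moreover have "\<not> (offV V m = b0 \<and> mkey w b0 < mkey w (offV V m))" by auto
    moreover have "\<not> (offV V m = b0 \<and> mkey w (offV V m) < mkey w b0)" by auto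
    moreover have "\<not> (mkey w b0 < mkey w (offV V m) \<and> mkey w (offV V m) < mkey w b0)" by auto
    ultimately show "lk h m = lk (Ht + Hhi + Hlo) m"
      unfolding Ht_def Hhi_def Hlo_def lookup_add lookup_filtN by auto
  qed
  have JGhi: "JE V J Ghi"
    unfolding JE_def
  proof (intro allI impI)
    fix c :: "_ \<Rightarrow>\<^sub>0 nat" assume c: "ks c \<inter> V = {}"
    show "kcoef V Ghi c \<in> J"
    proof (cases "mkey w a0 < mkey w c")
      case True
      then have "c \<notin> Ksupp V J g" using a0(2) by (auto simp: not_le)
      then have "kcoef V g c \<in> J" using c by (auto simp: Ksupp_def)
      then show ?thesis using True c by (simp add: Ghi_def kcoef_filtN)
    next
      case False then show ?thesis using c idealV_0[OF I] by (simp add: Ghi_def kcoef_filtN)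
    qed
  qed
  have JHhi: "JE V J Hhi"
    unfolding JE_def
  proof (intro allI impI)
    fix c :: "_ \<Rightarrow>\<^sub>0 nat" assume c: "ks c \<inter> V = {}"
    show "kcoef V Hhi c \<in> J"
    proof (cases "mkey w b0 < mkey w c")
      case True
      then have "c \<notin> Ksupp V J h" using b0(2) by (auto simp: not_le)
      then have "kcoef V h c \<in> J" using c by (auto simp: Ksupp_def)
      then show ?thesis using True c by (simp add: Hhi_def kcoef_filtN)
    next
      case False then show ?thesis using c idealV_0[OF I] by (simp add: Hhi_def kcoef_filtN)
    qed
  qed
  define X where "X = g * Hhi + Ghi * (Ht + Hlo)"
  define Y where "Y = Gt * Hlo + Glo * Ht + Glo * Hlo"
  have prod: "g * h = Gt * Ht + X + Y"
  proof -
    have "g * h = g * Hhi + g * (Ht + Hlo)" by (subst (1) hsplit) (simp add: algebra_simps)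
    also have "g * (Ht + Hlo) = Ghi * (Ht + Hlo) + Gt * Ht + Gt * Hlo + Glo * Ht + Glo * Hlo"
      by (subst (1) gsplit) (simp add: algebra_simps)
    finally show ?thesis by (simp add: X_def Y_def algebra_simps)
  qed
  have JX1: "JE V J (g * Hhi)" by (rule JE_mult[OF I JHhi])
  have "JE V J ((Ht + Hlo) * Ghi)" by (rule JE_mult[OF I JGhi])
  then have JX2: "JE V J (Ghi * (Ht + Hlo))" by (simp add: mult.commute)
  have JX: "JE V J X"
    unfolding X_def by (rule JE_add[OF I JX1 JX2])
  have kGt: "\<forall>m\<in>ks Gt. mkey w (offV V m) \<le> mkey w a0"
    unfolding Gt_def by (auto dest: keys_filtN)
  have kHt: "\<forall>m\<in>ks Ht. mkey w (offV V m) \<le> mkey w b0"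
    unfolding Ht_def by (auto dest: keys_filtN)
  have kGlo: "\<forall>m\<in>ks Glo. mkey w (offV V m) < mkey w a0"
    unfolding Glo_def by (auto dest: keys_filtN)
  have kHlo: "\<forall>m\<in>ks Hlo. mkey w (offV V m) < mkey w b0"
    unfolding Hlo_def by (auto dest: keys_filtN)
  have kGlo': "\<forall>m\<in>ks Glo. mkey w (offV V m) \<le> mkey w a0" using kGlo by (auto simp: less_imp_le)
  have kHlo': "\<forall>m\<in>ks Hlo. mkey w (offV V m) \<le> mkey w b0" using kHlo by (auto simp: less_imp_le)
  have kY: "\<forall>m\<in>ks Y. mkey w (offV V m) < mkey w (a0 + b0)"
    unfolding Y_def
    by (intro keys_add_key keys_mult_key[OF w] kGt kHt kGlo kHlo kGlo' kHlo' disjI1 disjI2)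
  have Y0: "kcoef V Y (a0 + b0) = 0"
    by (rule kcoef_zero_if[OF _ abV]) (use kY in force)
  have Gt_eq: "Gt = kcoef V g a0 * sng a0 1" unfolding Gt_def by (rule filtN_eq[OF a0V])
  have Ht_eq: "Ht = kcoef V h b0 * sng b0 1" unfolding Ht_def by (rule filtN_eq[OF b0V])
  have cgV: "kcoef V g a0 * kcoef V h b0 \<in> polys_in V" by (intro polys_in_mult kcoef_polys_in)
  have ss: "sng a0 (1::'k) * sng b0 1 = sng (a0 + b0) 1" by (simp add: mult_single)
  have "Gt * Ht = (kcoef V g a0 * kcoef V h b0) * (sng a0 1 * sng b0 1)"
    unfolding Gt_eq Ht_eq by (simp add: ac_simps)
  then have "Gt * Ht = (kcoef V g a0 * kcoef V h b0) * sng (a0 + b0) 1"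
    by (simp only: ss)
  then have kGH: "kcoef V (Gt * Ht) (a0 + b0) = kcoef V g a0 * kcoef V h b0"
    using kcoef_mon_self[OF cgV abV] by simp
  have notJ: "kcoef V g a0 * kcoef V h b0 \<notin> J"
    using P ca cb kcoef_polys_in unfolding primeV_def by blast
  have kX: "kcoef V X (a0 + b0) \<in> J" using JX abV by (simp add: JE_def)
  have "kcoef V (g * h) (a0 + b0) = kcoef V g a0 * kcoef V h b0 + kcoef V X (a0 + b0)"
    using prod kGH Y0 by (simp add: kcoef_add)
  then have "kcoef V (g * h) (a0 + b0) \<notin> J"
    using notJ kX idealV_diff[OF I, of "kcoef V (g * h) (a0 + b0)" "kcoef V X (a0 + b0)"] by auto
  then have "a0 + b0 \<in> Ksupp V J (g * h)" using abV by (simp add: Ksupp_def)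
  then show ?thesis using a0(1) b0(1) wa wb by blast
qed

section \<open>Rankings, leaders, autoreduced sets\<close>

locale rnk =
  fixes le :: "'j::finite \<times> nat \<Rightarrow> 'j \<times> nat \<Rightarrow> bool"
  assumes rnk: "ranking le"
begin

lemma refl: "le u u" using rnk by (simp add: ranking_def)
lemma trans: "le u v \<Longrightarrow> le v w \<Longrightarrow> le u w" using rnk unfolding ranking_def by blast
lemma antisym: "le u v \<Longrightarrow> le v u \<Longrightarrow> u = v" using rnk unfolding ranking_def by blast
lemma total: "le u v \<or> le v u" using rnk unfolding ranking_def by blast
lemma deriv_ge: "le (j, r) (j, r + s)" using rnk unfolding ranking_def by blast

lemma same_var_le: "le (j, r) (j, r') \<longleftrightarrow> r \<le> r'"
proof
  assume h: "le (j, r) (j, r')"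
  show "r \<le> r'"
  proof (rule ccontr)
    assume "\<not> r \<le> r'"
    then have "le (j, r') (j, r)" using deriv_ge[of j r' "r - r'"] by simp
    then have "r = r'" using antisym[OF h] by simp
    then show False using \<open>\<not> r \<le> r'\<close> by simp
  qed
next
  assume "r \<le> r'"
  then show "le (j, r) (j, r')" using deriv_ge[of j r "r' - r"] by simp
qed

lemma proper_deriv_gt: "s > 0 \<Longrightarrow> le (fst u, snd u + s) u \<Longrightarrow> False"
  using same_var_le[of "fst u" "snd u + s" "snd u"] by (cases u) simp

lemma exists_max:
  assumes "finite M" "M \<noteq> {}"
  shows "\<exists>m\<in>M. \<forall>x\<in>M. le x m"
  using assms
proof (induction M rule: finite_ne_induct)
  case (singleton x) then show ?case using refl by simp
next
  case (insert x F)
  then obtain m where m: "m \<in> F" "\<forall>y\<in>F. le y m" by blast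
  show ?case
  proof (cases "le x m")
    case True then show ?thesis using m by auto
  next
    case False
    then have "le m x" using total by blast
    then show ?thesis using m trans refl by blast
  qed
qed

lemma exists_min:
  assumes "finite M" "M \<noteq> {}"
  shows "\<exists>m\<in>M. \<forall>x\<in>M. le m x"
  using assms
proof (induction M rule: finite_ne_induct)
  case (singleton x) then show ?case using refl by simp
next
  case (insert x F)
  then obtain m where m: "m \<in> F" "\<forall>y\<in>F. le m y" by blast
  show ?case
  proof (cases "le m x")
    case True then show ?thesis using m by auto
  next
    case False
    then have "le x m" using total by blast
    then show ?thesis using m trans refl by blast
  qed
qed

lemma finite_dvars: "finite (dvars p)"
  by (simp add: dvars_def)

lemma leader_unique:
  assumes "u \<in> dvars f" "\<forall>v\<in>dvars f. le v u"
  shows "leader le f = u"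
  unfolding leader_def
proof (rule the_equality)
  show "u \<in> dvars f \<and> (\<forall>v\<in>dvars f. le v u)" using assms by blast
next
  fix x assume "x \<in> dvars f \<and> (\<forall>v\<in>dvars f. le v x)"
  then show "x = u" using assms antisym by blast
qed

lemma leader_prop:
  assumes "nonconst f"
  shows "leader le f \<in> dvars f" "\<forall>v\<in>dvars f. le v (leader le f)"
proof -
  have ne: "dvars f \<noteq> {}" using assms by (simp add: nonconst_def)
  obtain m where "m \<in> dvars f" "\<forall>x\<in>dvars f. le x m"
    using exists_max[OF finite_dvars[of f] ne] by blast
  then have "leader le f = m" using leader_unique by blast
  then show "leader le f \<in> dvars f" "\<forall>v\<in>dvars f. le v (leader le f)"
    using \<open>m \<in> dvars f\<close> \<open>\<forall>x\<in>dvars f. le x m\<close> by auto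
qed

lemma leader_in: "nonconst f \<Longrightarrow> leader le f \<in> dvars f" using leader_prop by blast
lemma leader_max: "nonconst f \<Longrightarrow> v \<in> dvars f \<Longrightarrow> le v (leader le f)" using leader_prop by blast

lemma leader_deg_pos: "nonconst f \<Longrightarrow> degv (leader le f) f > 0"
  using leader_in degv_pos_iff by blast

lemma no_proper_deriv_self:
  assumes "nonconst f" "s > 0"
  shows "(fst (leader le f), snd (leader le f) + s) \<notin> dvars f"
  using leader_max[OF assms(1)] proper_deriv_gt[OF assms(2)] by blast

definition rk where "rk f = (leader le f, degv (leader le f) f)"

lemma rk_eq_iff: "rk f = rk g \<longleftrightarrow> leader le f = leader le g \<and> degv (leader le f) f = degv (leader le g) g"
  by (simp add: rk_def)

definition rkless where
  "rkless x y \<longleftrightarrow> (le (fst x) (fst y) \<and> fst x \<noteq> fst y) \<or> (fst x = fst y \<and> snd x < snd y)"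

lemma prl_rk: "poly_rank_less le f g = rkless (rk f) (rk g)"
  by (simp add: poly_rank_less_def rkless_def rk_def)

lemma poly_rank_less_rk:
  assumes a: "rk f = rk f'" and b: "rk g = rk g'"
  shows "poly_rank_less le f g = poly_rank_less le f' g'"
  unfolding prl_rk a b by simp
lemma poly_rank_eq_rk: "poly_rank_eq le f g \<longleftrightarrow> rk f = rk g"
  by (auto simp: poly_rank_eq_def rk_def)
definition redQ where
  "redQ f x \<longleftrightarrow> (\<forall>s>0. (fst (fst x), snd (fst x) + s) \<notin> dvars f) \<and> degv (fst x) f < snd x"

lemma reduced_rk': "reduced le f g = redQ f (rk g)"
  by (simp add: reduced_def redQ_def rk_def)

lemma reduced_rk:
  assumes a: "rk g = rk g'"
  shows "reduced le f g = reduced le f g'"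
  unfolding reduced_rk' a by simp

lemma prl_trans: "poly_rank_less le f g \<Longrightarrow> poly_rank_less le g h \<Longrightarrow> poly_rank_less le f h"
proof -
  assume a: "poly_rank_less le f g" and b: "poly_rank_less le g h"
  show ?thesis
  proof (cases "leader le f = leader le g")
    case True
    show ?thesis
    proof (cases "leader le g = leader le h")
      case True2: True
      then show ?thesis using a b True by (auto simp: poly_rank_less_def)
    next
      case False
      then show ?thesis using a b True by (auto simp: poly_rank_less_def)
    qed
  next
    case False
    then have f1: "le (leader le f) (leader le g)" using a by (auto simp: poly_rank_less_def)
    show ?thesis
    proof (cases "leader le g = leader le h")
      case True
      then show ?thesis using f1 False by (auto simp: poly_rank_less_def)
    next
      case False2: False
      then have g1: "le (leader le g) (leader le h)" using b by (auto simp: poly_rank_less_def)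
      have "le (leader le f) (leader le h)" using trans[OF f1 g1] .
      moreover have "leader le f \<noteq> leader le h"
      proof
        assume "leader le f = leader le h"
        then have "leader le f = leader le g" using f1 g1 antisym by auto
        then show False using False by simp
      qed
      ultimately show ?thesis by (simp add: poly_rank_less_def)
    qed
  qed
qed

lemma prl_total: "poly_rank_less le f g \<or> rk f = rk g \<or> poly_rank_less le g f"
proof (cases "leader le f = leader le g")
  case True
  then show ?thesis unfolding poly_rank_less_def rk_def by (cases "degv (leader le f) f" "degv (leader le g) g" rule: linorder_cases) auto
next
  case False
  then show ?thesis unfolding poly_rank_less_def rk_def using total[of "leader le f" "leader le g"] by auto
qed

lemma prl_irrefl: "\<not> poly_rank_less le f f"
  by (simp add: poly_rank_less_def)

lemma prl_asym: "poly_rank_less le f g \<Longrightarrow> \<not> poly_rank_less le g f"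
proof
  assume a: "poly_rank_less le f g" and b: "poly_rank_less le g f"
  show False
  proof (cases "leader le f = leader le g")
    case True then show False using a b by (simp add: poly_rank_less_def)
  next
    case False
    then have "le (leader le f) (leader le g)" "le (leader le g) (leader le f)"
      using a b by (simp_all add: poly_rank_less_def)
    then show False using antisym False by blast
  qed
qed

context
  fixes C :: "('j, 'k::comm_ring_1) dpoly list"
  assumes ar: "autoreduced le C"
begin

lemma ar_nonconst: "i < length C \<Longrightarrow> nonconst (C ! i)"
  using ar by (simp add: autoreduced_def)

lemma ar_reduced: "i < length C \<Longrightarrow> j < length C \<Longrightarrow> i \<noteq> j \<Longrightarrow> reduced le (C ! i) (C ! j)"
  using ar by (simp add: autoreduced_def)

lemma ar_less: "i < j \<Longrightarrow> j < length C \<Longrightarrow> poly_rank_less le (C ! i) (C ! j)"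
  using ar by (simp add: autoreduced_def)

lemma ar_leader_less:
  assumes "i < j" "j < length C"
  shows "le (leader le (C ! i)) (leader le (C ! j)) \<and> leader le (C ! i) \<noteq> leader le (C ! j)"
proof -
  have pl: "poly_rank_less le (C ! i) (C ! j)" by (rule ar_less[OF assms])
  have "\<not> (leader le (C ! i) = leader le (C ! j))"
  proof
    assume eq: "leader le (C ! i) = leader le (C ! j)"
    then have "degv (leader le (C ! i)) (C ! i) < degv (leader le (C ! j)) (C ! j)"
      using pl by (auto simp: poly_rank_less_def)
    moreover have "reduced le (C ! j) (C ! i)" using ar_reduced assms by simp
    then have "degv (leader le (C ! i)) (C ! j) < degv (leader le (C ! i)) (C ! i)"
      by (simp add: reduced_def)
    ultimately show False using eq by simp
  qed
  then show ?thesis using pl by (auto simp: poly_rank_less_def)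
qed

lemma ar_var_below:
  assumes "i < length C" "v \<in> dvars (C ! i)"
  shows "le v (leader le (C ! i))"
  using leader_max[OF ar_nonconst[OF assms(1)] assms(2)] .

lemma ar_var_lt:
  assumes "i < j" "j < length C" "v \<in> dvars (C ! i)"
  shows "le v (leader le (C ! j)) \<and> v \<noteq> leader le (C ! j)"
proof -
  have a: "le v (leader le (C ! i))" using ar_var_below assms by simp
  have b: "le (leader le (C ! i)) (leader le (C ! j))" "leader le (C ! i) \<noteq> leader le (C ! j)"
    using ar_leader_less[OF assms(1,2)] by auto
  have "le v (leader le (C ! j))" using trans[OF a b(1)] .
  moreover have "v \<noteq> leader le (C ! j)"
  proof
    assume "v = leader le (C ! j)"
    then have "le (leader le (C ! j)) (leader le (C ! i))" using a by simp
    then show False using b antisym by blast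
  qed
  ultimately show ?thesis by blast
qed

lemma ar_no_proper_deriv:
  assumes "i < length C" "j < length C" "s > 0"
  shows "(fst (leader le (C ! j)), snd (leader le (C ! j)) + s) \<notin> dvars (C ! i)"
proof (cases "i = j")
  case True then show ?thesis using no_proper_deriv_self[OF ar_nonconst[OF assms(2)] assms(3)] by simp
next
  case False
  then have "reduced le (C ! i) (C ! j)" using ar_reduced assms by simp
  then show ?thesis using assms(3) by (simp add: reduced_def)
qed

lemma ar_leader_not_below:
  assumes "i < j" "j < length C" "s \<ge> 0"
  shows "(fst (leader le (C ! j)), snd (leader le (C ! j)) + s) \<notin> dvars (C ! i)"
proof
  assume h: "(fst (leader le (C ! j)), snd (leader le (C ! j)) + s) \<in> dvars (C ! i)"
  have "le (leader le (C ! j)) (fst (leader le (C ! j)), snd (leader le (C ! j)) + s)"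
    using deriv_ge[of "fst (leader le (C ! j))" "snd (leader le (C ! j))" s] by simp
  moreover have "le (fst (leader le (C ! j)), snd (leader le (C ! j)) + s) (leader le (C ! j))
     \<and> (fst (leader le (C ! j)), snd (leader le (C ! j)) + s) \<noteq> leader le (C ! j)"
    using ar_var_lt[OF assms(1,2) h] by blast
  ultimately show False using antisym by blast
qed

lemma ar_length: "length C \<le> card (UNIV :: 'j set)"
proof -
  have "inj_on (\<lambda>i. fst (leader le (C ! i))) {0..<length C}"
  proof (rule inj_onI)
    fix i j assume ij: "i \<in> {0..<length C}" "j \<in> {0..<length C}"
      and eq: "fst (leader le (C ! i)) = fst (leader le (C ! j))"
    show "i = j"
    proof (rule ccontr)
      assume "i \<noteq> j"
      then consider "i < j" | "j < i" by linarith
      then show False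
      proof cases
        case 1
        obtain t r where ui: "leader le (C ! i) = (t, r)" by fastforce
        obtain r' where uj: "leader le (C ! j) = (t, r')" using eq ui by (cases "leader le (C ! j)") auto
        have "le (t, r) (t, r') \<and> (t, r) \<noteq> (t, r')" using ar_leader_less[OF 1] ij ui uj by auto
        then have "r < r'" using same_var_le by auto
        have "leader le (C ! j) \<in> dvars (C ! j)" using leader_in[OF ar_nonconst] ij by simp
        moreover have "r + (r' - r) = r'" using \<open>r < r'\<close> by simp
        ultimately have "(t, r + (r' - r)) \<in> dvars (C ! j)" using uj by simp
        then show False using ar_no_proper_deriv[of j i "r' - r"] ij ui \<open>r < r'\<close> by auto
      next
        case 2
        obtain t r where ui: "leader le (C ! j) = (t, r)" by fastforce
        obtain r' where uj: "leader le (C ! i) = (t, r')" using eq ui by (cases "leader le (C ! i)") auto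
        have "le (t, r) (t, r') \<and> (t, r) \<noteq> (t, r')" using ar_leader_less[OF 2] ij ui uj by auto
        then have "r < r'" using same_var_le by auto
        have "leader le (C ! i) \<in> dvars (C ! i)" using leader_in[OF ar_nonconst] ij by simp
        moreover have "r + (r' - r) = r'" using \<open>r < r'\<close> by simp
        ultimately have "(t, r + (r' - r)) \<in> dvars (C ! i)" using uj by simp
        then show False using ar_no_proper_deriv[of i j "r' - r"] ij ui \<open>r < r'\<close> by auto
      qed
    qed
  qed
  then have "card {0..<length C} \<le> card (UNIV :: 'j set)"
    by (rule card_inj_on_le) auto
  then show ?thesis by simp
qed

end

end

lemma dconst_eq: "dvars (a :: ('j, 'k::comm_ring_1) dpoly) = {} \<Longrightarrow> a = dConst (lk a 0)"
proof (rule poly_mapping_eqI)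
  fix m assume d: "dvars a = {}"
  show "lk a m = lk (dConst (lk a 0)) m"
  proof (cases "m = 0")
    case True then show ?thesis by (simp add: dConst_def)
  next
    case False
    then obtain v where "v \<in> ks m" by (auto simp: in_keys_iff poly_mapping_eq_iff fun_eq_iff)
    then have "m \<notin> ks a" using d by (auto simp: dvars_def)
    then show ?thesis using False by (simp add: dConst_def in_keys_iff lookup_single_not_eq)
  qed
qed

lemma dConst_mult: "dConst a * dConst b = (dConst (a * b) :: ('j, 'k::comm_ring_1) dpoly)"
  by (simp add: dConst_def mult_single)

lemma dConst_one: "dConst 1 = (1 :: ('j, 'k::comm_ring_1) dpoly)"
  by (simp add: dConst_def)

lemma dConst_zero: "dConst 0 = (0 :: ('j, 'k::comm_ring_1) dpoly)"
  by (simp add: dConst_def)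

lemma dConst_inj: "dConst a = (dConst b :: ('j, 'k::comm_ring_1) dpoly) \<Longrightarrow> a = b"
  unfolding dConst_def by (metis lookup_single_eq)

locale pctx = rnk le for le :: "'j::finite \<times> nat \<Rightarrow> 'j \<times> nat \<Rightarrow> bool" +
  fixes P :: "('j, 'k::field_char_0) dpoly set"
  assumes prime: "prime_ideal_in UNIV P"
begin

lemma P_zero: "0 \<in> P" using prime by (simp add: prime_ideal_in_def)
lemma P_one: "1 \<notin> P" using prime by (simp add: prime_ideal_in_def)
lemma P_add: "a \<in> P \<Longrightarrow> b \<in> P \<Longrightarrow> a + b \<in> P" using prime by (simp add: prime_ideal_in_def)
lemma P_mult: "a \<in> P \<Longrightarrow> r * a \<in> P" using prime by (simp add: prime_ideal_in_def polys_in_def)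
lemma P_mult2: "a \<in> P \<Longrightarrow> a * r \<in> P" using P_mult[of a r] by (simp add: mult.commute)
lemma P_prime: "a * b \<in> P \<Longrightarrow> a \<in> P \<or> b \<in> P" using prime by (simp add: prime_ideal_in_def polys_in_def)
lemma P_uminus: "a \<in> P \<Longrightarrow> - a \<in> P" using P_mult[of a "-1"] by simp
lemma P_diff: "a \<in> P \<Longrightarrow> b \<in> P \<Longrightarrow> a - b \<in> P" using P_add[of a "- b"] P_uminus[of b] by simp
lemma P_diff_iff: "a - b \<in> P \<Longrightarrow> a \<in> P \<longleftrightarrow> b \<in> P"
  using P_diff[of a "a - b"] P_add[of "a - b" b] by auto

lemma const_notin_P:
  assumes "dvars a = {}" "a \<noteq> 0"
  shows "a \<notin> P"
proof
  assume aP: "a \<in> P"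
  have e: "a = dConst (lk a 0)" by (rule dconst_eq[OF assms(1)])
  then have c: "lk a 0 \<noteq> 0" using assms(2) dConst_zero by metis
  have "dConst (inverse (lk a 0)) * a = 1"
    by (subst e) (simp add: dConst_mult c dConst_one)
  moreover have "dConst (inverse (lk a 0)) * a \<in> P" by (rule P_mult[OF aP])
  ultimately show False using P_one by simp
qed

lemma prod_list_notin: "(\<forall>x\<in>set xs. x \<notin> P) \<Longrightarrow> prod_list xs \<notin> P"
proof (induction xs)
  case Nil then show ?case using P_one by simp
next
  case (Cons x xs) then show ?case using P_prime by auto
qed

lemma mult_closure_notin: "T \<inter> P = {} \<Longrightarrow> s \<in> mult_closure T \<Longrightarrow> s \<notin> P"
  unfolding mult_closure_def using prod_list_notin by blast

lemma ideal_in_P: "S \<subseteq> P \<Longrightarrow> ideal_in W S \<subseteq> P"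
  by (rule ideal_in_sub_ideal) (auto intro: P_zero P_add P_mult)

lemma P_constants: "P \<inter> polys_in {} = {0}"
  using const_notin_P P_zero by (auto simp: polys_in_def)

lemma reduced_of_less:
  assumes nc: "nonconst c" "nonconst a" and l: "poly_rank_less le c a"
  shows "reduced le c a"
proof -
  let ?u = "leader le a" and ?uc = "leader le c"
  have le1: "le ?uc ?u" using l by (auto simp: poly_rank_less_def refl)
  have "(fst ?u, snd ?u + s) \<notin> dvars c" if "s > 0" for s
  proof
    assume h: "(fst ?u, snd ?u + s) \<in> dvars c"
    then have "le (fst ?u, snd ?u + s) ?uc" by (rule leader_max[OF nc(1)])
    then have "le (fst ?u, snd ?u + s) ?u" using trans le1 by blast
    then show False using proper_deriv_gt[OF that] by blast
  qed
  moreover have "degv ?u c < degv ?u a"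
  proof (cases "?uc = ?u")
    case True then show ?thesis using l by (auto simp: poly_rank_less_def)
  next
    case False
    have "?u \<notin> dvars c"
    proof
      assume "?u \<in> dvars c"
      then have "le ?u ?uc" by (rule leader_max[OF nc(1)])
      then show False using antisym le1 False by blast
    qed
    then have "degv ?u c = 0" by (rule degv_notin)
    then show ?thesis using leader_deg_pos[OF nc(2)] by simp
  qed
  ultimately show ?thesis by (simp add: reduced_def)
qed

lemma key:
  assumes cs: "char_set le P C" and aP: "a \<in> P" and a0: "a \<noteq> 0"
    and red: "\<forall>i<length C. reduced le a (C ! i)"
  shows False
proof -
  have ar: "autoreduced le C" and sC: "set C \<subseteq> P"
    and mn: "\<And>B. autoreduced le B \<Longrightarrow> set B \<subseteq> P \<Longrightarrow> \<not> aset_rank_less le B C"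
    using cs by (auto simp: char_set_def)
  show False
  proof (cases "dvars a = {}")
    case True then show False using const_notin_P a0 aP by blast
  next
    case False
    then have nca: "nonconst a" by (simp add: nonconst_def)
    define k where "k = length (takeWhile (\<lambda>c. poly_rank_less le c a) C)"
    have kle: "k \<le> length C" unfolding k_def by (rule length_takeWhile_le)
    have below: "poly_rank_less le (C ! i) a" if "i < k" for i
    proof -
      have "takeWhile (\<lambda>c. poly_rank_less le c a) C ! i = C ! i"
        using that unfolding k_def by (rule takeWhile_nth)
      moreover have "takeWhile (\<lambda>c. poly_rank_less le c a) C ! i \<in> set (takeWhile (\<lambda>c. poly_rank_less le c a) C)"
        using that unfolding k_def by simp
      ultimately show ?thesis using set_takeWhileD by fastforce
    qed
    define B where "B = take k C @ [a]"
    have lenB: "length B = Suc k" using kle by (simp add: B_def)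
    have Bi: "B ! i = C ! i" if "i < k" for i using that kle by (simp add: B_def nth_append)
    have Bk: "B ! k = a" using kle by (simp add: B_def nth_append)
    have ncC: "nonconst (C ! i)" if "i < length C" for i using ar_nonconst[OF ar that] .
    have arB: "autoreduced le B"
      unfolding autoreduced_def
    proof (intro conjI allI impI)
      fix i assume "i < length B"
      then consider "i < k" | "i = k" using lenB by linarith
      then show "nonconst (B ! i)"
      proof cases
        case 1 then show ?thesis using Bi ncC kle by simp
      next
        case 2 then show ?thesis using Bk nca by simp
      qed
    next
      fix i j assume ij: "i < length B" "j < length B" "i \<noteq> j"
      show "reduced le (B ! i) (B ! j)"
      proof (cases "i = k")
        case True
        then have "j < k" using ij lenB by auto
        then show ?thesis using True Bk Bi red kle by auto
      next
        case False
        then have ik: "i < k" using ij lenB by auto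
        show ?thesis
        proof (cases "j = k")
          case True
          then show ?thesis using Bi[OF ik] Bk reduced_of_less[OF ncC nca below[OF ik]] ik kle by simp
        next
          case False
          then have "j < k" using ij lenB by auto
          then show ?thesis using ar_reduced[OF ar] ik ij(3) Bi kle by simp
        qed
      qed
    next
      fix i j assume ij: "i < j" "j < length B"
      show "poly_rank_less le (B ! i) (B ! j)"
      proof (cases "j = k")
        case True
        then show ?thesis using ij Bi Bk below by simp
      next
        case False
        then have "j < k" using ij lenB by auto
        then show ?thesis using ar_less[OF ar] ij Bi kle by simp
      qed
    qed
    have sB: "set B \<subseteq> P" using sC aP set_take_subset[of k C] by (auto simp: B_def)
    have "aset_rank_less le B C"
    proof (cases "k < length C")
      case True
      have nb: "\<not> poly_rank_less le (C ! k) a"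
        using nth_length_takeWhile[of "\<lambda>c. poly_rank_less le c a" C] True unfolding k_def by simp
      have "rk (C ! k) \<noteq> rk a"
      proof
        assume eq: "rk (C ! k) = rk a"
        have l: "leader le (C ! k) = leader le a" using eq unfolding rk_eq_iff by blast
        have d: "degv (leader le (C ! k)) (C ! k) = degv (leader le a) a" using eq unfolding rk_eq_iff by blast
        have "reduced le a (C ! k)" using red True by simp
        then have "degv (leader le (C ! k)) a < degv (leader le (C ! k)) (C ! k)" by (simp add: reduced_def)
        then show False using l d by (metis less_irrefl)
      qed
      then have "poly_rank_less le a (C ! k)" using prl_total[of "C ! k" a] nb by auto
      moreover have "\<forall>j<k. poly_rank_eq le (B ! j) (C ! j)" using Bi by (simp add: poly_rank_eq_def)
      ultimately show ?thesis unfolding aset_rank_less_def using True lenB Bk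
        by (intro disjI1 exI[of _ k]) simp
    next
      case False
      then have "k = length C" using kle by simp
      then show ?thesis unfolding aset_rank_less_def using lenB Bi
        by (intro disjI2) (simp add: poly_rank_eq_def)
    qed
    then show False using mn arB sB by blast
  qed
qed

lemma aset_rank_less_cong:
  assumes "length A = length C" "\<forall>j<length C. rk (A ! j) = rk (C ! j)"
  shows "aset_rank_less le B A = aset_rank_less le B C"
proof -
  have e1: "poly_rank_eq le (B ! j) (A ! j) = poly_rank_eq le (B ! j) (C ! j)" if "j < length C" for j
  proof -
    have r: "rk (A ! j) = rk (C ! j)" using assms that by blast
    show ?thesis unfolding poly_rank_eq_rk r by simp
  qed
  have e2: "poly_rank_less le (B ! j) (A ! j) = poly_rank_less le (B ! j) (C ! j)" if "j < length C" for j
    using assms that poly_rank_less_rk[of "B ! j" "B ! j" "A ! j" "C ! j"] by simp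
  have ex: "(\<exists>i<min (length B) (length A). (\<forall>j<i. poly_rank_eq le (B ! j) (A ! j)) \<and> poly_rank_less le (B ! i) (A ! i))
    = (\<exists>i<min (length B) (length C). (\<forall>j<i. poly_rank_eq le (B ! j) (C ! j)) \<and> poly_rank_less le (B ! i) (C ! i))"
  proof (intro iffI; elim exE conjE)
    fix i assume h: "i < min (length B) (length A)" "\<forall>j<i. poly_rank_eq le (B ! j) (A ! j)" "poly_rank_less le (B ! i) (A ! i)"
    have il: "i < length C" using h(1) assms(1) by simp
    have "\<forall>j<i. poly_rank_eq le (B ! j) (C ! j)" using h(2) e1 il by auto
    moreover have "poly_rank_less le (B ! i) (C ! i)" using h(3) e2 il by auto
    ultimately show "\<exists>i<min (length B) (length C). (\<forall>j<i. poly_rank_eq le (B ! j) (C ! j)) \<and> poly_rank_less le (B ! i) (C ! i)"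
      using h(1) assms(1) by auto
  next
    fix i assume h: "i < min (length B) (length C)" "\<forall>j<i. poly_rank_eq le (B ! j) (C ! j)" "poly_rank_less le (B ! i) (C ! i)"
    have il: "i < length C" using h(1) by simp
    have "\<forall>j<i. poly_rank_eq le (B ! j) (A ! j)" using h(2) e1 il by auto
    moreover have "poly_rank_less le (B ! i) (A ! i)" using h(3) e2 il by auto
    ultimately show "\<exists>i<min (length B) (length A). (\<forall>j<i. poly_rank_eq le (B ! j) (A ! j)) \<and> poly_rank_less le (B ! i) (A ! i)"
      using h(1) assms(1) by auto
  qed
  have ex2: "(length A < length B \<and> (\<forall>j<length A. poly_rank_eq le (B ! j) (A ! j)))
     = (length C < length B \<and> (\<forall>j<length C. poly_rank_eq le (B ! j) (C ! j)))"
    using e1 assms(1) by auto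
  show ?thesis unfolding aset_rank_less_def ex ex2 by blast
qed

lemma repl:
  assumes cs: "char_set le P C" and i: "i < length C" and aP: "a \<in> P" and nca: "nonconst a"
    and r: "rk a = rk (C ! i)" and red: "\<forall>j<length C. j \<noteq> i \<longrightarrow> reduced le a (C ! j)"
  shows "char_set le P (C[i := a])"
proof -
  have ar: "autoreduced le C" and sC: "set C \<subseteq> P"
    and mn: "\<And>B. autoreduced le B \<Longrightarrow> set B \<subseteq> P \<Longrightarrow> \<not> aset_rank_less le B C"
    using cs by (auto simp: char_set_def)
  let ?C = "C[i := a]"
  have rkC: "\<forall>j<length C. rk (?C ! j) = rk (C ! j)"
  proof (intro allI impI)
    fix j assume j: "j < length C"
    show "rk (?C ! j) = rk (C ! j)"
    proof (cases "j = i")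
      case True
      then have "?C ! j = a" using i by simp
      then show ?thesis using r True by metis
    next
      case False
      then have "?C ! j = C ! j" by simp
      then show ?thesis by metis
    qed
  qed
  have "autoreduced le ?C"
    unfolding autoreduced_def
  proof (intro conjI allI impI)
    fix j assume "j < length ?C"
    then show "nonconst (?C ! j)" using nca ar_nonconst[OF ar] by (cases "j = i") auto
  next
    fix j j' assume jj: "j < length ?C" "j' < length ?C" "j \<noteq> j'"
    show "reduced le (?C ! j) (?C ! j')"
    proof (cases "j = i")
      case True
      then show ?thesis using red jj by (auto simp: nth_list_update)
    next
      case False
      then have "reduced le (C ! j) (C ! j')" using ar_reduced[OF ar] jj by simp
      then have "reduced le (C ! j) (?C ! j')" using reduced_rk[of "?C ! j'" "C ! j'" "C ! j"] rkC jj by simp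
      then show ?thesis using False jj by simp
    qed
  next
    fix j j' assume jj: "j < j'" "j' < length ?C"
    have "poly_rank_less le (C ! j) (C ! j')" using ar_less[OF ar] jj by simp
    then show "poly_rank_less le (?C ! j) (?C ! j')"
      using poly_rank_less_rk[of "?C ! j" "C ! j" "?C ! j'" "C ! j'"] rkC jj by simp
  qed
  moreover have "set ?C \<subseteq> P" using sC aP set_update_subset_insert[of C i a] by blast
  moreover have "\<not> aset_rank_less le B ?C" if "autoreduced le B" "set B \<subseteq> P" for B
    using mn[OF that] aset_rank_less_cong[of ?C C B] rkC by simp
  ultimately show ?thesis by (simp add: char_set_def)
qed

end

context rnk
begin

section \<open>Existence of characteristic sets\<close>

definition Rv where "Rv = {(x, y). le x y \<and> x \<noteq> y}"

lemma wf_Rv: "wf Rv"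
proof (rule wfI_min)
  fix x :: "'j \<times> nat" and Q assume xQ: "x \<in> Q"
  define M where "M = (\<lambda>j. (j, LEAST r. (j, r) \<in> Q)) ` (fst ` Q)"
  have finM: "finite M" unfolding M_def by (rule finite_imageI) simp
  have neM: "M \<noteq> {}" using xQ by (auto simp: M_def)
  have MQ: "M \<subseteq> Q"
  proof
    fix y assume "y \<in> M"
    then obtain z where z: "z \<in> Q" "y = (fst z, LEAST r. (fst z, r) \<in> Q)" by (auto simp: M_def)
    have "(fst z, snd z) \<in> Q" using z(1) by simp
    then have "(fst z, LEAST r. (fst z, r) \<in> Q) \<in> Q" by (rule LeastI)
    then show "y \<in> Q" using z(2) by simp
  qed
  obtain m where m: "m \<in> M" "\<forall>y\<in>M. le m y" using exists_min[OF finM neM] by blast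
  show "\<exists>z\<in>Q. \<forall>y. (y, z) \<in> Rv \<longrightarrow> y \<notin> Q"
  proof (intro bexI[of _ m] allI impI)
    fix y assume yR: "(y, m) \<in> Rv"
    show "y \<notin> Q"
    proof
      assume yQ: "y \<in> Q"
      obtain j r where y: "y = (j, r)" by fastforce
      let ?r = "LEAST r. (j, r) \<in> Q"
      have "j \<in> fst ` Q" using yQ y by force
      then have jM: "(j, ?r) \<in> M" unfolding M_def by blast
      have "?r \<le> r" using yQ y by (auto intro: Least_le)
      then have "le (j, ?r) y" using same_var_le y by simp
      then have "le m y" using m jM trans by blast
      moreover have "le y m" "y \<noteq> m" using yR by (auto simp: Rv_def)
      ultimately show False using antisym by blast
    qed
  qed (use m MQ in auto)
qed

definition Rrk where "Rrk = Rv <*lex*> less_than"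

lemma wf_Rrk: "wf Rrk" unfolding Rrk_def by (intro wf_lex_prod wf_Rv wf_less_than)

lemma rkless_Rrk: "rkless x y \<longleftrightarrow> (x, y) \<in> Rrk"
  by (cases x; cases y) (auto simp: rkless_def Rrk_def Rv_def)

definition Ropt where "Ropt = {(Some x, Some y) | x y. (x, y) \<in> Rrk} \<union> {(Some x, None) | x. True}"

lemma wf_Ropt: "wf Ropt"
proof -
  define fo :: "(('j \<times> nat) \<times> nat) option \<Rightarrow> nat \<times> (('j \<times> nat) \<times> nat)"
    where "fo opt = (case opt of None \<Rightarrow> (1::nat, undefined) | Some x \<Rightarrow> (0, x))" for opt
  have "Ropt \<subseteq> inv_image (less_than <*lex*> Rrk) fo"
    by (auto simp: Ropt_def fo_def)
  moreover have "wf (inv_image (less_than <*lex*> Rrk) fo)"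
    by (intro wf_inv_image wf_lex_prod wf_less_than wf_Rrk)
  ultimately show ?thesis by (rule wf_subset[rotated])
qed

definition pad :: "('j, 'k::comm_ring_1) dpoly list \<Rightarrow> ((('j \<times> nat) \<times> nat) option) list" where
  "pad B = map (\<lambda>c. Some (rk c)) B @ replicate (Suc (card (UNIV :: 'j set)) - length B) None"

lemma lex_at:
  assumes "length xs = length ys" "i < length xs" "take i xs = take i ys" "(xs ! i, ys ! i) \<in> r"
  shows "(xs, ys) \<in> lex r"
proof -
  have "xs = take i xs @ xs ! i # drop (Suc i) xs" using assms(2) by (rule id_take_nth_drop)
  moreover have "ys = take i xs @ ys ! i # drop (Suc i) ys" using assms(1,2,3) id_take_nth_drop[of i ys] by simp
  ultimately show ?thesis unfolding lex_conv using assms(1,4) by blast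
qed

lemma pad_lex:
  fixes B C :: "('j, 'k::comm_ring_1) dpoly list"
  assumes aB: "autoreduced le B" and aC: "autoreduced le C" and l: "aset_rank_less le B C"
  shows "(pad B, pad C) \<in> lex Ropt"
proof -
  define NN where "NN = Suc (card (UNIV :: 'j set))"
  have lB: "length B < NN" using ar_length[OF aB] by (simp add: NN_def)
  have lC: "length C < NN" using ar_length[OF aC] by (simp add: NN_def)
  have lpB: "length (pad B) = NN" using lB by (simp add: pad_def NN_def)
  have lpC: "length (pad C) = NN" using lC by (simp add: pad_def NN_def)
  have nB: "pad B ! j = (if j < length B then Some (rk (B ! j)) else None)" if "j < NN" for j
    using that lB by (auto simp: pad_def nth_append NN_def)
  have nC: "pad C ! j = (if j < length C then Some (rk (C ! j)) else None)" if "j < NN" for j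
    using that lC by (auto simp: pad_def nth_append NN_def)
  have tk: "take i (pad B) = take i (pad C)" if "i \<le> length B" "i \<le> length C" "\<forall>j<i. rk (B ! j) = rk (C ! j)" for i
  proof (rule nth_equalityI)
    show "length (take i (pad B)) = length (take i (pad C))" using lpB lpC by simp
  next
    fix j assume "j < length (take i (pad B))"
    then have j: "j < i" "j < NN" using lpB by auto
    then show "take i (pad B) ! j = take i (pad C) ! j" using that nB nC by auto
  qed
  from l show ?thesis unfolding aset_rank_less_def
  proof (elim disjE exE conjE)
    fix i assume i: "i < min (length B) (length C)" and pre: "\<forall>j<i. poly_rank_eq le (B ! j) (C ! j)"
      and lt: "poly_rank_less le (B ! i) (C ! i)"
    have pre': "\<forall>j<i. rk (B ! j) = rk (C ! j)" using pre by (simp add: poly_rank_eq_rk)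
    have iN: "i < NN" using i lB by simp
    show ?thesis
    proof (rule lex_at)
      show "length (pad B) = length (pad C)" using lpB lpC by simp
      show "i < length (pad B)" using iN lpB by simp
      show "take i (pad B) = take i (pad C)" using tk i pre' by simp
      show "(pad B ! i, pad C ! i) \<in> Ropt"
        using nB[OF iN] nC[OF iN] i lt by (simp add: Ropt_def prl_rk rkless_Rrk)
    qed
  next
    assume lt: "length C < length B" and pre: "\<forall>j<length C. poly_rank_eq le (B ! j) (C ! j)"
    have pre': "\<forall>j<length C. rk (B ! j) = rk (C ! j)" using pre by (simp add: poly_rank_eq_rk)
    have iN: "length C < NN" using lC by simp
    show ?thesis
    proof (rule lex_at)
      show "length (pad B) = length (pad C)" using lpB lpC by simp
      show "length C < length (pad B)" using iN lpB by simp
      show "take (length C) (pad B) = take (length C) (pad C)" using tk lt pre' by simp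
      show "(pad B ! length C, pad C ! length C) \<in> Ropt"
        using nB[OF iN] nC[OF iN] lt by (simp add: Ropt_def)
    qed
  qed
qed

lemma exists_char_set:
  fixes S :: "('j, 'k::comm_ring_1) dpoly set"
  shows "\<exists>C. char_set le S C"
proof -
  define Q where "Q = {B. autoreduced le B \<and> set B \<subseteq> S}"
  have "[] \<in> Q" by (simp add: Q_def autoreduced_def)
  have wfR: "wf (inv_image (lex Ropt) pad)" by (intro wf_inv_image wf_lex wf_Ropt)
  obtain C where C: "C \<in> Q" "\<And>B. (B, C) \<in> inv_image (lex Ropt) pad \<Longrightarrow> B \<notin> Q"
    using wfE_min[OF wfR \<open>[] \<in> Q\<close>] by blast
  have "char_set le S C"
    unfolding char_set_def
  proof (intro conjI allI impI)
    show "autoreduced le C" "set C \<subseteq> S" using C(1) by (auto simp: Q_def)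
  next
    fix B assume B: "autoreduced le B \<and> set B \<subseteq> S"
    show "\<not> aset_rank_less le B C"
    proof
      assume "aset_rank_less le B C"
      then have "(pad B, pad C) \<in> lex Ropt" using pad_lex B C(1) by (auto simp: Q_def)
      then have "B \<notin> Q" using C(2) by simp
      then show False using B by (simp add: Q_def)
    qed
  qed
  then show ?thesis by blast
qed

end

section \<open>Pseudo-division\<close>

lemma keys_mult_u_lt:
  fixes p q :: "('j, 'k::comm_ring_1) dpoly"
  assumes "\<forall>m\<in>ks p. lk m u \<le> a" "\<forall>m\<in>ks q. lk m u < b"
  shows "\<forall>m\<in>ks (p * q). lk m u < a + b"
proof
  fix m assume "m \<in> ks (p * q)"
  then obtain x y where "x \<in> ks p" "y \<in> ks q" "m = x + y" using keys_mult[of p q] by blast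
  then show "lk m u < a + b" using assms by (fastforce simp: lookup_add intro: add_le_less_mono)
qed

lemma keys_mult_u_le:
  fixes p q :: "('j, 'k::comm_ring_1) dpoly"
  assumes "\<forall>m\<in>ks p. lk m u \<le> a" "\<forall>m\<in>ks q. lk m u \<le> b"
  shows "\<forall>m\<in>ks (p * q). lk m u \<le> a + b"
proof
  fix m assume "m \<in> ks (p * q)"
  then obtain x y where "x \<in> ks p" "y \<in> ks q" "m = x + y" using keys_mult[of p q] by blast
  then show "lk m u \<le> a + b" using assms by (fastforce simp: lookup_add intro: add_mono)
qed

lemma keys_coeffv_u: "\<forall>m\<in>ks (coeffv u d p). lk m u \<le> 0"
  using keys_coeffv by fastforce

lemma keys_Xpow_u: "\<forall>m\<in>ks ((dVar u :: ('j, 'k::comm_ring_1) dpoly) ^ k). lk m u \<le> k"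
  by (auto simp: dVar_power lookup_single_nat split: if_splits)

lemma degv_lt_of_keys: "(\<forall>m\<in>ks p. lk m u < n) \<Longrightarrow> 0 < n \<Longrightarrow> degv u p < n"
proof -
  assume h: "\<forall>m\<in>ks p. lk m u < n" and n: "0 < n"
  have "degv u p \<le> n - 1" by (rule degv_le) (use h in force)
  then show ?thesis using n by simp
qed

lemma pstep:
  fixes f a :: "('j, 'k::comm_ring_1) dpoly"
  assumes e: "degv u f = e" "e > 0" and n: "degv u a = n" "e \<le> n"
  defines "I \<equiv> coeffv u e f"
  defines "a1 \<equiv> I * a - coeffv u n a * dVar u ^ (n - e) * f"
  shows "degv u a1 < n" "I * a - a1 = coeffv u n a * dVar u ^ (n - e) * f"
    "dvars a1 \<subseteq> dvars a \<union> dvars f" "\<And>w. w \<notin> dvars f \<Longrightarrow> degv w a1 \<le> degv w a"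
proof -
  let ?X = "dVar u :: ('j, 'k) dpoly"
  let ?A = "coeffv u n a"
  obtain flow where fl: "f = I * ?X ^ e + flow" "\<forall>m\<in>ks flow. lk m u < e"
    using poly_decomp[of f u] e unfolding I_def by (auto simp: mult.commute)
  obtain alow where al: "a = ?A * ?X ^ n + alow" "\<forall>m\<in>ks alow. lk m u < n"
    using poly_decomp[of a u] n by auto
  have xx: "?X ^ (n - e) * ?X ^ e = ?X ^ n" using n(2) by (simp add: power_add[symmetric])
  have a1eq: "a1 = I * alow - ?A * ?X ^ (n - e) * flow"
  proof -
    have "a1 = I * (?A * ?X ^ n + alow) - ?A * ?X ^ (n - e) * (I * ?X ^ e + flow)"
      unfolding a1_def using al(1) fl(1) by simp
    also have "\<dots> = I * ?A * ?X ^ n + I * alow - I * ?A * (?X ^ (n - e) * ?X ^ e) - ?A * ?X ^ (n - e) * flow"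
      by (simp add: algebra_simps)
    also have "\<dots> = I * alow - ?A * ?X ^ (n - e) * flow" by (simp add: xx)
    finally show ?thesis .
  qed
  have k1: "\<forall>m\<in>ks (I * alow). lk m u < 0 + n"
    unfolding I_def by (rule keys_mult_u_lt[OF keys_coeffv_u[of u e f] al(2)])
  have k2: "\<forall>m\<in>ks (?A * ?X ^ (n - e)). lk m u \<le> 0 + (n - e)"
    by (rule keys_mult_u_le[OF keys_coeffv_u[of u n a] keys_Xpow_u[of u "n - e"]])
  have k3: "\<forall>m\<in>ks (?A * ?X ^ (n - e) * flow). lk m u < (0 + (n - e)) + e"
    by (rule keys_mult_u_lt[OF k2 fl(2)])
  have ksub: "ks a1 \<subseteq> ks (I * alow) \<union> ks (?A * ?X ^ (n - e) * flow)"
    unfolding a1eq by (rule keys_diff_sub)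
  have "\<forall>m\<in>ks a1. lk m u < n"
  proof
    fix m assume "m \<in> ks a1"
    then have "m \<in> ks (I * alow) \<or> m \<in> ks (?A * ?X ^ (n - e) * flow)"
      using ksub by blast
    then show "lk m u < n" using k1 k3 n(2) by auto
  qed
  moreover have "0 < n" using e n by simp
  ultimately show "degv u a1 < n" by (rule degv_lt_of_keys)
  show "I * a - a1 = ?A * ?X ^ (n - e) * f" unfolding a1_def by simp
  have uf: "u \<in> dvars f" using e degv_pos_iff by blast
  have dI: "dvars I \<subseteq> dvars f" using dvars_coeffv unfolding I_def by blast
  have dA: "dvars ?A \<subseteq> dvars a" using dvars_coeffv by blast
  show "dvars a1 \<subseteq> dvars a \<union> dvars f"
  proof -
    have "dvars a1 \<subseteq> dvars (I * a) \<union> dvars (?A * ?X ^ (n - e) * f)" unfolding a1_def by (rule dvars_diff)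
    also have "\<dots> \<subseteq> dvars I \<union> dvars a \<union> (dvars ?A \<union> dvars (?X ^ (n - e)) \<union> dvars f)"
      using dvars_mult[of I a] dvars_mult[of "?A * ?X ^ (n - e)" f] dvars_mult[of ?A "?X ^ (n - e)"] by blast
    also have "\<dots> \<subseteq> dvars a \<union> dvars f" using dI dA dvars_Xpow[of u "n - e"] uf by blast
    finally show ?thesis .
  qed
  fix w assume w: "w \<notin> dvars f"
  have wI: "degv w I = 0" using w dI degv_notin by blast
  have wf: "degv w f = 0" using w degv_notin by blast
  have wX: "degv w (?X ^ (n - e)) = 0" using w uf dvars_Xpow[of u "n - e"] degv_notin by blast
  have wA: "degv w ?A \<le> degv w a" by (rule degv_coeffv)
  have "degv w a1 \<le> max (degv w (I * a)) (degv w (?A * ?X ^ (n - e) * f))"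
    unfolding a1_def by (rule degv_diff)
  moreover have "degv w (I * a) \<le> degv w a" using degv_mult[of w I a] wI by simp
  moreover have "degv w (?A * ?X ^ (n - e) * f) \<le> degv w a"
    using degv_mult[of w "?A * ?X ^ (n - e)" f] degv_mult[of w ?A "?X ^ (n - e)"] wf wX wA by simp
  ultimately show "degv w a1 \<le> degv w a" by simp
qed

lemma red1:
  fixes f :: "('j, 'k::comm_ring_1) dpoly"
  assumes e: "degv u f = e" "e > 0" and W: "dvars f \<subseteq> W"
  shows "a \<in> polys_in W \<Longrightarrow> \<exists>b k. b \<in> polys_in W \<and> (coeffv u e f) ^ k * a - b \<in> ideal_in W {f} \<and>
           degv u b < e \<and> (\<forall>w. w \<notin> dvars f \<longrightarrow> degv w b \<le> degv w a)"
proof (induction "degv u a" arbitrary: a rule: less_induct)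
  case less
  let ?I = "coeffv u e f"
  show ?case
  proof (cases "degv u a < e")
    case True
    then show ?thesis using less.prems by (intro exI[of _ a] exI[of _ 0]) (simp add: ideal_in_zero)
  next
    case False
    define n where "n = degv u a"
    have en: "e \<le> n" using False n_def by simp
    define a1 where "a1 = ?I * a - coeffv u n a * dVar u ^ (n - e) * f"
    note ps = pstep[OF e n_def[symmetric] en, folded a1_def]
    have a1W: "a1 \<in> polys_in W" using ps(3) less.prems W by (auto simp: polys_in_def)
    obtain b k where b: "b \<in> polys_in W" "?I ^ k * a1 - b \<in> ideal_in W {f}" "degv u b < e"
      "\<forall>w. w \<notin> dvars f \<longrightarrow> degv w b \<le> degv w a1"
      using less.hyps[OF ps(1)[unfolded n_def] a1W] n_def by blast
    have uf: "u \<in> dvars f" using e degv_pos_iff by blast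
    have IW: "?I \<in> polys_in W" using dvars_coeffv[of u e f] W by (auto simp: polys_in_def)
    have AW: "coeffv u n a * dVar u ^ (n - e) \<in> polys_in W"
    proof -
      have "coeffv u n a \<in> polys_in W" using dvars_coeffv[of u n a] less.prems by (auto simp: polys_in_def)
      moreover have "dVar u ^ (n - e) \<in> polys_in W" using dvars_Xpow[of u "n - e"] uf W by (auto simp: polys_in_def)
      ultimately show ?thesis by (rule polys_in_mult)
    qed
    have "?I * a - a1 \<in> ideal_in W {f}"
      unfolding ps(2) by (rule ideal_in_gen[OF AW]) simp
    then have "?I ^ k * (?I * a - a1) \<in> ideal_in W {f}"
      by (rule ideal_in_mult[OF polys_in_power[OF IW]])
    then have "?I ^ k * (?I * a - a1) + (?I ^ k * a1 - b) \<in> ideal_in W {f}"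
      using b(2) by (rule ideal_in_add)
    moreover have "?I ^ k * (?I * a - a1) + (?I ^ k * a1 - b) = ?I ^ Suc k * a - b"
      by (simp add: algebra_simps)
    ultimately have "?I ^ Suc k * a - b \<in> ideal_in W {f}" by simp
    moreover have "\<forall>w. w \<notin> dvars f \<longrightarrow> degv w b \<le> degv w a"
    proof (intro allI impI)
      fix w assume w: "w \<notin> dvars f"
      have "degv w b \<le> degv w a1" using b(4) w by blast
      also have "\<dots> \<le> degv w a" by (rule ps(4)[OF w])
      finally show "degv w b \<le> degv w a" .
    qed
    ultimately show ?thesis using b(1,3) by blast
  qed
qed

lemma mult_closure_one: "1 \<in> mult_closure T"
  unfolding mult_closure_def by (rule CollectI, rule exI[of _ "[]"]) simp

lemma mult_closure_mult: "s \<in> mult_closure T \<Longrightarrow> t \<in> mult_closure T \<Longrightarrow> s * t \<in> mult_closure T"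
proof -
  assume "s \<in> mult_closure T" "t \<in> mult_closure T"
  then obtain xs ys where "s = prod_list xs" "set xs \<subseteq> T" "t = prod_list ys" "set ys \<subseteq> T"
    unfolding mult_closure_def by blast
  then show ?thesis unfolding mult_closure_def by (intro CollectI exI[of _ "xs @ ys"]) auto
qed

lemma mult_closure_power: "x \<in> T \<Longrightarrow> x ^ k \<in> mult_closure T"
  unfolding mult_closure_def by (intro CollectI exI[of _ "replicate k x"]) (auto simp: prod_list_replicate)

lemma mult_closure_mono: "T \<subseteq> T' \<Longrightarrow> s \<in> mult_closure T \<Longrightarrow> s \<in> mult_closure T'"
  unfolding mult_closure_def by blast

lemma mult_closure_polys: "T \<subseteq> polys_in W \<Longrightarrow> s \<in> mult_closure T \<Longrightarrow> s \<in> polys_in W"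
  unfolding mult_closure_def using polys_in_prod_list by blast

definition Vs :: "('j, 'k::comm_ring_1) dpoly list \<Rightarrow> nat \<Rightarrow> ('j \<times> nat) set" where
  "Vs C i = (\<Union>j<i. dvars (C ! j))"

lemma Vs_Suc: "Vs C (Suc i) = Vs C i \<union> dvars (C ! i)"
  by (auto simp: Vs_def lessThan_Suc)

lemma Vs_0: "Vs C 0 = {}" by (simp add: Vs_def)

lemma Vs_mono: "i \<le> i' \<Longrightarrow> Vs C i \<subseteq> Vs C i'"
  unfolding Vs_def by (intro UN_mono) auto

lemma set_take_dvars:
  assumes "c \<in> set (take i C)"
  shows "dvars c \<subseteq> Vs C i"
proof -
  obtain j where j: "j < length (take i C)" "c = take i C ! j" using assms by (auto simp: in_set_conv_nth)
  then have "j < i" "c = C ! j" by auto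
  then show ?thesis unfolding Vs_def by blast
qed

lemma set_take_Suc: "i < length C \<Longrightarrow> set (take (Suc i) C) = insert (C ! i) (set (take i C))"
  by (simp add: take_Suc_conv_app_nth)

lemma initial_polys: "initial le f \<in> polys_in (dvars f)"
  using dvars_coeffv[of "leader le f" "degv (leader le f) f" f] unfolding initial_def polys_in_def by blast

lemma initials_polys: "initial le ` set (take i C) \<subseteq> polys_in (Vs C i)"
proof
  fix x assume "x \<in> initial le ` set (take i C)"
  then obtain c where c: "c \<in> set (take i C)" "x = initial le c" by blast
  then show "x \<in> polys_in (Vs C i)"
    using initial_polys[of le c] set_take_dvars[OF c(1)] polys_in_mono by blast
qed

lemma take_polys: "set (take i C) \<subseteq> polys_in (Vs C i)"
  using set_take_dvars by (auto simp: polys_in_def)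

context rnk
begin

lemma leader_notin_Vs:
  assumes ar: "autoreduced le C" and i: "i < length C"
  shows "leader le (C ! i) \<notin> Vs C i"
proof
  assume "leader le (C ! i) \<in> Vs C i"
  then obtain x where x: "x < i" "leader le (C ! i) \<in> dvars (C ! x)" by (auto simp: Vs_def)
  then show False using ar_var_lt[OF ar x(1) i x(2)] by simp
qed

lemma pr:
  assumes ar: "autoreduced le C"
  shows "i \<le> length C \<Longrightarrow> Vs C i \<subseteq> W \<Longrightarrow> a \<in> polys_in W \<Longrightarrow>
    \<exists>a' s. a' \<in> polys_in W \<and> s \<in> mult_closure (initial le ` set (take i C)) \<and>
      s * a - a' \<in> ideal_in W (set (take i C)) \<and>
      (\<forall>j<i. degv (leader le (C ! j)) a' < degv (leader le (C ! j)) (C ! j)) \<and>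
      (\<forall>w. w \<notin> Vs C i \<longrightarrow> degv w a' \<le> degv w a)"
proof (induction i arbitrary: a)
  case 0
  then show ?case by (intro exI[of _ a] exI[of _ 1]) (simp add: mult_closure_one ideal_in_zero)
next
  case (Suc i)
  have i: "i < length C" using Suc.prems by simp
  let ?f = "C ! i"
  let ?u = "leader le ?f"
  let ?e = "degv ?u ?f"
  have e: "?e > 0" using leader_deg_pos[OF ar_nonconst[OF ar i]] .
  have fW: "dvars ?f \<subseteq> W" using Suc.prems(2) Vs_Suc by auto
  obtain b k where b: "b \<in> polys_in W" "(coeffv ?u ?e ?f) ^ k * a - b \<in> ideal_in W {?f}"
    "degv ?u b < ?e" "\<forall>w. w \<notin> dvars ?f \<longrightarrow> degv w b \<le> degv w a"
    using red1[OF HOL.refl e fW Suc.prems(3)] by blast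
  have VW: "Vs C i \<subseteq> W" using Suc.prems(2) Vs_Suc by auto
  obtain a' s where a': "a' \<in> polys_in W" "s \<in> mult_closure (initial le ` set (take i C))"
      "s * b - a' \<in> ideal_in W (set (take i C))"
      "\<forall>j<i. degv (leader le (C ! j)) a' < degv (leader le (C ! j)) (C ! j)"
      "\<forall>w. w \<notin> Vs C i \<longrightarrow> degv w a' \<le> degv w b"
    using Suc.IH[OF _ VW b(1)] i by auto
  let ?I = "initial le ?f"
  have Ieq: "coeffv ?u ?e ?f = ?I" by (simp add: initial_def)
  have ST: "set (take (Suc i) C) = insert ?f (set (take i C))" by (rule set_take_Suc[OF i])
  have sW: "s \<in> polys_in W"
    using mult_closure_polys[OF initials_polys a'(2)] polys_in_mono[OF _ VW] by blast
  have "s * ?I ^ k \<in> mult_closure (initial le ` set (take (Suc i) C))"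
  proof (rule mult_closure_mult)
    show "s \<in> mult_closure (initial le ` set (take (Suc i) C))"
      by (rule mult_closure_mono[OF _ a'(2)]) (use ST in auto)
    show "?I ^ k \<in> mult_closure (initial le ` set (take (Suc i) C))"
      by (rule mult_closure_power) (use ST in auto)
  qed
  moreover have "(s * ?I ^ k) * a - a' \<in> ideal_in W (set (take (Suc i) C))"
  proof -
    have "s * (?I ^ k * a - b) \<in> ideal_in W (set (take (Suc i) C))"
      by (rule ideal_in_mult[OF sW], rule ideal_in_mono[OF _ b(2)[unfolded Ieq]]) (use ST in auto)
    moreover have "s * b - a' \<in> ideal_in W (set (take (Suc i) C))"
      by (rule ideal_in_mono[OF _ a'(3)]) (use ST in auto)
    ultimately have "s * (?I ^ k * a - b) + (s * b - a') \<in> ideal_in W (set (take (Suc i) C))"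
      by (rule ideal_in_add)
    moreover have "s * (?I ^ k * a - b) + (s * b - a') = (s * ?I ^ k) * a - a'"
      by (simp add: algebra_simps)
    ultimately show ?thesis by simp
  qed
  moreover have "\<forall>j<Suc i. degv (leader le (C ! j)) a' < degv (leader le (C ! j)) (C ! j)"
  proof (intro allI impI)
    fix j assume "j < Suc i"
    then consider "j < i" | "j = i" by linarith
    then show "degv (leader le (C ! j)) a' < degv (leader le (C ! j)) (C ! j)"
    proof cases
      case 1 then show ?thesis using a'(4) by simp
    next
      case 2
      have "?u \<notin> Vs C i" by (rule leader_notin_Vs[OF ar i])
      then have "degv ?u a' \<le> degv ?u b" using a'(5) by simp
      then show ?thesis using b(3) 2 by simp
    qed
  qed
  moreover have "\<forall>w. w \<notin> Vs C (Suc i) \<longrightarrow> degv w a' \<le> degv w a"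
  proof (intro allI impI)
    fix w assume w: "w \<notin> Vs C (Suc i)"
    then have w1: "w \<notin> Vs C i" and w2: "w \<notin> dvars ?f" using Vs_Suc by auto
    have "degv w a' \<le> degv w b" using a'(5) w1 by blast
    also have "\<dots> \<le> degv w a" using b(4) w2 by blast
    finally show "degv w a' \<le> degv w a" .
  qed
  ultimately show ?case using a'(1) by blast
qed

end

context pctx
begin

lemma initial_notin:
  assumes cs: "char_set le P C" and j: "j < length C"
  shows "initial le (C ! j) \<notin> P"
proof
  assume IP: "initial le (C ! j) \<in> P"
  have ar: "autoreduced le C" using cs by (simp add: char_set_def)
  let ?f = "C ! j" let ?u = "leader le ?f" let ?e = "degv ?u ?f"
  let ?I = "initial le ?f"
  have Ieq: "?I = coeffv ?u ?e ?f" by (simp add: initial_def)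
  have e: "?e > 0" using leader_deg_pos[OF ar_nonconst[OF ar j]] .
  obtain m where m: "m \<in> ks ?f" "lk m ?u = ?e" using degv_attained[OF e] by blast
  have m1: "lk (m - sng ?u ?e) ?u = 0" using m(2) by (simp add: lookup_minus lookup_single_nat)
  have m2: "m - sng ?u ?e + sng ?u ?e = m"
    by (rule poly_mapping_eqI) (use m(2) in \<open>auto simp: lookup_add lookup_minus lookup_single_nat\<close>)
  have "lk ?I (m - sng ?u ?e) = lk ?f m" unfolding Ieq lookup_coeffv using m1 m2 by simp
  then have I0: "?I \<noteq> 0" using m(1) by (auto simp: in_keys_iff)
  have dI: "dvars ?I \<subseteq> dvars ?f - {?u}" unfolding Ieq by (rule dvars_coeffv)
  have "reduced le ?I (C ! i)" if i: "i < length C" for i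
  proof (cases "i = j")
    case True
    have "(fst ?u, snd ?u + s) \<notin> dvars ?I" if "s > 0" for s
      using ar_no_proper_deriv[OF ar j j that] dI by blast
    moreover have "degv ?u ?I = 0" using dI degv_notin by blast
    ultimately show ?thesis using True e by (simp add: reduced_def)
  next
    case False
    have r: "reduced le ?f (C ! i)" using ar_reduced[OF ar j i] False by simp
    have "degv (leader le (C ! i)) ?I \<le> degv (leader le (C ! i)) ?f" unfolding Ieq by (rule degv_coeffv)
    then show ?thesis using r dI by (auto simp: reduced_def)
  qed
  then show False using key[OF cs IP I0] by blast
qed

lemma initials_notin:
  assumes cs: "char_set le P C"
  shows "initial le ` set (take i C) \<inter> P = {}"
proof -
  have "initial le c \<notin> P" if cin: "c \<in> set (take i C)" for c
  proof -
    obtain j where "j < length (take i C)" "c = take i C ! j" using cin by (auto simp: in_set_conv_nth)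
    then have "j < length C" "c = C ! j" by auto
    then show ?thesis using initial_notin[OF cs] by simp
  qed
  then show ?thesis by blast
qed

lemma reduced_of_vars:
  assumes ar: "autoreduced le C" and k: "k \<le> length C" and a: "dvars a \<subseteq> Vs C k"
    and m: "m < length C" and dg: "m < k \<Longrightarrow> degv (leader le (C ! m)) a < degv (leader le (C ! m)) (C ! m)"
  shows "reduced le a (C ! m)"
proof -
  have "(fst (leader le (C ! m)), snd (leader le (C ! m)) + s) \<notin> dvars a" if s: "s > 0" for s
  proof
    assume h: "(fst (leader le (C ! m)), snd (leader le (C ! m)) + s) \<in> dvars a"
    then obtain x where x: "x < k" "(fst (leader le (C ! m)), snd (leader le (C ! m)) + s) \<in> dvars (C ! x)"
      using a by (auto simp: Vs_def)
    then show False using ar_no_proper_deriv[OF ar _ m s, of x] k by simp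
  qed
  moreover have "degv (leader le (C ! m)) a < degv (leader le (C ! m)) (C ! m)"
  proof (cases "m < k")
    case True then show ?thesis using dg by simp
  next
    case False
    have "leader le (C ! m) \<notin> dvars a"
    proof
      assume "leader le (C ! m) \<in> dvars a"
      then obtain x where x: "x < k" "leader le (C ! m) \<in> dvars (C ! x)" using a by (auto simp: Vs_def)
      have "x < m" using x(1) False by simp
      then show False using ar_var_lt[OF ar _ m x(2)] by simp
    qed
    then have "degv (leader le (C ! m)) a = 0" by (rule degv_notin)
    then show ?thesis using leader_deg_pos[OF ar_nonconst[OF ar m]] by simp
  qed
  ultimately show ?thesis by (simp add: reduced_def)
qed

lemma sat_eq:
  assumes cs: "char_set le P C" and i: "i \<le> length C"
  shows "saturation_in (Vs C i) (set (take i C)) (initial le ` set (take i C)) = P \<inter> polys_in (Vs C i)"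
proof
  have ar: "autoreduced le C" and sC: "set C \<subseteq> P" using cs by (auto simp: char_set_def)
  have tP: "set (take i C) \<subseteq> P" using set_take_subset[of i C] sC by (rule order_trans)
  show "saturation_in (Vs C i) (set (take i C)) (initial le ` set (take i C)) \<subseteq> P \<inter> polys_in (Vs C i)"
  proof
    fix a assume "a \<in> saturation_in (Vs C i) (set (take i C)) (initial le ` set (take i C))"
    then obtain s where a: "a \<in> polys_in (Vs C i)" "s \<in> mult_closure (initial le ` set (take i C))"
      "s * a \<in> ideal_in (Vs C i) (set (take i C))" by (auto simp: saturation_in_def)
    have "s * a \<in> P" using a(3) ideal_in_P[OF tP] by blast
    moreover have "s \<notin> P" using mult_closure_notin[OF initials_notin[OF cs] a(2)] .
    ultimately have "a \<in> P" using P_prime by blast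
    then show "a \<in> P \<inter> polys_in (Vs C i)" using a(1) by blast
  qed
next
  have ar: "autoreduced le C" and sC: "set C \<subseteq> P" using cs by (auto simp: char_set_def)
  have tP: "set (take i C) \<subseteq> P" using set_take_subset[of i C] sC by (rule order_trans)
  show "P \<inter> polys_in (Vs C i) \<subseteq> saturation_in (Vs C i) (set (take i C)) (initial le ` set (take i C))"
  proof
    fix a assume aa: "a \<in> P \<inter> polys_in (Vs C i)"
    have aV: "a \<in> polys_in (Vs C i)" using aa by blast
    obtain a' s where a': "a' \<in> polys_in (Vs C i)" "s \<in> mult_closure (initial le ` set (take i C))"
      "s * a - a' \<in> ideal_in (Vs C i) (set (take i C))"
      "\<forall>j<i. degv (leader le (C ! j)) a' < degv (leader le (C ! j)) (C ! j)"
      using pr[OF ar i order_refl aV] by blast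
    have "s * a \<in> P" using aa P_mult by blast
    moreover have "s * a - a' \<in> P" using a'(3) ideal_in_P[OF tP] by blast
    ultimately have a'P: "a' \<in> P" using P_diff_iff by blast
    have "a' = 0"
    proof (rule ccontr)
      assume "a' \<noteq> 0"
      moreover have "\<forall>m<length C. reduced le a' (C ! m)"
      proof (intro allI impI)
        fix m assume m: "m < length C"
        have dv: "dvars a' \<subseteq> Vs C i" using a'(1) by (simp add: polys_in_def)
        show "reduced le a' (C ! m)" by (rule reduced_of_vars[OF ar i dv m]) (use a'(4) in blast)
      qed
      ultimately show False using key[OF cs a'P] by blast
    qed
    then have "s * a \<in> ideal_in (Vs C i) (set (take i C))" using a'(3) by simp
    then show "a \<in> saturation_in (Vs C i) (set (take i C)) (initial le ` set (take i C))"
      unfolding saturation_in_def using aV a'(2) by blast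
  qed
qed

lemma primeV_P: "primeV V (P \<inter> polys_in V)"
  unfolding primeV_def idealV_def using P_zero P_add P_mult P_prime
  by (auto intro: polys_in_add polys_in_mult)

lemma prime_ideal_in_P: "prime_ideal_in V (P \<inter> polys_in V)"
  unfolding prime_ideal_in_def using P_zero P_add P_mult P_prime P_one
  by (auto intro: polys_in_add polys_in_mult)

end

section \<open>Degrees over the coefficient ring\<close>

definition mdeg :: "('a \<Rightarrow>\<^sub>0 nat) \<Rightarrow> nat" where
  "mdeg a = sum (lk a) (ks a)"

lemma mdeg_add: "mdeg (a + b) = mdeg a + mdeg b"
proof -
  have "mdeg (a + b) = (\<Sum>v\<in>ks a \<union> ks b. lk a v + lk b v)"
    by (simp add: mdeg_def keys_add_nat lookup_add)
  also have "\<dots> = (\<Sum>v\<in>ks a \<union> ks b. lk a v) + (\<Sum>v\<in>ks a \<union> ks b. lk b v)"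
    by (simp add: sum.distrib)
  also have "(\<Sum>v\<in>ks a \<union> ks b. lk a v) = mdeg a"
    unfolding mdeg_def by (rule sum.mono_neutral_right) (auto simp: in_keys_iff)
  also have "(\<Sum>v\<in>ks a \<union> ks b. lk b v) = mdeg b"
    unfolding mdeg_def by (rule sum.mono_neutral_right) (auto simp: in_keys_iff)
  finally show ?thesis .
qed

lemma additive_mdeg: "additive mdeg" by (simp add: additive_def mdeg_add)

lemma additive_lk: "additive (\<lambda>a. lk a u)" by (simp add: additive_def lookup_add)

lemma mdeg_0_iff: "mdeg a = 0 \<longleftrightarrow> a = 0"
proof
  assume "mdeg a = 0"
  then have "\<forall>v\<in>ks a. lk a v = 0" by (simp add: mdeg_def)
  then show "a = 0" by (auto simp: in_keys_iff poly_mapping_eq_iff fun_eq_iff)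
qed (simp add: mdeg_def)

lemma mdeg_ge_lk: "lk a v \<le> mdeg a"
proof (cases "v \<in> ks a")
  case True
  then show ?thesis unfolding mdeg_def by (rule member_le_sum) auto
qed (simp add: in_keys_iff)

definition Ktot :: "('j \<times> nat) set \<Rightarrow> ('j, 'k::comm_ring_1) dpoly set \<Rightarrow> ('j, 'k) dpoly \<Rightarrow> nat" where
  "Ktot V J p = Max (insert 0 (mdeg ` Ksupp V J p))"

lemma Ktot_ge: "idealV V J \<Longrightarrow> g \<in> Ksupp V J p \<Longrightarrow> mdeg g \<le> Ktot V J p"
  unfolding Ktot_def by (rule Max_ge) (auto intro: Ksupp_finite)

lemma Ktot_le: "idealV V J \<Longrightarrow> (\<And>g. g \<in> Ksupp V J p \<Longrightarrow> mdeg g \<le> n) \<Longrightarrow> Ktot V J p \<le> n"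
  unfolding Ktot_def by (subst Max_le_iff) (auto intro: Ksupp_finite)

lemma Ktot_attained:
  assumes "idealV V J" "Ksupp V J p \<noteq> {}"
  shows "\<exists>g\<in>Ksupp V J p. mdeg g = Ktot V J p"
proof -
  have "Ktot V J p \<in> insert 0 (mdeg ` Ksupp V J p)"
    unfolding Ktot_def by (rule Max_in) (auto intro: Ksupp_finite[OF assms(1)])
  moreover obtain g where "g \<in> Ksupp V J p" using assms(2) by blast
  moreover have "mdeg g \<le> Ktot V J p" using Ktot_ge[OF assms(1) \<open>g \<in> Ksupp V J p\<close>] .
  ultimately show ?thesis by (cases "Ktot V J p = 0") auto
qed

lemma Ksupp_cong_eq: "Ksupp V J p = Ksupp V J q \<Longrightarrow> Ktot V J p = Ktot V J q"
  by (simp add: Ktot_def)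

lemma frac_unit_char:
  assumes I: "idealV V J" and VU: "V \<inter> U = {}" and f: "f \<in> polys_in (V \<union> U)"
  shows "frac_unit V J U f \<longleftrightarrow> Ksupp V J f \<noteq> {} \<and> Ksupp V J f \<subseteq> {0}"
proof
  assume fu: "frac_unit V J U f"
  then have "f \<notin> ideal_in (V \<union> U) J" by (simp add: frac_unit_def)
  then have ne: "Ksupp V J f \<noteq> {}" using ideal_in_char[OF I, of "V \<union> U"] f by (auto simp: JE_iff_Ksupp)
  obtain g where g: "g \<in> polys_in V" "f - g \<in> ideal_in (V \<union> U) J" using fu by (auto simp: frac_unit_def)
  have "JE V J (f - g)" using g(2) ideal_in_char[OF I, of "V \<union> U"] by simp
  then have eq: "Ksupp V J f = Ksupp V J g" by (rule Ksupp_cong[OF I])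
  have "Ksupp V J g \<subseteq> {0}"
  proof
    fix c assume c: "c \<in> Ksupp V J g"
    then have cV: "ks c \<inter> V = {}" and cJ: "kcoef V g c \<notin> J" by (auto simp: Ksupp_def)
    show "c \<in> {0}"
    proof (rule ccontr)
      assume "c \<notin> {0}"
      then have "kcoef V g c = 0" using kcoef_Vpoly[OF g(1) cV] by simp
      then show False using cJ idealV_0[OF I] by simp
    qed
  qed
  then show "Ksupp V J f \<noteq> {} \<and> Ksupp V J f \<subseteq> {0}" using ne eq by simp
next
  assume h: "Ksupp V J f \<noteq> {} \<and> Ksupp V J f \<subseteq> {0}"
  have "f \<notin> ideal_in (V \<union> U) J" using h ideal_in_char[OF I, of "V \<union> U"] by (auto simp: JE_iff_Ksupp)
  moreover have "\<exists>g \<in> polys_in V. f - g \<in> ideal_in (V \<union> U) J"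
  proof (intro bexI)
    let ?g = "kcoef V f 0"
    show "?g \<in> polys_in V" by (rule kcoef_polys_in)
    have "JE V J (f - ?g)"
      unfolding JE_def
    proof (intro allI impI)
      fix c :: "_ \<Rightarrow>\<^sub>0 nat" assume cV: "ks c \<inter> V = {}"
      have kg: "kcoef V ?g c = (if c = 0 then ?g else 0)" by (rule kcoef_Vpoly[OF kcoef_polys_in cV])
      show "kcoef V (f - ?g) c \<in> J"
      proof (cases "c = 0")
        case True then show ?thesis using kg idealV_0[OF I] by (simp add: kcoef_diff)
      next
        case False
        then have "c \<notin> Ksupp V J f" using h by auto
        then have "kcoef V f c \<in> J" using cV by (simp add: Ksupp_def)
        then show ?thesis using kg False by (simp add: kcoef_diff)
      qed
    qed
    moreover have "f - ?g \<in> polys_in (V \<union> U)"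
      using f polys_in_mono[OF kcoef_polys_in[of V f 0]] by (auto intro: polys_in_diff)
    ultimately show "f - ?g \<in> ideal_in (V \<union> U) J" using ideal_in_char[OF I, of "V \<union> U"] by simp
  qed
  ultimately show "frac_unit V J U f" by (simp add: frac_unit_def)
qed

lemma kcoef_coeffv:
  assumes u: "u \<notin> V"
  shows "kcoef V (coeffv u d f) c = (if lk c u = 0 then kcoef V f (c + sng u d) else 0)"
proof (rule poly_mapping_eqI)
  fix m
  show "lk (kcoef V (coeffv u d f) c) m = lk (if lk c u = 0 then kcoef V f (c + sng u d) else 0) m"
  proof (cases "ks m \<subseteq> V")
    case True
    then have "lk m u = 0" using u by (auto simp: in_keys_iff)
    then show ?thesis using True by (simp add: lookup_kcoef lookup_coeffv lookup_add add.assoc)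
  qed (simp add: lookup_kcoef)
qed

lemma kcoef_pderivv:
  assumes v: "v \<notin> V"
  shows "kcoef V (pderivv v f) c = of_nat (lk c v + 1) * kcoef V f (c + sng v 1)"
proof (rule poly_mapping_eqI)
  fix m
  show "lk (kcoef V (pderivv v f) c) m = lk (of_nat (lk c v + 1) * kcoef V f (c + sng v 1)) m"
  proof (cases "ks m \<subseteq> V")
    case True
    then have "lk m v = 0" using v by (auto simp: in_keys_iff)
    then show ?thesis using True
      by (simp add: lookup_kcoef lookup_pderivv lookup_add add.assoc of_nat_single lookup_single_mult)
  next
    case False
    then show ?thesis by (simp add: lookup_kcoef of_nat_single lookup_single_mult)
  qed
qed

definition jred :: "('j \<times> nat) set \<Rightarrow> ('j, 'k::comm_ring_1) dpoly set \<Rightarrow> ('j, 'k) dpoly \<Rightarrow> ('j, 'k) dpoly" where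
  "jred V J p = filtN V (\<lambda>c. kcoef V p c \<notin> J) p"

lemma Ksupp_jred: "0 \<in> J \<Longrightarrow> Ksupp V J (jred V J p) = Ksupp V J p"
  unfolding Ksupp_def jred_def by (auto simp: kcoef_filtN)

lemma JE_jred: assumes I: "idealV V J" shows "JE V J (p - jred V J p)"
proof -
  have e: "p - jred V J p = filtN V (\<lambda>c. \<not> kcoef V p c \<notin> J) p"
    using filtN_split[of V "\<lambda>c. kcoef V p c \<notin> J" p] unfolding jred_def by (simp add: algebra_simps)
  show ?thesis unfolding JE_def e by (auto simp: kcoef_filtN idealV_0[OF I])
qed

lemma keys_jred: "m \<in> ks (jred V J p) \<Longrightarrow> m \<in> ks p \<and> kcoef V p (offV V m) \<notin> J"
  unfolding jred_def by (rule keys_filtN)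

lemma dvars_jred: "dvars (jred V J p) \<subseteq> dvars p"
  unfolding jred_def by (rule dvars_filtN)

lemma degv_jred: "degv w (jred V J p) \<le> degv w p"
  by (rule degv_le) (use keys_jred degv_ge in blast)

lemma keys_jred_Ksupp: "m \<in> ks (jred V J p) \<Longrightarrow> offV V m \<in> Ksupp V J p"
  using keys_jred[of m V J p] by (auto simp: Ksupp_def keys_offV)

lemma card_jred:
  assumes "m \<in> ks p" "kcoef V p (offV V m) \<in> J"
  shows "card (ks (jred V J p)) < card (ks p)"
proof (rule psubset_card_mono)
  show "finite (ks p)" by simp
  show "ks (jred V J p) \<subset> ks p" using keys_jred assms by blast
qed

lemma Ksupp_zero: "idealV V J \<Longrightarrow> Ksupp V J 0 = {}"
  by (simp add: Ksupp_def idealV_0)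

lemma lk_offV: "u \<notin> V \<Longrightarrow> lk (offV V m) u = lk m u"
  by (simp add: lookup_offV)

lemma Ksupp_u_bound:
  assumes I: "idealV V J" and u: "u \<notin> V" and g: "g \<in> Ksupp V J p"
  shows "lk g u \<le> degv u p"
proof -
  obtain m where "m \<in> ks p" "g = offV V m" using Ksupp_sub[OF I] g by blast
  then show ?thesis using lk_offV[OF u] degv_ge by metis
qed

lemma JE_P_sub:
  assumes "idealV V J" "J \<subseteq> P'" "JE V J p" "0 \<in> P'" "\<And>a b. a \<in> P' \<Longrightarrow> b \<in> P' \<Longrightarrow> a + b \<in> P'"
    "\<And>a r. a \<in> P' \<Longrightarrow> r * a \<in> P'"
  shows "p \<in> P'"
proof -
  have "p \<in> ideal_in UNIV J" using ideal_in_char[OF assms(1), of UNIV] assms(3) by (simp add: polys_in_def)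
  moreover have "ideal_in UNIV J \<subseteq> P'" by (rule ideal_in_sub_ideal) (use assms in auto)
  ultimately show ?thesis by blast
qed

context pctx
begin

abbreviation JJ where "JJ V \<equiv> P \<inter> polys_in V"

lemma idealV_JJ: "idealV V (JJ V)" using primeV_P by (simp add: primeV_def)

lemma zero_JJ: "0 \<in> JJ V" using P_zero by simp

lemma JE_in_P: "JE V (JJ V) p \<Longrightarrow> p \<in> P"
  by (rule JE_P_sub[OF idealV_JJ]) (auto intro: P_zero P_add P_mult)

definition mu :: "('j, 'k) dpoly list \<Rightarrow> (nat \<times> nat) list" where
  "mu C = map (\<lambda>i. (Ktot (Vs C i) (JJ (Vs C i)) (C ! i), card (ks (C ! i)))) [0..<length C]"

definition Rmu where "Rmu = lenlex (less_than <*lex*> less_than)"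

lemma exists_good: "\<exists>C. char_set le P C \<and> (\<forall>C'. char_set le P C' \<longrightarrow> (mu C', mu C) \<notin> Rmu)"
proof -
  obtain C0 where C0: "char_set le P C0" using exists_char_set by blast
  have wfR: "wf (inv_image Rmu mu)" unfolding Rmu_def by (intro wf_inv_image wf_lenlex wf_lex_prod wf_less_than)
  obtain C where C: "C \<in> {C. char_set le P C}" "\<And>y. (y, C) \<in> inv_image Rmu mu \<Longrightarrow> y \<notin> {C. char_set le P C}"
    using wfE_min[OF wfR, of C0 "{C. char_set le P C}"] C0 by blast
  then show ?thesis by auto
qed

lemma Vs_update: "j \<le> i \<Longrightarrow> Vs (C[i := a]) j = Vs C j"
  by (auto simp: Vs_def nth_list_update)

lemma mu_less:
  assumes i: "i < length C"
    and lt: "((Ktot (Vs C i) (JJ (Vs C i)) a, card (ks a)), (Ktot (Vs C i) (JJ (Vs C i)) (C ! i), card (ks (C ! i)))) \<in> less_than <*lex*> less_than"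
  shows "(mu (C[i := a]), mu C) \<in> Rmu"
proof -
  let ?C = "C[i := a]"
  have len: "length (mu ?C) = length (mu C)" by (simp add: mu_def)
  have "(mu ?C, mu C) \<in> lex (less_than <*lex*> less_than)"
  proof (rule lex_at)
    show "length (mu ?C) = length (mu C)" by (rule len)
    show "i < length (mu ?C)" using i by (simp add: mu_def)
    show "take i (mu ?C) = take i (mu C)"
    proof (rule nth_equalityI)
      show "length (take i (mu ?C)) = length (take i (mu C))" using len by simp
      fix j assume "j < length (take i (mu ?C))"
      then have j: "j < i" "j < length C" by (auto simp: mu_def)
      then show "take i (mu ?C) ! j = take i (mu C) ! j"
        using Vs_update[of j i C a] by (simp add: mu_def nth_list_update)
    qed
    show "(mu ?C ! i, mu C ! i) \<in> less_than <*lex*> less_than"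
      using lt i Vs_update[of i i C a] by (simp add: mu_def)
  qed
  then show ?thesis unfolding Rmu_def lenlex_conv using len by simp
qed

end

locale good = pctx le P for le :: "'j::finite \<times> nat \<Rightarrow> 'j \<times> nat \<Rightarrow> bool" and P :: "('j, 'k::field_char_0) dpoly set" +
  fixes C :: "('j, 'k) dpoly list"
  assumes cs: "char_set le P C"
    and mn: "\<And>C'. char_set le P C' \<Longrightarrow> (mu C', mu C) \<notin> Rmu"
begin

lemma ar: "autoreduced le C" using cs by (simp add: char_set_def)
lemma sC: "set C \<subseteq> P" using cs by (simp add: char_set_def)
lemma CP: "i < length C \<Longrightarrow> C ! i \<in> P" using sC by auto

lemma imp:
  assumes i: "i < length C" and aP: "a \<in> P" and aW: "a \<in> polys_in (Vs C (Suc i))"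
    and dg: "\<forall>j<i. degv (leader le (C ! j)) a < degv (leader le (C ! j)) (C ! j)"
    and ks: "Ksupp (Vs C i) (JJ (Vs C i)) a \<noteq> {}"
    and du: "degv (leader le (C ! i)) a \<le> degv (leader le (C ! i)) (C ! i)"
    and lt: "((Ktot (Vs C i) (JJ (Vs C i)) a, card (ks a)), (Ktot (Vs C i) (JJ (Vs C i)) (C ! i), card (ks (C ! i)))) \<in> less_than <*lex*> less_than"
  shows False
proof -
  let ?u = "leader le (C ! i)" let ?e = "degv ?u (C ! i)"
  have a0: "a \<noteq> 0" using ks Ksupp_zero[OF idealV_JJ] by auto
  have Si: "Suc i \<le> length C" using i by simp
  have dva: "dvars a \<subseteq> Vs C (Suc i)" using aW by (simp add: polys_in_def)
  have redo: "reduced le a (C ! m)" if m: "m < length C" "m \<noteq> i" for m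
    by (rule reduced_of_vars[OF ar Si dva m(1)]) (use dg m in auto)
  have "\<not> reduced le a (C ! i)"
  proof
    assume "reduced le a (C ! i)"
    then have "\<forall>m<length C. reduced le a (C ! m)" using redo by blast
    then show False using key[OF cs aP a0] by blast
  qed
  moreover have "(fst ?u, snd ?u + s) \<notin> dvars a" if s: "s > 0" for s
  proof
    assume h: "(fst ?u, snd ?u + s) \<in> dvars a"
    then obtain x where x: "x < Suc i" "(fst ?u, snd ?u + s) \<in> dvars (C ! x)"
      using dva by (auto simp: Vs_def)
    then show False using ar_no_proper_deriv[OF ar _ i s, of x] i by simp
  qed
  ultimately have "\<not> degv ?u a < ?e" by (simp add: reduced_def)
  then have deq: "degv ?u a = ?e" using du by simp
  have e0: "?e > 0" using leader_deg_pos[OF ar_nonconst[OF ar i]] .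
  have ua: "?u \<in> dvars a" using deq e0 degv_pos_iff by metis
  have nca: "nonconst a" using ua by (auto simp: nonconst_def)
  have allle: "\<forall>v\<in>dvars a. le v ?u"
  proof
    fix v assume "v \<in> dvars a"
    then obtain x where x: "x < Suc i" "v \<in> dvars (C ! x)" using dva by (auto simp: Vs_def)
    show "le v ?u"
    proof (cases "x = i")
      case True then show ?thesis using ar_var_below[OF ar i] x by simp
    next
      case False then show ?thesis using ar_var_lt[OF ar _ i x(2)] x(1) by simp
    qed
  qed
  have la: "leader le a = ?u" by (rule leader_unique[OF ua allle])
  have rka: "rk a = rk (C ! i)" using la deq by (simp add: rk_eq_iff)
  have "char_set le P (C[i := a])"
    by (rule repl[OF cs i aP nca rka]) (use redo in auto)
  moreover have "(mu (C[i := a]), mu C) \<in> Rmu" by (rule mu_less[OF i lt])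
  ultimately show False using mn by blast
qed

lemma Ksupp_C_ne:
  assumes i: "i < length C"
  shows "Ksupp (Vs C i) (JJ (Vs C i)) (C ! i) \<noteq> {}"
proof
  assume h: "Ksupp (Vs C i) (JJ (Vs C i)) (C ! i) = {}"
  let ?V = "Vs C i" let ?u = "leader le (C ! i)" let ?e = "degv ?u (C ! i)"
  have u: "?u \<notin> ?V" by (rule leader_notin_Vs[OF ar i])
  have "JE ?V (JJ ?V) (initial le (C ! i))"
    unfolding JE_def
  proof (intro allI impI)
    fix c :: "_ \<Rightarrow>\<^sub>0 nat" assume c: "ks c \<inter> ?V = {}"
    show "kcoef ?V (initial le (C ! i)) c \<in> JJ ?V"
    proof (cases "lk c ?u = 0")
      case True
      have c2: "ks (c + sng ?u ?e) \<inter> ?V = {}" using c u keys_add_nat[of c "sng ?u ?e"] by auto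
      have "kcoef ?V (C ! i) (c + sng ?u ?e) \<in> JJ ?V" using h c2 by (auto simp: Ksupp_def)
      then show ?thesis using True by (simp add: initial_def kcoef_coeffv[OF u])
    next
      case False
      then show ?thesis using P_zero by (simp add: initial_def kcoef_coeffv[OF u])
    qed
  qed
  then have "initial le (C ! i) \<in> P" by (rule JE_in_P)
  then show False using initial_notin[OF cs i] by simp
qed

lemma C_jreduced:
  assumes i: "i < length C" and m: "m \<in> ks (C ! i)"
  shows "kcoef (Vs C i) (C ! i) (offV (Vs C i) m) \<notin> JJ (Vs C i)"
proof
  assume bad: "kcoef (Vs C i) (C ! i) (offV (Vs C i) m) \<in> JJ (Vs C i)"
  let ?V = "Vs C i" let ?a = "jred ?V (JJ ?V) (C ! i)"
  have aP: "?a \<in> P"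
  proof -
    have "C ! i - ?a \<in> P" by (rule JE_in_P[OF JE_jred[OF idealV_JJ]])
    then show ?thesis using CP[OF i] P_diff_iff by blast
  qed
  have aW: "?a \<in> polys_in (Vs C (Suc i))" using dvars_jred[of ?V "JJ ?V" "C ! i"] Vs_Suc[of C i]
    by (auto simp: polys_in_def)
  have dg: "\<forall>j<i. degv (leader le (C ! j)) ?a < degv (leader le (C ! j)) (C ! j)"
  proof (intro allI impI)
    fix j assume j: "j < i"
    have "reduced le (C ! i) (C ! j)" using ar_reduced[OF ar i] j i by simp
    then have "degv (leader le (C ! j)) (C ! i) < degv (leader le (C ! j)) (C ! j)" by (simp add: reduced_def)
    then show "degv (leader le (C ! j)) ?a < degv (leader le (C ! j)) (C ! j)"
      using degv_jred[of "leader le (C ! j)" ?V "JJ ?V" "C ! i"] by simp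
  qed
  have ks: "Ksupp ?V (JJ ?V) ?a \<noteq> {}" using Ksupp_C_ne[OF i] by (simp add: Ksupp_jred[OF zero_JJ])
  have du: "degv (leader le (C ! i)) ?a \<le> degv (leader le (C ! i)) (C ! i)" by (rule degv_jred)
  have "Ktot ?V (JJ ?V) ?a = Ktot ?V (JJ ?V) (C ! i)" by (rule Ksupp_cong_eq) (simp add: Ksupp_jred[OF zero_JJ])
  moreover have "card (ks ?a) < card (ks (C ! i))" by (rule card_jred[OF m bad])
  ultimately have lt: "((Ktot ?V (JJ ?V) ?a, card (ks ?a)), (Ktot ?V (JJ ?V) (C ! i), card (ks (C ! i)))) \<in> less_than <*lex*> less_than"
    by simp
  show False by (rule imp[OF i aP aW dg ks du lt])
qed

lemma ri:
  assumes i: "i < length C" and gP: "g \<in> P" and gW: "g \<in> polys_in (Vs C (Suc i))"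
    and ks: "Ksupp (Vs C i) (JJ (Vs C i)) g \<noteq> {}"
    and ub: "\<forall>c\<in>Ksupp (Vs C i) (JJ (Vs C i)) g. lk c (leader le (C ! i)) \<le> degv (leader le (C ! i)) (C ! i)"
    and lt: "Ktot (Vs C i) (JJ (Vs C i)) g < Ktot (Vs C i) (JJ (Vs C i)) (C ! i)"
  shows False
proof -
  let ?V = "Vs C i" let ?J = "JJ ?V" let ?W = "Vs C (Suc i)" let ?u = "leader le (C ! i)"
  have il: "i \<le> length C" using i by simp
  have VW: "?V \<subseteq> ?W" by (rule Vs_mono) simp
  obtain a' s where a': "a' \<in> polys_in ?W" "s \<in> mult_closure (initial le ` set (take i C))"
    "s * g - a' \<in> ideal_in ?W (set (take i C))"
    "\<forall>j<i. degv (leader le (C ! j)) a' < degv (leader le (C ! j)) (C ! j)"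
    using pr[OF ar il VW gW] by blast
  have sV: "s \<in> polys_in ?V" by (rule mult_closure_polys[OF initials_polys a'(2)])
  have sP: "s \<notin> P" by (rule mult_closure_notin[OF initials_notin[OF cs] a'(2)])
  have tJ: "set (take i C) \<subseteq> ?J" using take_polys[of i C] set_take_subset[of i C] sC by blast
  have "s * g - a' \<in> ideal_in ?W ?J" by (rule ideal_in_mono[OF tJ a'(3)])
  then have JEd: "JE ?V ?J (s * g - a')" using ideal_in_char[OF idealV_JJ VW] by simp
  have KS: "Ksupp ?V ?J a' = Ksupp ?V ?J g"
  proof -
    have "Ksupp ?V ?J (s * g) = Ksupp ?V ?J a'" by (rule Ksupp_cong[OF idealV_JJ JEd])
    moreover have "Ksupp ?V ?J (s * g) = Ksupp ?V ?J g" by (rule Ksupp_Vmult[OF primeV_P sV]) (use sP in blast)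
    ultimately show ?thesis by simp
  qed
  have a'P: "a' \<in> P"
  proof -
    have "s * g \<in> P" using gP P_mult by blast
    moreover have "s * g - a' \<in> P" by (rule JE_in_P[OF JEd])
    ultimately show ?thesis using P_diff_iff by blast
  qed
  let ?a = "jred ?V ?J a'"
  have aP: "?a \<in> P"
  proof -
    have "a' - ?a \<in> P" by (rule JE_in_P[OF JE_jred[OF idealV_JJ]])
    then show ?thesis using a'P P_diff_iff by blast
  qed
  have aW: "?a \<in> polys_in ?W" using dvars_jred[of ?V ?J a'] a'(1) by (auto simp: polys_in_def)
  have dg: "\<forall>j<i. degv (leader le (C ! j)) ?a < degv (leader le (C ! j)) (C ! j)"
    using a'(4) degv_jred[of _ ?V ?J a'] le_less_trans by blast
  have KSa: "Ksupp ?V ?J ?a = Ksupp ?V ?J g" using KS by (simp add: Ksupp_jred[OF zero_JJ])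
  have uV: "?u \<notin> ?V" by (rule leader_notin_Vs[OF ar i])
  have du: "degv ?u ?a \<le> degv ?u (C ! i)"
  proof (rule degv_le)
    fix m assume m: "m \<in> ks ?a"
    have "offV ?V m \<in> Ksupp ?V ?J a'" by (rule keys_jred_Ksupp[OF m])
    then have "lk (offV ?V m) ?u \<le> degv ?u (C ! i)" using ub KS by blast
    then show "lk m ?u \<le> degv ?u (C ! i)" using lk_offV[OF uV] by simp
  qed
  have "Ktot ?V ?J ?a = Ktot ?V ?J g" by (rule Ksupp_cong_eq[OF KSa])
  then have lt': "((Ktot ?V ?J ?a, card (ks ?a)), (Ktot ?V ?J (C ! i), card (ks (C ! i)))) \<in> less_than <*lex*> less_than"
    using lt by simp
  show False by (rule imp[OF i aP aW dg _ du lt']) (use KSa ks in simp)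
qed

end

lemma mdeg_single1: "mdeg (sng v (1::nat)) = 1"
  by (simp add: mdeg_def)

context good
begin

lemma core:
  assumes i: "i < length C" and gW: "g \<in> polys_in (Vs C (Suc i))" and hW: "h \<in> polys_in (Vs C (Suc i))"
    and gP: "g \<in> P" and eq: "Ksupp (Vs C i) (JJ (Vs C i)) (g * h) = Ksupp (Vs C i) (JJ (Vs C i)) (C ! i)"
    and hne: "Ksupp (Vs C i) (JJ (Vs C i)) h \<noteq> {}"
  shows "Ktot (Vs C i) (JJ (Vs C i)) h = 0"
proof (rule ccontr)
  assume hpos: "Ktot (Vs C i) (JJ (Vs C i)) h \<noteq> 0"
  let ?V = "Vs C i" let ?J = "JJ ?V" let ?u = "leader le (C ! i)" let ?e = "degv ?u (C ! i)"
  have I: "idealV ?V ?J" by (rule idealV_JJ)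
  have KC: "Ksupp ?V ?J (C ! i) \<noteq> {}" by (rule Ksupp_C_ne[OF i])
  have gne: "Ksupp ?V ?J g \<noteq> {}"
  proof
    assume "Ksupp ?V ?J g = {}"
    then have "JE ?V ?J g" by (simp add: JE_iff_Ksupp)
    then have "JE ?V ?J (h * g)" by (rule JE_mult[OF I])
    then have "Ksupp ?V ?J (g * h) = {}" by (simp add: JE_iff_Ksupp mult.commute)
    then show False using eq KC by simp
  qed
  obtain a0 b0 where ab: "a0 \<in> Ksupp ?V ?J g" "b0 \<in> Ksupp ?V ?J h"
    "\<forall>a\<in>Ksupp ?V ?J g. mdeg a \<le> mdeg a0" "\<forall>b\<in>Ksupp ?V ?J h. mdeg b \<le> mdeg b0"
    "a0 + b0 \<in> Ksupp ?V ?J (g * h)"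
    using domain_top[OF primeV_P additive_mdeg gne hne] by blast
  have "Ktot ?V ?J g \<le> mdeg a0" using Ktot_le[OF I, of g "mdeg a0"] ab(3) by blast
  then have tg: "Ktot ?V ?J g = mdeg a0" using Ktot_ge[OF I ab(1)] by (rule order_antisym)
  have "Ktot ?V ?J h \<le> mdeg b0" using Ktot_le[OF I, of h "mdeg b0"] ab(4) by blast
  then have th: "Ktot ?V ?J h = mdeg b0" using Ktot_ge[OF I ab(2)] by (rule order_antisym)
  have "mdeg (a0 + b0) \<le> Ktot ?V ?J (C ! i)" using Ktot_ge[OF I] ab(5) eq by simp
  then have lt: "Ktot ?V ?J g < Ktot ?V ?J (C ! i)" using tg th hpos by (simp add: mdeg_add)
  obtain a1 b1 where ab1: "a1 \<in> Ksupp ?V ?J g" "b1 \<in> Ksupp ?V ?J h"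
    "\<forall>a\<in>Ksupp ?V ?J g. lk a ?u \<le> lk a1 ?u" "a1 + b1 \<in> Ksupp ?V ?J (g * h)"
    using domain_top[OF primeV_P additive_lk gne hne] by blast
  have uV: "?u \<notin> ?V" by (rule leader_notin_Vs[OF ar i])
  have "lk (a1 + b1) ?u \<le> ?e" using Ksupp_u_bound[OF I uV] ab1(4) eq by simp
  then have "lk a1 ?u \<le> ?e" by (simp add: lookup_add)
  then have ub: "\<forall>c\<in>Ksupp ?V ?J g. lk c ?u \<le> ?e" using ab1(3) by (meson order_trans)
  show False by (rule ri[OF i gP gW gne ub lt])
qed

lemma irr:
  assumes i: "i < length C"
  shows "irreducible_over_frac (Vs C i) (JJ (Vs C i)) (dvars (C ! i) - Vs C i) (C ! i)"
proof -
  let ?V = "Vs C i" let ?J = "JJ ?V" let ?U = "dvars (C ! i) - ?V" let ?f = "C ! i"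
  let ?u = "leader le ?f" let ?e = "degv ?u ?f"
  have I: "idealV ?V ?J" by (rule idealV_JJ)
  have VU: "?V \<inter> ?U = {}" by blast
  have VUW: "?V \<union> ?U = Vs C (Suc i)" using Vs_Suc[of C i] by blast
  have fW: "?f \<in> polys_in (?V \<union> ?U)" by (auto simp: polys_in_def)
  have KC: "Ksupp ?V ?J ?f \<noteq> {}" by (rule Ksupp_C_ne[OF i])
  have VsubW: "?V \<subseteq> ?V \<union> ?U" by blast
  have notid: "?f \<notin> ideal_in (?V \<union> ?U) ?J"
    using ideal_in_char[OF I VsubW] KC by (simp add: JE_iff_Ksupp)
  have notfu: "\<not> frac_unit ?V ?J ?U ?f"
  proof
    assume "frac_unit ?V ?J ?U ?f"
    then have sub: "Ksupp ?V ?J ?f \<subseteq> {0}" using frac_unit_char[OF I VU fW] by simp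
    have e0: "?e > 0" using leader_deg_pos[OF ar_nonconst[OF ar i]] .
    obtain m where m: "m \<in> ks ?f" "lk m ?u = ?e" using degv_attained[OF e0] by blast
    have "offV ?V m \<in> Ksupp ?V ?J ?f"
      using C_jreduced[OF i m(1)] by (auto simp: Ksupp_def keys_offV)
    moreover have "lk (offV ?V m) ?u = ?e" using m(2) lk_offV[OF leader_notin_Vs[OF ar i]] by simp
    ultimately show False using sub e0 by auto
  qed
  have fact: "frac_unit ?V ?J ?U g \<or> frac_unit ?V ?J ?U h"
    if g: "g \<in> polys_in (?V \<union> ?U)" and h: "h \<in> polys_in (?V \<union> ?U)" and d: "d \<in> polys_in ?V - ?J"
      and H: "d * ?f - g * h \<in> ideal_in (?V \<union> ?U) ?J" for g h d
  proof (rule ccontr)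
    assume nfu: "\<not> (frac_unit ?V ?J ?U g \<or> frac_unit ?V ?J ?U h)"
    have JEd: "JE ?V ?J (d * ?f - g * h)" using H ideal_in_char[OF I VsubW] by simp
    have "Ksupp ?V ?J (d * ?f) = Ksupp ?V ?J (g * h)" by (rule Ksupp_cong[OF I JEd])
    moreover have "Ksupp ?V ?J (d * ?f) = Ksupp ?V ?J ?f"
      by (rule Ksupp_Vmult[OF primeV_P]) (use d in auto)
    ultimately have eq: "Ksupp ?V ?J (g * h) = Ksupp ?V ?J ?f" by simp
    have "d * ?f \<in> P" using CP[OF i] P_mult by blast
    moreover have "d * ?f - g * h \<in> P" by (rule JE_in_P[OF JEd])
    ultimately have ghP: "g * h \<in> P" using P_diff_iff by blast
    have hne: "Ksupp ?V ?J h \<noteq> {}"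
    proof
      assume "Ksupp ?V ?J h = {}"
      then have "JE ?V ?J (g * h)" using JE_mult[OF I] by (simp add: JE_iff_Ksupp[symmetric])
      then show False using eq KC by (simp add: JE_iff_Ksupp)
    qed
    have gne: "Ksupp ?V ?J g \<noteq> {}"
    proof
      assume "Ksupp ?V ?J g = {}"
      then have "JE ?V ?J (h * g)" using JE_mult[OF I] by (simp add: JE_iff_Ksupp[symmetric])
      then show False using eq KC by (simp add: JE_iff_Ksupp mult.commute)
    qed
    have gW: "g \<in> polys_in (Vs C (Suc i))" using g VUW by simp
    have hW: "h \<in> polys_in (Vs C (Suc i))" using h VUW by simp
    have zero_sub: "Ksupp ?V ?J x \<subseteq> {0}" if "Ktot ?V ?J x = 0" for x
    proof
      fix c assume "c \<in> Ksupp ?V ?J x"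
      then have "mdeg c \<le> 0" using Ktot_ge[OF I] that by fastforce
      then have "mdeg c = 0" by simp
      then have "c = 0" using mdeg_0_iff by blast
      then show "c \<in> {0}" by simp
    qed
    from P_prime[OF ghP] show False
    proof
      assume gP: "g \<in> P"
      have "Ktot ?V ?J h = 0" by (rule core[OF i gW hW gP eq hne])
      then have "frac_unit ?V ?J ?U h" using frac_unit_char[OF I VU h] zero_sub hne by blast
      then show False using nfu by blast
    next
      assume hP: "h \<in> P"
      have eq': "Ksupp ?V ?J (h * g) = Ksupp ?V ?J ?f" using eq by (simp add: mult.commute)
      have "Ktot ?V ?J g = 0" by (rule core[OF i hW gW hP eq' gne])
      then have "frac_unit ?V ?J ?U g" using frac_unit_char[OF I VU g] zero_sub gne by blast
      then show False using nfu by blast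
    qed
  qed
  show ?thesis unfolding irreducible_over_frac_def
    using prime_ideal_in_P VU fW notid notfu fact by blast
qed

end

context pctx
begin

lemma JJ_empty: "JJ {} = {0}" using P_constants by simp

lemma Ksupp_empty: "Ksupp {} (JJ {}) p = ks p"
proof -
  have "kcoef {} p c = 0 \<longleftrightarrow> lk p c = 0" for c
  proof
    assume "kcoef {} p c = 0"
    then have "lk (kcoef {} p c) 0 = 0" by simp
    then show "lk p c = 0" by (simp add: lookup_kcoef)
  next
    assume h: "lk p c = 0"
    show "kcoef {} p c = 0"
    proof (rule poly_mapping_eqI)
      fix m show "lk (kcoef {} p c) m = lk 0 m"
        using h by (auto simp: lookup_kcoef)
    qed
  qed
  note eq = this
  show ?thesis
  proof (rule set_eqI)
    fix c
    have "c \<in> Ksupp {} (JJ {}) p \<longleftrightarrow> kcoef {} p c \<notin> JJ {}" by (simp add: Ksupp_def)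
    also have "\<dots> \<longleftrightarrow> kcoef {} p c \<noteq> 0" unfolding JJ_empty by simp
    also have "\<dots> \<longleftrightarrow> lk p c \<noteq> 0" using eq by simp
    also have "\<dots> \<longleftrightarrow> c \<in> ks p" by (simp add: in_keys_iff)
    finally show "c \<in> Ksupp {} (JJ {}) p \<longleftrightarrow> c \<in> ks p" .
  qed
qed

lemma primeV_empty: "primeV {} (JJ {})" by (rule primeV_P)

lemma dvars_factor:
  fixes a b f :: "('j, 'k) dpoly"
  assumes ab: "a * b = f" and a0: "a \<noteq> 0" and b0: "b \<noteq> 0"
  shows "dvars a \<subseteq> dvars f"
proof
  fix w assume "w \<in> dvars a"
  then obtain m where m: "m \<in> ks a" "w \<in> ks m" by (auto simp: dvars_def)
  have an: "Ksupp {} (JJ {}) a \<noteq> {}" using a0 by (simp add: Ksupp_empty)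
  have bn: "Ksupp {} (JJ {}) b \<noteq> {}" using b0 by (simp add: Ksupp_empty)
  obtain a1 b1 where ab1: "a1 \<in> ks a" "\<forall>x\<in>ks a. lk x w \<le> lk a1 w" "a1 + b1 \<in> ks f"
    using domain_top[OF primeV_empty additive_lk an bn, of w] ab by (auto simp: Ksupp_empty)
  have "lk m w \<le> lk a1 w" using ab1(2) m(1) by blast
  then have "lk a1 w > 0" using m(2) by (auto simp: in_keys_iff)
  then have "w \<in> ks (a1 + b1)" by (simp add: in_keys_iff lookup_add)
  then show "w \<in> dvars f" using ab1(3) by (auto simp: dvars_def)
qed

lemma keys_zero_const:
  assumes "\<forall>c\<in>ks p. c = 0"
  shows "dvars p = {}"
  using assms by (auto simp: dvars_def)

lemma const_unit:
  fixes b :: "('j, 'k) dpoly"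
  assumes "dvars b = {}" "b \<noteq> 0"
  shows "b dvd 1"
proof -
  have e: "b = dConst (lk b 0)" by (rule dconst_eq[OF assms(1)])
  then have c: "lk b 0 \<noteq> 0" using assms(2) dConst_zero by metis
  have "b * dConst (inverse (lk b 0)) = 1"
    by (subst e) (simp add: dConst_mult c dConst_one)
  then show ?thesis by (metis dvdI)
qed

lemma one_ne_zero_dpoly: "(1 :: ('j, 'k) dpoly) \<noteq> 0"
proof
  assume "(1 :: ('j, 'k) dpoly) = 0"
  then have "lk (1 :: ('j, 'k) dpoly) 0 = lk 0 0" by simp
  then show False by simp
qed

end

context good
begin

lemma Ktot_empty_zero:
  assumes "Ktot {} (JJ {}) p = 0"
  shows "dvars p = {}"
proof -
  have "c = 0" if c: "c \<in> ks p" for c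
  proof -
    have "c \<in> Ksupp {} (JJ {}) p" using c by (simp add: Ksupp_empty)
    then have "mdeg c \<le> 0" using Ktot_ge[OF idealV_JJ] assms by fastforce
    then have "mdeg c = 0" by simp
    then show ?thesis using mdeg_0_iff by blast
  qed
  then show ?thesis using keys_zero_const by blast
qed

lemma irr0:
  assumes ne: "C \<noteq> []"
  shows "irreducible (C ! 0)"
proof -
  have i: "0 < length C" using ne by simp
  let ?f = "C ! 0"
  have nc: "nonconst ?f" by (rule ar_nonconst[OF ar i])
  have f0: "?f \<noteq> 0" using nc by (auto simp: nonconst_def)
  have V0: "Vs C 0 = {}" by (rule Vs_0)
  have W0: "Vs C (Suc 0) = dvars ?f" using Vs_Suc[of C 0] V0 by simp
  have ndvd: "\<not> ?f dvd 1"
  proof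
    assume "?f dvd 1"
    then obtain x where x: "1 = ?f * x" by (auto elim: dvdE)
    have x0: "x \<noteq> 0" using x one_ne_zero_dpoly by auto
    have fn: "Ksupp {} (JJ {}) ?f \<noteq> {}" using f0 by (simp add: Ksupp_empty)
    have xn: "Ksupp {} (JJ {}) x \<noteq> {}" using x0 by (simp add: Ksupp_empty)
    obtain a1 b1 where ab1: "a1 \<in> ks ?f" "\<forall>y\<in>ks ?f. mdeg y \<le> mdeg a1" "a1 + b1 \<in> ks (1 :: ('j, 'k) dpoly)"
      using domain_top[OF primeV_empty additive_mdeg fn xn] x by (auto simp: Ksupp_empty)
    have "a1 + b1 = 0" using ab1(3) by (simp split: if_splits)
    moreover have "mdeg (0 :: 'j \<times> nat \<Rightarrow>\<^sub>0 nat) = 0" by (simp add: mdeg_def)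
    ultimately have "mdeg a1 = 0" using mdeg_add[of a1 b1] by simp
    then have "\<forall>y\<in>ks ?f. y = 0" using ab1(2) mdeg_0_iff by (metis le_zero_eq)
    then have "dvars ?f = {}" by (rule keys_zero_const)
    then show False using nc by (simp add: nonconst_def)
  qed
  have fac: "a dvd 1 \<or> b dvd 1" if ab: "?f = a * b" for a b
  proof -
    have a0: "a \<noteq> 0" and b0: "b \<noteq> 0" using ab f0 by auto
    have aW: "a \<in> polys_in (Vs C (Suc 0))" using dvars_factor[OF ab[symmetric] a0 b0] W0 by (simp add: polys_in_def)
    have bW: "b \<in> polys_in (Vs C (Suc 0))"
      using dvars_factor[of b a ?f] ab b0 a0 W0 by (simp add: polys_in_def mult.commute)
    have "a * b \<in> P" using CP[OF i] ab by simp
    then show ?thesis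
    proof (rule P_prime[THEN disjE])
      assume aP: "a \<in> P"
      have eq: "Ksupp (Vs C 0) (JJ (Vs C 0)) (a * b) = Ksupp (Vs C 0) (JJ (Vs C 0)) (C ! 0)" using ab by simp
      have bn: "Ksupp (Vs C 0) (JJ (Vs C 0)) b \<noteq> {}" using b0 V0 by (simp add: Ksupp_empty)
      have "Ktot (Vs C 0) (JJ (Vs C 0)) b = 0" by (rule core[OF i aW bW aP eq bn])
      then have "dvars b = {}" using V0 Ktot_empty_zero by simp
      then show ?thesis using const_unit b0 by blast
    next
      assume bP: "b \<in> P"
      have eq: "Ksupp (Vs C 0) (JJ (Vs C 0)) (b * a) = Ksupp (Vs C 0) (JJ (Vs C 0)) (C ! 0)" using ab by (simp add: mult.commute)
      have an: "Ksupp (Vs C 0) (JJ (Vs C 0)) a \<noteq> {}" using a0 V0 by (simp add: Ksupp_empty)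
      have "Ktot (Vs C 0) (JJ (Vs C 0)) a = 0" by (rule core[OF i bW aW bP eq an])
      then have "dvars a = {}" using V0 Ktot_empty_zero by simp
      then show ?thesis using const_unit a0 by blast
    qed
  qed
  show ?thesis by (rule irreducibleI[OF f0 ndvd fac])
qed

lemma ofnat_J:
  assumes x: "x \<in> polys_in V"
  shows "of_nat (Suc n) * x \<in> JJ V \<longleftrightarrow> x \<in> JJ V"
proof
  have on: "(of_nat (Suc n) :: ('j, 'k) dpoly) = dConst (of_nat (Suc n))"
    by (simp add: dConst_def of_nat_single)
  assume h: "of_nat (Suc n) * x \<in> JJ V"
  have nz: "(of_nat (Suc n) :: 'k) \<noteq> 0" by (rule of_nat_neq_0)
  have inv: "inverse (of_nat (Suc n)) * of_nat (Suc n) = (1::'k)" using nz by (rule left_inverse)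
  have "dConst (inverse (of_nat (Suc n))) * (of_nat (Suc n) * x) = x"
    unfolding on mult.assoc[symmetric] dConst_mult inv dConst_one by (rule mult_1_left)
  moreover have "dConst (inverse (of_nat (Suc n))) * (of_nat (Suc n) * x) \<in> P" using h P_mult by blast
  ultimately show "x \<in> JJ V" using x by simp
next
  assume "x \<in> JJ V"
  moreover have "(of_nat (Suc n) :: ('j, 'k) dpoly) \<in> polys_in V"
    by (simp add: polys_in_def dvars_def of_nat_single)
  ultimately show "of_nat (Suc n) * x \<in> JJ V" using P_mult polys_in_mult by blast
qed

lemma sep: "separant_condition P C"
  unfolding separant_condition_def Let_def
proof (intro allI impI)
  fix t assume ex: "\<exists>r. (t, r) \<in> (\<Union>c\<in>set C. dvars c)"
  define R where "R = {r. (t, r) \<in> (\<Union>c\<in>set C. dvars c)}"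
  have finR: "finite R"
  proof -
    have "R \<subseteq> snd ` (\<Union>c\<in>set C. dvars c)" unfolding R_def by force
    moreover have "finite (\<Union>c\<in>set C. dvars c)" by (simp add: finite_dvars)
    ultimately show ?thesis using finite_subset by blast
  qed
  have neR: "R \<noteq> {}" using ex by (simp add: R_def)
  define s where "s = Max R"
  have sR: "s \<in> R" unfolding s_def by (rule Max_in[OF finR neR])
  then obtain c where c: "c \<in> set C" "(t, s) \<in> dvars c" by (auto simp: R_def)
  then obtain x where x: "x < length C" "(t, s) \<in> dvars (C ! x)" by (auto simp: in_set_conv_nth)
  define i where "i = (LEAST i. i < length C \<and> (t, s) \<in> dvars (C ! i))"
  have iP: "i < length C \<and> (t, s) \<in> dvars (C ! i)" unfolding i_def by (rule LeastI[of _ x]) (use x in simp)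
  have i: "i < length C" and vi: "(t, s) \<in> dvars (C ! i)" using iP by auto
  have notV: "(t, s) \<notin> Vs C i"
  proof
    assume "(t, s) \<in> Vs C i"
    then obtain y where y: "y < i" "(t, s) \<in> dvars (C ! y)" by (auto simp: Vs_def)
    have "y < length C" using y i by simp
    then have "i \<le> y" unfolding i_def using y(2) by (intro Least_le) simp
    then show False using y(1) by simp
  qed
  show "pderivv (t, Max R) (C ! (LEAST i. i < length C \<and> (t, Max R) \<in> dvars (C ! i))) \<notin> P"
    unfolding s_def[symmetric] i_def[symmetric]
  proof
    let ?v = "(t, s)" let ?V = "Vs C i" let ?J = "JJ ?V" let ?f = "C ! i"
    let ?u = "leader le ?f" let ?e = "degv ?u ?f"
    let ?a = "pderivv ?v ?f"
    assume aP: "?a \<in> P"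
    have I: "idealV ?V ?J" by (rule idealV_JJ)
    have aW: "?a \<in> polys_in (Vs C (Suc i))"
      using dvars_pderivv[of ?v ?f] Vs_Suc[of C i] by (auto simp: polys_in_def)
    have kc: "c \<in> Ksupp ?V ?J ?a \<longleftrightarrow> c + sng ?v 1 \<in> Ksupp ?V ?J ?f" if cV: "ks c \<inter> ?V = {}" for c
    proof -
      have c2: "ks (c + sng ?v 1) \<inter> ?V = {}" using cV notV keys_add_nat[of c "sng ?v 1"] by auto
      have "kcoef ?V ?a c \<in> ?J \<longleftrightarrow> kcoef ?V ?f (c + sng ?v 1) \<in> ?J"
        unfolding kcoef_pderivv[OF notV] by (rule ofnat_J[unfolded Suc_eq_plus1]) (rule kcoef_polys_in)
      then show ?thesis using cV c2 unfolding Ksupp_def by blast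
    qed
    have ane: "Ksupp ?V ?J ?a \<noteq> {}"
    proof -
      obtain m where m: "m \<in> ks ?f" "?v \<in> ks m" using vi by (auto simp: dvars_def)
      let ?g = "offV ?V m"
      have gK: "?g \<in> Ksupp ?V ?J ?f" using C_jreduced[OF i m(1)] by (auto simp: Ksupp_def keys_offV)
      have gv: "lk ?g ?v \<ge> 1" using m(2) lk_offV[OF notV] by (simp add: in_keys_iff)
      let ?c = "?g - sng ?v 1"
      have ceq: "?c + sng ?v 1 = ?g"
        by (rule poly_mapping_eqI) (use gv in \<open>auto simp: lookup_add lookup_minus lookup_single_nat\<close>)
      have cks: "ks ?c \<subseteq> ks ?g" by (auto simp: in_keys_iff lookup_minus)
      have cV: "ks ?c \<inter> ?V = {}" using cks by (auto simp: keys_offV)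
      have "?c \<in> Ksupp ?V ?J ?a" using kc[OF cV] ceq gK by simp
      then show ?thesis by blast
    qed
    have uV: "?u \<notin> ?V" by (rule leader_notin_Vs[OF ar i])
    have ub: "\<forall>c\<in>Ksupp ?V ?J ?a. lk c ?u \<le> ?e"
    proof
      fix c assume c: "c \<in> Ksupp ?V ?J ?a"
      then have cV: "ks c \<inter> ?V = {}" by (simp add: Ksupp_def)
      then have "c + sng ?v 1 \<in> Ksupp ?V ?J ?f" using kc c by blast
      then have "lk (c + sng ?v 1) ?u \<le> ?e" by (rule Ksupp_u_bound[OF I uV])
      then show "lk c ?u \<le> ?e" by (simp add: lookup_add)
    qed
    have lt: "Ktot ?V ?J ?a < Ktot ?V ?J ?f"
    proof -
      obtain c where c: "c \<in> Ksupp ?V ?J ?a" "mdeg c = Ktot ?V ?J ?a" using Ktot_attained[OF I ane] by blast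
      have cV: "ks c \<inter> ?V = {}" using c(1) by (simp add: Ksupp_def)
      have "c + sng ?v 1 \<in> Ksupp ?V ?J ?f" using kc[OF cV] c(1) by blast
      then have "mdeg (c + sng ?v 1) \<le> Ktot ?V ?J ?f" by (rule Ktot_ge[OF I])
      moreover have "mdeg (sng ?v (1::nat)) = 1" by (rule mdeg_single1)
      ultimately show ?thesis using c(2) by (simp add: mdeg_add)
    qed
    show False by (rule ri[OF i aP aW ane ub lt])
  qed
qed

lemma irr_chain: "irreducible_chain le C"
  unfolding irreducible_chain_def Let_def
proof (intro conjI allI impI)
  assume "C \<noteq> []" then show "irreducible (C ! 0)" by (rule irr0)
next
  fix i assume i0: "0 < i" and i: "i < length C"
  have V: "(\<Union>j<i. dvars (C ! j)) = Vs C i" by (simp add: Vs_def)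
  have J: "saturation_in (Vs C i) (set (take i C)) (initial le ` set (take i C)) = JJ (Vs C i)"
    by (rule sat_eq[OF cs]) (use i in simp)
  show "irreducible_over_frac (\<Union>j<i. dvars (C ! j))
          (saturation_in (\<Union>j<i. dvars (C ! j)) (set (take i C)) (initial le ` set (take i C)))
          (dvars (C ! i) - (\<Union>j<i. dvars (C ! j))) (C ! i)"
    unfolding V J by (rule irr[OF i])
qed

end

theorem mainTheorem2:
  fixes dk :: "'k::field_char_0 \<Rightarrow> 'k"
    and D :: "('j::finite, 'k) dpoly \<Rightarrow> ('j, 'k) dpoly"
    and le :: "'j \<times> nat \<Rightarrow> 'j \<times> nat \<Rightarrow> bool"
    and P :: "('j, 'k) dpoly set"
  assumes "is_derivation dk"
    and "extends_derivation dk D"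
    and "ranking le"
    and "prime_diff_ideal D P"
  shows "\<exists>C. char_set le P C \<and> irreducible_chain le C \<and> separant_condition P C"
proof -
  have pr: "prime_ideal_in UNIV P" using assms(4) by (simp add: prime_diff_ideal_def)
  interpret pctx le P
    by (intro pctx.intro rnk.intro pctx_axioms.intro assms(3) pr)
  obtain C where C: "char_set le P C" "\<And>C'. char_set le P C' \<Longrightarrow> (mu C', mu C) \<notin> Rmu"
    using exists_good by blast
  interpret good le P C
    by unfold_locales (use C in auto)
  show ?thesis using cs irr_chain sep by blast
qed

end
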